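(* Let $P$ be a reversible operad with unit and $Q$ its mated species, and let $n\ge1$. The bracket $\{F,H\}=\sum_{i=1}^n\frac{\partial F}{\partial p_i}\otimes\frac{\partial H}{\partial q_i}-\frac{\partial F}{\partial q_i}\otimes\frac{\partial H}{\partial p_i}$ makes $QA_n$ a Lie algebra.
   Context: All vector spaces over $\mathbb{Q}$. Operad: vector spaces $P[I]$ (functorial in bijections of finite sets, $P[\emptyset]=0$) of operations with inputs labelled by $I$ and one output; substitution $p_2\xrightarrow{y}p_1\in P[(I\setminus\{y\})\sqcup J]$ (output of $p_2\in P[J]$ into input $y$ of $p_1\in P[I]$), linear, associative, relabelling-compatible, with unit $u\in P[1]$. $P[I,\{z\}]$: output labelled $z$. Reversible: linear $r_{x,y}:P[I,\{y\}]\to P[(I\setminus\{x\})\cup\{y\},\{x\}]$ with $r_{y,x}r_{x,y}=\mathrm{id}$, $r_{x,y}r_{y,z}=r_{x,z}$, $r_{x,z}(p_2\xrightarrow{y}p_1)=p_2\xrightarrow{y}r_{x,z}(p_1)$ if $x$ is an input of $p_1$, $=r_{y,z}(p_1)\xrightarrow{y}r_{x,y}(p_2)$ if $x$ is an input of $p_2$. Mated species: $Q[K]=\bigoplus_{I\sqcup J=K}P[I]\otimes P[J]$ (outputs with common label) modulo $p\otimes p'=p'\otimes p$ and $(p_3\xrightarrow{y}p_2)\otimes p_1=p_3\otimes(p_1\xrightarrow{w}r_{y,w}(p_2))$; the class of $p\otimes p'$ is their mating. For $q\in Q[K]$, $a\in K$, $\partial q/\partial a\in P[K\setminus\{a\}]$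 is the unique element with $q=\frac{\partial q}{\partial a}\otimes u$. $V_n$ has basis $p_1,..,p_n,q_1,..,q_n$; $QA_n=\bigoplus_{j\ge2}(Q[j]\otimes V_n^{\otimes j})_{\Sigma_j}$ and $PA_n=\bigoplus_{j\ge1}(P[j]\otimes V_n^{\otimes j})_{\Sigma_j}$ (coinvariants), spanned by elements $(s;\lambda)$ with $s$ a structure on $I$ and $\lambda$ labelling $I$ by basis vectors. For a basis vector $x$, $\frac{\partial}{\partial x}:QA_n\to PA_n$, $(q;\lambda)\mapsto\sum_{a:\lambda(a)=x}(\partial q/\partial a;\lambda|_{K\setminus\{a\}})$; $\otimes:PA_n\otimes PA_n\to QA_n$ is $(p;\lambda)\otimes(p';\lambda')\mapsto(p\otimes p';\lambda\sqcup\lambda')$. *)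

theory Defs
  imports Complex_Main "HOL-Library.Poly_Mapping" "HOL-Library.FuncSet"
begin

type_synonym 'g vec = "'g \<Rightarrow>\<^sub>0 rat"

definition vscale :: "rat \<Rightarrow> 'g vec \<Rightarrow> 'g vec" where
  "vscale c v = Poly_Mapping.map (\<lambda>x. c * x) v"

definition gen :: "'g \<Rightarrow> 'g vec" where
  "gen g = Poly_Mapping.single g 1"

definition lext :: "('g \<Rightarrow> 'h vec) \<Rightarrow> 'g vec \<Rightarrow> 'h vec" where
  "lext f v = (\<Sum>g\<in>Poly_Mapping.keys v. vscale (Poly_Mapping.lookup v g) (f g))"

inductive_set rspan :: "'g vec set \<Rightarrow> 'g vec set" for R where
  zero: "0 \<in> rspan R"
| base: "r \<in> R \<Longrightarrow> r \<in> rspan R"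
| add: "a \<in> rspan R \<Longrightarrow> b \<in> rspan R \<Longrightarrow> a + b \<in> rspan R"
| scale: "a \<in> rspan R \<Longrightarrow> vscale c a \<in> rspan R"

section \<open>Reversible operads with unit (labels are natural numbers)\<close>

text \<open>
  P I : the space of operations with inputs labelled by the finite set I (a subspace
        of an ambient rational vector space 'v).
  ren s I p : relabelling of p in P I along the bijection s : I -> s`I.
  subst I p1 y J p2 : the substitution of the output of p2 (in P J) into the input
        y of p1 (in P I); the result lies in P((I-{y}) \<union> J).  Here I \<inter> J = {}
        (the output label y of p2 is not an input of p2).
  rv I x y p : r_{x,y} : P[I,{y}] -> P[(I-{x}) \<union> {y},{x}] (output labels are not
        stored: an operation with labelled output is identified with its underlying
        element of P I).
  u a : the unit, with input labelled a (relabellings of u in P[1]).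
\<close>

locale reversible_operad =
  vector_space smul for smul :: "rat \<Rightarrow> 'v::ab_group_add \<Rightarrow> 'v" +
  fixes P :: "nat set \<Rightarrow> 'v set"
    and ren :: "(nat \<Rightarrow> nat) \<Rightarrow> nat set \<Rightarrow> 'v \<Rightarrow> 'v"
    and subst :: "nat set \<Rightarrow> 'v \<Rightarrow> nat \<Rightarrow> nat set \<Rightarrow> 'v \<Rightarrow> 'v"
    and rv :: "nat set \<Rightarrow> nat \<Rightarrow> nat \<Rightarrow> 'v \<Rightarrow> 'v"
    and u :: "nat \<Rightarrow> 'v"
  assumes P_empty: "P {} = {0}"
    and P_zero: "finite I \<Longrightarrow> 0 \<in> P I"
    and P_add: "finite I \<Longrightarrow> p \<in> P I \<Longrightarrow> q \<in> P I \<Longrightarrow> p + q \<in> P I"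
    and P_scale: "finite I \<Longrightarrow> p \<in> P I \<Longrightarrow> smul c p \<in> P I"
    and ren_closed: "finite I \<Longrightarrow> inj_on s I \<Longrightarrow> p \<in> P I \<Longrightarrow> ren s I p \<in> P (s ` I)"
    and ren_add: "finite I \<Longrightarrow> inj_on s I \<Longrightarrow> p \<in> P I \<Longrightarrow> q \<in> P I \<Longrightarrow>
        ren s I (p + q) = ren s I p + ren s I q"
    and ren_scale: "finite I \<Longrightarrow> inj_on s I \<Longrightarrow> p \<in> P I \<Longrightarrow>
        ren s I (smul c p) = smul c (ren s I p)"
    and ren_id: "finite I \<Longrightarrow> p \<in> P I \<Longrightarrow> ren id I p = p"
    and ren_comp: "finite I \<Longrightarrow> inj_on s I \<Longrightarrow> inj_on t (s ` I) \<Longrightarrow> p \<in> P I \<Longrightarrow>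
        ren (t \<circ> s) I p = ren t (s ` I) (ren s I p)"
    and ren_cong: "finite I \<Longrightarrow> (\<forall>x\<in>I. s x = t x) \<Longrightarrow> p \<in> P I \<Longrightarrow> ren s I p = ren t I p"
    and subst_closed: "finite I \<Longrightarrow> finite J \<Longrightarrow> y \<in> I \<Longrightarrow> I \<inter> J = {} \<Longrightarrow>
        p1 \<in> P I \<Longrightarrow> p2 \<in> P J \<Longrightarrow> subst I p1 y J p2 \<in> P ((I - {y}) \<union> J)"
    and subst_add1: "finite I \<Longrightarrow> finite J \<Longrightarrow> y \<in> I \<Longrightarrow> I \<inter> J = {} \<Longrightarrow>
        p1 \<in> P I \<Longrightarrow> q1 \<in> P I \<Longrightarrow> p2 \<in> P J \<Longrightarrow>
        subst I (p1 + q1) y J p2 = subst I p1 y J p2 + subst I q1 y J p2"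
    and subst_scale1: "finite I \<Longrightarrow> finite J \<Longrightarrow> y \<in> I \<Longrightarrow> I \<inter> J = {} \<Longrightarrow>
        p1 \<in> P I \<Longrightarrow> p2 \<in> P J \<Longrightarrow>
        subst I (smul c p1) y J p2 = smul c (subst I p1 y J p2)"
    and subst_add2: "finite I \<Longrightarrow> finite J \<Longrightarrow> y \<in> I \<Longrightarrow> I \<inter> J = {} \<Longrightarrow>
        p1 \<in> P I \<Longrightarrow> p2 \<in> P J \<Longrightarrow> q2 \<in> P J \<Longrightarrow>
        subst I p1 y J (p2 + q2) = subst I p1 y J p2 + subst I p1 y J q2"
    and subst_scale2: "finite I \<Longrightarrow> finite J \<Longrightarrow> y \<in> I \<Longrightarrow> I \<inter> J = {} \<Longrightarrow>
        p1 \<in> P I \<Longrightarrow> p2 \<in> P J \<Longrightarrow>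
        subst I p1 y J (smul c p2) = smul c (subst I p1 y J p2)"
    and subst_assoc_seq: "finite I \<Longrightarrow> finite J \<Longrightarrow> finite K \<Longrightarrow>
        I \<inter> J = {} \<Longrightarrow> I \<inter> K = {} \<Longrightarrow> J \<inter> K = {} \<Longrightarrow> y \<in> I \<Longrightarrow> z \<in> J \<Longrightarrow>
        p1 \<in> P I \<Longrightarrow> p2 \<in> P J \<Longrightarrow> p3 \<in> P K \<Longrightarrow>
        subst I p1 y ((J - {z}) \<union> K) (subst J p2 z K p3)
          = subst ((I - {y}) \<union> J) (subst I p1 y J p2) z K p3"
    and subst_assoc_par: "finite I \<Longrightarrow> finite J \<Longrightarrow> finite K \<Longrightarrow>
        I \<inter> J = {} \<Longrightarrow> I \<inter> K = {} \<Longrightarrow> J \<inter> K = {} \<Longrightarrow> y \<in> I \<Longrightarrow> z \<in> I \<Longrightarrow> y \<noteq> z \<Longrightarrow>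
        p1 \<in> P I \<Longrightarrow> p2 \<in> P J \<Longrightarrow> p3 \<in> P K \<Longrightarrow>
        subst ((I - {y}) \<union> J) (subst I p1 y J p2) z K p3
          = subst ((I - {z}) \<union> K) (subst I p1 z K p3) y J p2"
    and subst_ren: "finite I \<Longrightarrow> finite J \<Longrightarrow> y \<in> I \<Longrightarrow> I \<inter> J = {} \<Longrightarrow>
        inj_on s (I \<union> J) \<Longrightarrow> p1 \<in> P I \<Longrightarrow> p2 \<in> P J \<Longrightarrow>
        ren s ((I - {y}) \<union> J) (subst I p1 y J p2)
          = subst (s ` I) (ren s I p1) (s y) (s ` J) (ren s J p2)"
    and u_in: "u a \<in> P {a}"
    and u_ren: "ren s {a} (u a) = u (s a)"
    and unit_left: "finite J \<Longrightarrow> a \<notin> J \<Longrightarrow> p \<in> P J \<Longrightarrow> subst {a} (u a) a J p = p"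
    and unit_right: "finite I \<Longrightarrow> y \<in> I \<Longrightarrow> a \<notin> I \<Longrightarrow> p \<in> P I \<Longrightarrow>
        subst I p y {a} (u a) = ren (id(y := a)) I p"
    and rev_closed: "finite I \<Longrightarrow> x \<in> I \<Longrightarrow> y \<notin> I \<Longrightarrow> p \<in> P I \<Longrightarrow>
        rv I x y p \<in> P ((I - {x}) \<union> {y})"
    and rev_add: "finite I \<Longrightarrow> x \<in> I \<Longrightarrow> y \<notin> I \<Longrightarrow> p \<in> P I \<Longrightarrow> q \<in> P I \<Longrightarrow>
        rv I x y (p + q) = rv I x y p + rv I x y q"
    and rev_scale: "finite I \<Longrightarrow> x \<in> I \<Longrightarrow> y \<notin> I \<Longrightarrow> p \<in> P I \<Longrightarrow>
        rv I x y (smul c p) = smul c (rv I x y p)"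
    and rev_inv: "finite I \<Longrightarrow> x \<in> I \<Longrightarrow> y \<notin> I \<Longrightarrow> p \<in> P I \<Longrightarrow>
        rv ((I - {x}) \<union> {y}) y x (rv I x y p) = p"
    and rev_trans: "finite I \<Longrightarrow> x \<in> I \<Longrightarrow> y \<in> I \<Longrightarrow> x \<noteq> y \<Longrightarrow> z \<notin> I \<Longrightarrow> p \<in> P I \<Longrightarrow>
        rv ((I - {y}) \<union> {z}) x y (rv I y z p) = rv I x z p"
    and rev_subst1: "finite I \<Longrightarrow> finite J \<Longrightarrow> y \<in> I \<Longrightarrow> I \<inter> J = {} \<Longrightarrow>
        x \<in> I - {y} \<Longrightarrow> z \<notin> I \<union> J \<Longrightarrow> p1 \<in> P I \<Longrightarrow> p2 \<in> P J \<Longrightarrow>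
        rv ((I - {y}) \<union> J) x z (subst I p1 y J p2)
          = subst ((I - {x}) \<union> {z}) (rv I x z p1) y J p2"
    and rev_subst2: "finite I \<Longrightarrow> finite J \<Longrightarrow> y \<in> I \<Longrightarrow> I \<inter> J = {} \<Longrightarrow>
        x \<in> J \<Longrightarrow> z \<notin> I \<union> J \<Longrightarrow> p1 \<in> P I \<Longrightarrow> p2 \<in> P J \<Longrightarrow>
        rv ((I - {y}) \<union> J) x z (subst I p1 y J p2)
          = subst ((J - {x}) \<union> {y}) (rv J x y p2) y ((I - {y}) \<union> {z}) (rv I y z p1)"
    and rev_ren: "finite I \<Longrightarrow> x \<in> I \<Longrightarrow> y \<notin> I \<Longrightarrow> inj_on s (I \<union> {y}) \<Longrightarrow> p \<in> P I \<Longrightarrow>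
        ren s ((I - {x}) \<union> {y}) (rv I x y p) = rv (s ` I) (s x) (s y) (ren s I p)"

text \<open>A generator (I, p, J, p') stands for the mating p \<otimes> p' of p \<in> P I and p' \<in> P J.\<close>
type_synonym 'v qgen = "nat set \<times> 'v \<times> nat set \<times> 'v"

definition qgen_ok :: "(nat set \<Rightarrow> 'v set) \<Rightarrow> nat set \<Rightarrow> 'v qgen \<Rightarrow> bool" where
  "qgen_ok P K g = (case g of (I, p, J, p') \<Rightarrow>
     finite I \<and> finite J \<and> I \<inter> J = {} \<and> I \<union> J = K \<and> p \<in> P I \<and> p' \<in> P J)"

text \<open>Defining relations of Q[K] inside the free space on generators: bilinearity,
  symmetry, and (p3 \<rightarrow>y p2) \<otimes> p1 = p3 \<otimes> (p1 \<rightarrow>w r_{y,w}(p2)).\<close>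
definition Q_rels ::
  "(rat \<Rightarrow> 'v \<Rightarrow> 'v) \<Rightarrow> (nat set \<Rightarrow> 'v set) \<Rightarrow> (nat set \<Rightarrow> 'v \<Rightarrow> nat \<Rightarrow> nat set \<Rightarrow> 'v \<Rightarrow> 'v)
    \<Rightarrow> (nat set \<Rightarrow> nat \<Rightarrow> nat \<Rightarrow> 'v \<Rightarrow> 'v) \<Rightarrow> nat set \<Rightarrow> ('v::ab_group_add) qgen vec set" where
  "Q_rels smul P subst rv K =
     {gen (I, p + q, J, p') - gen (I, p, J, p') - gen (I, q, J, p') | I p q J p'.
        qgen_ok P K (I, p, J, p') \<and> q \<in> P I}
   \<union> {gen (I, smul c p, J, p') - vscale c (gen (I, p, J, p')) | I p J p' c.
        qgen_ok P K (I, p, J, p')}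
   \<union> {gen (I, p, J, p' + q') - gen (I, p, J, p') - gen (I, p, J, q') | I p J p' q'.
        qgen_ok P K (I, p, J, p') \<and> q' \<in> P J}
   \<union> {gen (I, p, J, smul c p') - vscale c (gen (I, p, J, p')) | I p J p' c.
        qgen_ok P K (I, p, J, p')}
   \<union> {gen (I, p, J, p') - gen (J, p', I, p) | I p J p'. qgen_ok P K (I, p, J, p')}
   \<union> {gen ((I2 - {y}) \<union> I3, subst I2 p2 y I3 p3, I1, p1)
        - gen (I3, p3, (I2 - {y}) \<union> I1, subst ((I2 - {y}) \<union> {w}) (rv I2 y w p2) w I1 p1)
      | I1 I2 I3 p1 p2 p3 y w.
        finite I1 \<and> finite I2 \<and> finite I3 \<and>
        I1 \<inter> I2 = {} \<and> I1 \<inter> I3 = {} \<and> I2 \<inter> I3 = {} \<and>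
        y \<in> I2 \<and> w \<notin> I1 \<union> I2 \<union> I3 \<and> (I2 - {y}) \<union> I1 \<union> I3 = K \<and>
        p1 \<in> P I1 \<and> p2 \<in> P I2 \<and> p3 \<in> P I3}"

text \<open>Two representatives define the same element of Q[K] iff their difference lies in Q_rel.\<close>
definition Q_rel where
  "Q_rel smul P subst rv K = rspan (Q_rels smul P subst rv K)"

text \<open>The partial derivative \<partial>q/\<partial>a \<in> P[K-{a}] of (the class of) q: the unique d with q = d \<otimes> u.\<close>
definition Q_deriv ::
  "(rat \<Rightarrow> 'v \<Rightarrow> 'v) \<Rightarrow> (nat set \<Rightarrow> 'v set) \<Rightarrow> (nat set \<Rightarrow> 'v \<Rightarrow> nat \<Rightarrow> nat set \<Rightarrow> 'v \<Rightarrow> 'v)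
    \<Rightarrow> (nat set \<Rightarrow> nat \<Rightarrow> nat \<Rightarrow> 'v \<Rightarrow> 'v) \<Rightarrow> (nat \<Rightarrow> 'v) \<Rightarrow> nat set \<Rightarrow> nat
    \<Rightarrow> ('v::ab_group_add) qgen vec \<Rightarrow> 'v" where
  "Q_deriv smul P subst rv u K a q =
     (THE d. d \<in> P (K - {a}) \<and> q - gen (K - {a}, d, {a}, u a) \<in> Q_rel smul P subst rv K)"

text \<open>Basis of V_n: Pv i = p_i and Qv i = q_i, 1 \<le> i \<le> n.\<close>
datatype vb = Pv nat | Qv nat

definition Vbasis :: "nat \<Rightarrow> vb set" where
  "Vbasis n = {Pv i | i. 1 \<le> i \<and> i \<le> n} \<union> {Qv i | i. 1 \<le> i \<and> i \<le> n}"

type_synonym 'v qagen = "'v qgen \<times> (nat \<Rightarrow> vb)"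

definition qagen_ok :: "(nat set \<Rightarrow> 'v set) \<Rightarrow> nat \<Rightarrow> 'v qagen \<Rightarrow> bool" where
  "qagen_ok P n g = (case g of ((I, p, J, p'), lam) \<Rightarrow>
     qgen_ok P (I \<union> J) (I, p, J, p') \<and> 2 \<le> card (I \<union> J) \<and> lam \<in> (I \<union> J) \<rightarrow>\<^sub>E Vbasis n)"

definition tag :: "(nat \<Rightarrow> vb) \<Rightarrow> 'v qgen vec \<Rightarrow> 'v qagen vec" where
  "tag lam = lext (\<lambda>g. gen (g, lam))"

text \<open>Relations of QA_n: the relations of Q[K] (with a labelling attached) and the
  coinvariant relations (relabelling of the underlying set).\<close>
definition QA_rels where
  "QA_rels smul P ren subst rv n =
     {tag lam r | K lam r. finite K \<and> 2 \<le> card K \<and> lam \<in> K \<rightarrow>\<^sub>E Vbasis n \<and>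
        r \<in> Q_rels smul P subst rv K}
   \<union> {gen ((I, p, J, p'), lam)
        - gen ((s ` I, ren s I p, s ` J, ren s J p'),
               restrict (lam \<circ> the_inv_into (I \<union> J) s) (s ` (I \<union> J)))
      | I p J p' lam s. qagen_ok P n ((I, p, J, p'), lam) \<and> inj_on s (I \<union> J)}"

definition QA_rel where
  "QA_rel smul P ren subst rv n = rspan (QA_rels smul P ren subst rv n)"

definition QA_space :: "(nat set \<Rightarrow> 'v set) \<Rightarrow> nat \<Rightarrow> 'v qagen vec set" where
  "QA_space P n = rspan {gen g | g. qagen_ok P n g}"

type_synonym 'v pagen = "nat set \<times> 'v \<times> (nat \<Rightarrow> vb)"

definition pagen_ok :: "(nat set \<Rightarrow> 'v set) \<Rightarrow> nat \<Rightarrow> 'v pagen \<Rightarrow> bool" where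
  "pagen_ok P n g = (case g of (I, p, lam) \<Rightarrow>
     finite I \<and> 1 \<le> card I \<and> p \<in> P I \<and> lam \<in> I \<rightarrow>\<^sub>E Vbasis n)"

definition deriv_gen where
  "deriv_gen smul P subst rv u n x g = (case g of ((I, p, J, p'), lam) \<Rightarrow>
     if qagen_ok P n g then
       (\<Sum>a\<in>{a \<in> I \<union> J. lam a = x}.
          gen ((I \<union> J) - {a},
               Q_deriv smul P subst rv u (I \<union> J) a (gen (I, p, J, p')),
               restrict lam ((I \<union> J) - {a})))
     else 0)"

definition QA_deriv where
  "QA_deriv smul P subst rv u n x = lext (deriv_gen smul P subst rv u n x)"

text \<open>\<otimes> : PA_n \<otimes> PA_n \<rightarrow> QA_n on generators (the second operation is first relabelled
  by a shift so that the label sets are disjoint), then extended bilinearly.\<close>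
definition tens_gen where
  "tens_gen P ren n g h = (case (g, h) of ((I, p, lam), (J, p', lam')) \<Rightarrow>
     if pagen_ok P n g \<and> pagen_ok P n h then
       (let sh = Suc (Max I); s = (\<lambda>x. x + sh) in
        gen ((I, p, s ` J, ren s J p'),
             restrict (\<lambda>x. if x \<in> I then lam x else lam' (x - sh)) (I \<union> s ` J)))
     else 0)"

definition PA_tens where
  "PA_tens P ren n F G = lext (\<lambda>g. lext (\<lambda>h. tens_gen P ren n g h) G) F"

definition bracket where
  "bracket smul P ren subst rv u n F H =
     (\<Sum>i\<in>{1..n}.
        PA_tens P ren n (QA_deriv smul P subst rv u n (Pv i) F) (QA_deriv smul P subst rv u n (Qv i) H)
      - PA_tens P ren n (QA_deriv smul P subst rv u n (Qv i) F) (QA_deriv smul P subst rv u n (Pv i) H))"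

section \<open>Lie algebra structure on a quotient V/R given on representatives\<close>

definition lie_algebra_quot :: "'g vec set \<Rightarrow> 'g vec set \<Rightarrow> ('g vec \<Rightarrow> 'g vec \<Rightarrow> 'g vec) \<Rightarrow> bool" where
  "lie_algebra_quot V R br \<longleftrightarrow>
     (\<forall>F\<in>V. \<forall>H\<in>V. br F H \<in> V) \<and>
     (\<forall>F\<in>V. \<forall>F'\<in>V. \<forall>H\<in>V. F - F' \<in> R \<longrightarrow> br F H - br F' H \<in> R \<and> br H F - br H F' \<in> R) \<and>
     (\<forall>F\<in>V. \<forall>F'\<in>V. \<forall>H\<in>V. \<forall>c.
        br (F + F') H - (br F H + br F' H) \<in> R \<and>
        br H (F + F') - (br H F + br H F') \<in> R \<and>
        br (vscale c F) H - vscale c (br F H) \<in> R \<and>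
        br H (vscale c F) - vscale c (br H F) \<in> R) \<and>
     (\<forall>F\<in>V. br F F \<in> R) \<and>
     (\<forall>F\<in>V. \<forall>G\<in>V. \<forall>H\<in>V. br F (br G H) + br G (br H F) + br H (br F G) \<in> R)"

end

theory Submission
  imports Defs
begin

lemma lookup_vscale [simp]: "Poly_Mapping.lookup (vscale c v) k = c * Poly_Mapping.lookup v k"
  unfolding vscale_def by (simp add: map.rep_eq when_def)

lemma vec_eqI: "(\<And>k. Poly_Mapping.lookup a k = Poly_Mapping.lookup b k) \<Longrightarrow> a = b"
  by (rule poly_mapping_eqI) simp

lemma vscale_add_right: "vscale c (a + b) = vscale c a + vscale c b"
  by (rule vec_eqI) (simp add: lookup_add algebra_simps)
lemma vscale_add_left: "vscale (c + d) a = vscale c a + vscale d a"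
  by (rule vec_eqI) (simp add: lookup_add algebra_simps)
lemma vscale_vscale: "vscale c (vscale d a) = vscale (c * d) a"
  by (rule vec_eqI) simp
lemma vscale_one [simp]: "vscale 1 a = a"
  by (rule vec_eqI) simp
lemma vscale_zero_left [simp]: "vscale 0 a = 0"
  by (rule vec_eqI) simp
lemma vscale_zero_right [simp]: "vscale c 0 = 0"
  by (rule vec_eqI) simp
lemma vscale_minus_one: "vscale (-1) a = - a"
  by (rule vec_eqI) simp
lemma vscale_uminus_right: "vscale c (- a) = - vscale c a"
  by (rule vec_eqI) simp
lemma vscale_diff_right: "vscale c (a - b) = vscale c a - vscale c b"
  by (rule vec_eqI) (simp add: lookup_minus algebra_simps)
lemma vscale_sum_right: "vscale c (sum f S) = (\<Sum>x\<in>S. vscale c (f x))"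
  by (induction S rule: infinite_finite_induct) (auto simp: vscale_add_right)
lemma vscale_sum_left: "vscale (sum f S) a = (\<Sum>x\<in>S. vscale (f x) a)"
  by (induction S rule: infinite_finite_induct) (auto simp: vscale_add_left)

lemma lext_superset:
  assumes "finite S" "Poly_Mapping.keys v \<subseteq> S"
  shows "lext f v = (\<Sum>g\<in>S. vscale (Poly_Mapping.lookup v g) (f g))"
  unfolding lext_def
  by (rule sum.mono_neutral_left) (use assms in \<open>auto simp: in_keys_iff\<close>)

lemma lext_add: "lext f (a + b) = lext f a + lext f b"
proof -
  let ?S = "Poly_Mapping.keys a \<union> Poly_Mapping.keys b"
  have f: "finite ?S" by simp
  have "lext f (a + b) = (\<Sum>g\<in>?S. vscale (Poly_Mapping.lookup (a + b) g) (f g))"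
    by (rule lext_superset[OF f]) (meson keys_add)
  also have "\<dots> = (\<Sum>g\<in>?S. vscale (Poly_Mapping.lookup a g) (f g)) + (\<Sum>g\<in>?S. vscale (Poly_Mapping.lookup b g) (f g))"
    by (simp add: lookup_add vscale_add_left sum.distrib)
  also have "\<dots> = lext f a + lext f b"
    by (simp add: lext_superset[OF f])
  finally show ?thesis .
qed

lemma lext_zero [simp]: "lext f 0 = 0"
  by (simp add: lext_def)

lemma lext_vscale: "lext f (vscale c a) = vscale c (lext f a)"
proof -
  have "lext f (vscale c a) = (\<Sum>g\<in>Poly_Mapping.keys a. vscale (Poly_Mapping.lookup (vscale c a) g) (f g))"
    by (rule lext_superset) (auto simp: in_keys_iff)
  also have "\<dots> = vscale c (lext f a)"
    by (simp add: lext_def vscale_sum_right vscale_vscale)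
  finally show ?thesis .
qed

lemma lext_uminus: "lext f (- a) = - lext f a"
  by (metis vscale_minus_one lext_vscale)

lemma lext_diff: "lext f (a - b) = lext f a - lext f b"
  by (metis diff_conv_add_uminus lext_add lext_uminus)

lemma lext_sum: "lext f (sum g S) = (\<Sum>x\<in>S. lext f (g x))"
  by (induction S rule: infinite_finite_induct) (auto simp: lext_add)

lemma lext_gen [simp]: "lext f (gen g) = f g"
  by (simp add: lext_def gen_def)

lemma lext_cong: "(\<And>g. g \<in> Poly_Mapping.keys v \<Longrightarrow> f g = f' g) \<Longrightarrow> lext f v = lext f' v"
  by (simp add: lext_def)

lemma lext_fun_add: "lext (\<lambda>g. f g + f' g) v = lext f v + lext f' v"
  by (simp add: lext_def vscale_add_right sum.distrib)

lemma lext_fun_zero [simp]: "lext (\<lambda>g. 0) v = 0"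
  by (simp add: lext_def)

lemma lext_fun_sum: "lext (\<lambda>g. \<Sum>i\<in>S. f i g) v = (\<Sum>i\<in>S. lext (f i) v)"
  by (induction S rule: infinite_finite_induct) (auto simp: lext_fun_add)

lemma lext_fun_diff: "lext (\<lambda>g. f g - f' g) v = lext f v - lext f' v"
  by (simp add: lext_def vscale_diff_right sum_subtractf)

lemma lext_fun_vscale: "lext (\<lambda>g. vscale c (f g)) v = vscale c (lext f v)"
  by (simp add: lext_def vscale_sum_right vscale_vscale mult.commute)

lemma vec_sum_repr: "v = (\<Sum>g\<in>Poly_Mapping.keys v. vscale (Poly_Mapping.lookup v g) (gen g))"
  by (rule vec_eqI) (simp add: lookup_sum gen_def lookup_single when_def if_distrib sum.delta in_keys_iff
     cong: if_cong)


lemma rspan_uminus: "a \<in> rspan R \<Longrightarrow> - a \<in> rspan R"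
  by (metis rspan.scale vscale_minus_one)

lemma rspan_diff: "a \<in> rspan R \<Longrightarrow> b \<in> rspan R \<Longrightarrow> a - b \<in> rspan R"
  by (metis diff_conv_add_uminus rspan.add rspan_uminus)

lemma rspan_sum: "(\<And>x. x \<in> S \<Longrightarrow> f x \<in> rspan R) \<Longrightarrow> sum f S \<in> rspan R"
  by (induction S rule: infinite_finite_induct) (auto intro: rspan.intros)

lemma rspan_mono: "a \<in> rspan R \<Longrightarrow> R \<subseteq> rspan R' \<Longrightarrow> a \<in> rspan R'"
  by (induction rule: rspan.induct) (auto intro: rspan.intros)

lemma rspan_rspan: "a \<in> rspan (rspan R) \<Longrightarrow> a \<in> rspan R"
  by (erule rspan_mono) simp

lemma rspan_lext:
  assumes "a \<in> rspan R" "\<And>r. r \<in> R \<Longrightarrow> lext f r \<in> rspan R'"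
  shows "lext f a \<in> rspan R'"
  using assms(1) by (induction rule: rspan.induct)
    (auto simp: lext_add lext_vscale assms(2) intro: rspan.intros)

lemma rspan_linear:
  assumes "a \<in> rspan R" "\<And>r. r \<in> R \<Longrightarrow> L r \<in> rspan R'"
    and "L 0 = 0" "\<And>x y. L (x + y) = L x + L y" "\<And>c x. L (vscale c x) = vscale c (L x)"
  shows "L a \<in> rspan R'"
  using assms(1) by (induction rule: rspan.induct)
    (auto simp: assms(2-) intro: rspan.intros)

lemma rspan_induct_gen [consumes 1, case_names zero base add scale]:
  assumes "a \<in> rspan R" "Q 0" "\<And>r. r \<in> R \<Longrightarrow> Q r"
    "\<And>a b. a \<in> rspan R \<Longrightarrow> b \<in> rspan R \<Longrightarrow> Q a \<Longrightarrow> Q b \<Longrightarrow> Q (a + b)"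
    "\<And>a c. a \<in> rspan R \<Longrightarrow> Q a \<Longrightarrow> Q (vscale c a)"
  shows "Q a"
  using assms(1) by (induction rule: rspan.induct) (auto intro: assms)

context reversible_operad
begin

lemma smul_minus1: "smul (-1) x = - x"
  by simp

lemma P_uminus: "finite I \<Longrightarrow> p \<in> P I \<Longrightarrow> - p \<in> P I"
  by (metis P_scale smul_minus1)

lemma P_diff: "finite I \<Longrightarrow> p \<in> P I \<Longrightarrow> q \<in> P I \<Longrightarrow> p - q \<in> P I"
  by (metis P_add P_uminus diff_conv_add_uminus)

lemma P_sum: "finite I \<Longrightarrow> (\<And>x. x \<in> S \<Longrightarrow> f x \<in> P I) \<Longrightarrow> sum f S \<in> P I"
  by (induction S rule: infinite_finite_induct) (auto intro: P_add P_zero)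

lemma ren_id_on: "finite I \<Longrightarrow> (\<And>x. x \<in> I \<Longrightarrow> s x = x) \<Longrightarrow> p \<in> P I \<Longrightarrow> ren s I p = p"
  by (metis ren_cong ren_id id_apply)

lemma subst_zero1: "finite I \<Longrightarrow> finite J \<Longrightarrow> y \<in> I \<Longrightarrow> I \<inter> J = {} \<Longrightarrow> p2 \<in> P J \<Longrightarrow>
   subst I 0 y J p2 = 0"
  using subst_scale1[of I J y 0 p2 0] P_zero[of I] by simp

lemma subst_zero2: "finite I \<Longrightarrow> finite J \<Longrightarrow> y \<in> I \<Longrightarrow> I \<inter> J = {} \<Longrightarrow> p1 \<in> P I \<Longrightarrow>
   subst I p1 y J 0 = 0"
  using subst_scale2[of I J y p1 0 0] P_zero[of J] by simp

lemma rv_zero: "finite I \<Longrightarrow> x \<in> I \<Longrightarrow> y \<notin> I \<Longrightarrow> rv I x y 0 = 0"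
  using rev_scale[of I x y 0 0] P_zero[of I] by simp

lemma ren_zero: "finite I \<Longrightarrow> inj_on s I \<Longrightarrow> ren s I 0 = 0"
  using ren_scale[of I s 0 0] P_zero[of I] by simp

lemma rv_unit:
  assumes "y \<noteq> z" shows "rv {y} y z (u y) = u z"
proof -
  obtain x where x: "x \<notin> {y, z}"
    using infinite_UNIV_nat by (metis ex_new_if_finite finite.emptyI finite_insert)
  define p2 where "p2 = rv {y} y x (u y)"
  have p2P: "p2 \<in> P {x}"
    unfolding p2_def using rev_closed[of "{y}" y x "u y"] u_in x by auto
  have inv: "rv {x} x y p2 = u y"
    unfolding p2_def using rev_inv[of "{y}" y x "u y"] u_in x by auto
  define rho where "rho = rv {y} y z (u y)"
  have rhoP: "rho \<in> P {z}"
    unfolding rho_def using rev_closed[of "{y}" y z "u y"] u_in assms by auto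
  have e1: "rv {x} x z p2 = subst {y} (rv {x} x y p2) y {z} rho"
  proof -
    have "rv {x} x z p2 = rv (({y} - {y}) \<union> {x}) x z (subst {y} (u y) y {x} p2)"
      using unit_left[of "{x}" y p2] p2P x by auto
    also have "\<dots> = subst (({x} - {x}) \<union> {y}) (rv {x} x y p2) y (({y} - {y}) \<union> {z}) (rv {y} y z (u y))"
      by (rule rev_subst2) (use x assms p2P u_in in auto)
    finally show ?thesis by (simp add: rho_def)
  qed
  have e2: "rv {x} x z p2 = subst {y} (rv {x} x y p2) y {z} (u z)"
  proof -
    define s where "s = id(y := z)"
    have "ren s (({x} - {x}) \<union> {y}) (rv {x} x y p2) = rv (s ` {x}) (s x) (s y) (ren s {x} p2)"
      by (rule rev_ren) (use x assms p2P in \<open>auto simp: s_def\<close>)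
    moreover have "ren s {x} p2 = p2"
      by (rule ren_id_on) (use x p2P in \<open>auto simp: s_def\<close>)
    ultimately have "ren s {y} (rv {x} x y p2) = rv {x} x z p2"
      using x by (simp add: s_def)
    moreover have "subst {y} (rv {x} x y p2) y {z} (u z) = ren (id(y := z)) {y} (rv {x} x y p2)"
      by (rule unit_right) (use x assms p2P inv u_in in auto)
    ultimately show ?thesis by (simp add: s_def)
  qed
  have "subst {y} (u y) y {z} rho = subst {y} (u y) y {z} (u z)"
    using e1 e2 inv by simp
  then show ?thesis
    using unit_left[of "{z}" y rho] unit_left[of "{z}" y "u z"] rhoP u_in assms
    by (simp add: rho_def)
qed

lemma rv_rv:
  assumes "finite I" "y \<in> I" "w \<notin> I" "w' \<notin> I" "w' \<noteq> w" "p \<in> P I"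
  shows "rv ((I - {y}) \<union> {w}) w w' (rv I y w p) = ren (id(y := w')) I p"
proof -
  define Z where "Z = (I - {y}) \<union> {w}"
  define q where "q = rv I y w p"
  define s where "s = id(y := w')"
  have qP: "q \<in> P Z" unfolding q_def Z_def using rev_closed assms by auto
  have fZ: "finite Z" using assms by (simp add: Z_def)
  have "rv Z w y q = p" unfolding Z_def q_def using rev_inv assms by auto
  moreover have "ren s ((Z - {w}) \<union> {y}) (rv Z w y q) = rv (s ` Z) (s w) (s y) (ren s Z q)"
    by (rule rev_ren) (use assms fZ qP in \<open>auto simp: Z_def s_def inj_on_def\<close>)
  moreover have "(Z - {w}) \<union> {y} = I" using assms by (auto simp: Z_def)
  moreover have "s ` Z = Z" using assms by (auto simp: Z_def s_def)
  moreover have "ren s Z q = q" by (rule ren_id_on) (use fZ qP assms in \<open>auto simp: s_def Z_def\<close>)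
  moreover have "s w = w" "s y = w'" using assms by (auto simp: s_def)
  ultimately show ?thesis by (simp add: Z_def q_def s_def)
qed

end


definition frsh :: "nat set \<Rightarrow> nat" where
  "frsh S = Suc (Max (insert 0 S))"

lemma frsh_gt: "finite S \<Longrightarrow> x \<in> S \<Longrightarrow> x < frsh S"
  unfolding frsh_def by (simp add: le_imp_less_Suc)

lemma frsh_notin: "finite S \<Longrightarrow> frsh S \<notin> S"
  using frsh_gt by blast

context reversible_operad
begin

lemma subst_rename_label:
  assumes "finite I" "finite J" "y \<in> I" "I \<inter> J = {}" "v \<notin> I \<union> J" "p \<in> P I" "q \<in> P J"
  shows "subst ((I - {y}) \<union> {v}) (ren (id(y := v)) I p) v J q = subst I p y J q"
proof -
  define s where "s = id(y := v)"
  have "ren s ((I - {y}) \<union> J) (subst I p y J q) = subst (s ` I) (ren s I p) (s y) (s ` J) (ren s J q)"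
    by (rule subst_ren) (use assms in \<open>auto simp: s_def inj_on_def\<close>)
  moreover have "ren s ((I - {y}) \<union> J) (subst I p y J q) = subst I p y J q"
    by (rule ren_id_on) (use assms subst_closed in \<open>auto simp: s_def\<close>)
  moreover have "s ` I = (I - {y}) \<union> {v}" using assms by (auto simp: s_def)
  moreover have "s ` J = J" using assms by (auto simp: s_def)
  moreover have "ren s J q = q" by (rule ren_id_on) (use assms in \<open>auto simp: s_def\<close>)
  ultimately show ?thesis by (simp add: s_def)
qed

lemma subst_w_indep:
  assumes "finite I" "finite J" "I \<inter> J = {}" "e \<in> I" "w \<notin> I \<union> J" "w' \<notin> I \<union> J"
    "p \<in> P I" "q \<in> P J"
  shows "subst ((I - {e}) \<union> {w}) (rv I e w p) w J q = subst ((I - {e}) \<union> {w'}) (rv I e w' p) w' J q"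
proof (cases "w = w'")
  case True then show ?thesis by simp
next
  case False
  define I' where "I' = (I - {e}) \<union> {w}"
  have rP: "rv I e w p \<in> P I'" unfolding I'_def using rev_closed assms by auto
  have "subst ((I' - {w}) \<union> {w'}) (ren (id(w := w')) I' (rv I e w p)) w' J q = subst I' (rv I e w p) w J q"
    by (rule subst_rename_label) (use assms rP False in \<open>auto simp: I'_def\<close>)
  moreover have "ren (id(w := w')) ((I - {e}) \<union> {w}) (rv I e w p)
      = rv (id(w := w') ` I) ((id(w := w')) e) ((id(w := w')) w) (ren (id(w := w')) I p)"
    by (rule rev_ren) (use assms in \<open>auto simp: inj_on_def\<close>)
  moreover have "ren (id(w := w')) I p = p" by (rule ren_id_on) (use assms in auto)
  moreover have "id(w := w') ` I = I" using assms by auto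
  moreover have "(I' - {w}) \<union> {w'} = (I - {e}) \<union> {w'}" using assms by (auto simp: I'_def)
  moreover have "e \<noteq> w" using assms by auto
  ultimately show ?thesis using assms by (simp add: I'_def)
qed

definition phi0 :: "nat set \<Rightarrow> 'v \<Rightarrow> nat set \<Rightarrow> 'v \<Rightarrow> nat \<Rightarrow> 'v" where
  "phi0 I p J q e = subst ((I - {e}) \<union> {frsh (I \<union> J)}) (rv I e (frsh (I \<union> J)) p) (frsh (I \<union> J)) J q"

definition phi :: "nat \<Rightarrow> 'v qgen \<Rightarrow> 'v" where
  "phi e g = (case g of (I, p, J, q) \<Rightarrow> if e \<in> I then phi0 I p J q e else phi0 J q I p e)"

lemma phi0_any:
  assumes "finite I" "finite J" "I \<inter> J = {}" "e \<in> I" "w \<notin> I \<union> J" "p \<in> P I" "q \<in> P J"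
  shows "phi0 I p J q e = subst ((I - {e}) \<union> {w}) (rv I e w p) w J q"
  unfolding phi0_def
  by (rule subst_w_indep) (use assms frsh_notin[of "I \<union> J"] in auto)

lemma phi0_in:
  assumes "finite I" "finite J" "I \<inter> J = {}" "e \<in> I" "p \<in> P I" "q \<in> P J"
  shows "phi0 I p J q e \<in> P ((I - {e}) \<union> J)"
proof -
  define w where "w = frsh (I \<union> J)"
  have w: "w \<notin> I \<union> J" using frsh_notin assms unfolding w_def by auto
  have "subst ((I - {e}) \<union> {w}) (rv I e w p) w J q \<in> P ((((I - {e}) \<union> {w}) - {w}) \<union> J)"
    by (rule subst_closed) (use assms w rev_closed in auto)
  moreover have "(((I - {e}) \<union> {w}) - {w}) \<union> J = (I - {e}) \<union> J" using w by auto
  ultimately show ?thesis by (simp add: phi0_def w_def)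
qed

lemma phi_in:
  assumes "qgen_ok P K (I, p, J, q)" "e \<in> K"
  shows "phi e (I, p, J, q) \<in> P (K - {e})"
proof -
  from assms have a: "finite I" "finite J" "I \<inter> J = {}" "I \<union> J = K" "p \<in> P I" "q \<in> P J"
    by (auto simp: qgen_ok_def)
  show ?thesis
  proof (cases "e \<in> I")
    case True
    then show ?thesis using phi0_in[of I J e p q] a by (auto simp: phi_def intro: back_subst[of "\<lambda>X. _ \<in> P X"])
  next
    case False
    then have "e \<in> J" using a assms(2) by auto
    then show ?thesis using phi0_in[of J I e q p] a False
      by (auto simp: phi_def Int_commute intro: back_subst[of "\<lambda>X. _ \<in> P X"])
  qed
qed

end


context reversible_operad
begin

lemma rv_trans_ren:
  assumes "finite I" "e \<in> I" "y \<in> I" "e \<noteq> y" "w \<notin> I" "v \<notin> I" "v \<noteq> w" "p \<in> P I"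
  shows "rv ((I - {y}) \<union> {w}) e v (rv I y w p) = ren (id(y := v)) ((I - {e}) \<union> {w}) (rv I e w p)"
proof -
  define I2 where "I2 = (I - {y}) \<union> {w}"
  define q where "q = rv I y w p"
  define s where "s = id(y := v)"
  have qP: "q \<in> P I2" unfolding q_def I2_def using rev_closed assms by auto
  have t: "rv I2 e y q = rv I e w p"
    unfolding I2_def q_def by (rule rev_trans) (use assms in auto)
  have "ren s ((I2 - {e}) \<union> {y}) (rv I2 e y q) = rv (s ` I2) (s e) (s y) (ren s I2 q)"
    by (rule rev_ren) (use assms qP in \<open>auto simp: I2_def s_def inj_on_def\<close>)
  moreover have "s ` I2 = I2" using assms by (auto simp: I2_def s_def)
  moreover have "ren s I2 q = q" by (rule ren_id_on) (use assms qP in \<open>auto simp: I2_def s_def\<close>)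
  moreover have "(I2 - {e}) \<union> {y} = (I - {e}) \<union> {w}" using assms by (auto simp: I2_def)
  moreover have "s e = e" "s y = v" using assms by (auto simp: s_def)
  ultimately show ?thesis using t by (simp add: I2_def q_def s_def)
qed

lemma phi_first:
  assumes "finite I" "finite J" "I \<inter> J = {}" "e \<in> I" "w \<notin> I \<union> J" "p \<in> P I" "q \<in> P J"
  shows "phi e (I, p, J, q) = subst ((I - {e}) \<union> {w}) (rv I e w p) w J q"
  using phi0_any[OF assms] assms(4) by (simp add: phi_def)

lemma phi_second:
  assumes "finite I" "finite J" "I \<inter> J = {}" "e \<in> J" "w \<notin> I \<union> J" "p \<in> P I" "q \<in> P J"
  shows "phi e (I, p, J, q) = subst ((J - {e}) \<union> {w}) (rv J e w q) w I p"
proof -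
  have "e \<notin> I" using assms by auto
  moreover have "w \<notin> J \<union> I" using assms by auto
  moreover have "J \<inter> I = {}" using assms by auto
  ultimately show ?thesis using phi0_any[of J I e w q p] assms by (simp add: phi_def)
qed

lemma fresh_exists: "finite (S :: nat set) \<Longrightarrow> \<exists>v. v \<notin> S"
  using frsh_notin by blast

lemma phi_rel6:
  assumes fin: "finite I1" "finite I2" "finite I3"
    and disj: "I1 \<inter> I2 = {}" "I1 \<inter> I3 = {}" "I2 \<inter> I3 = {}"
    and y: "y \<in> I2" and w: "w \<notin> I1 \<union> I2 \<union> I3"
    and pP: "p1 \<in> P I1" "p2 \<in> P I2" "p3 \<in> P I3"
    and e: "e \<in> (I2 - {y}) \<union> I1 \<union> I3"
  shows "phi e ((I2 - {y}) \<union> I3, subst I2 p2 y I3 p3, I1, p1)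
       = phi e (I3, p3, (I2 - {y}) \<union> I1, subst ((I2 - {y}) \<union> {w}) (rv I2 y w p2) w I1 p1)"
proof -
  define X where "X = (I2 - {y}) \<union> I3"
  define s23 where "s23 = subst I2 p2 y I3 p3"
  define Y where "Y = (I2 - {y}) \<union> I1"
  define I2' where "I2' = (I2 - {y}) \<union> {w}"
  define q where "q = rv I2 y w p2"
  define m where "m = subst I2' q w I1 p1"
  have fX: "finite X" "finite Y" "finite I2'" using fin by (auto simp: X_def Y_def I2'_def)
  have s23P: "s23 \<in> P X"
    unfolding s23_def X_def using subst_closed fin disj y pP by auto
  have qP: "q \<in> P I2'" unfolding q_def I2'_def using rev_closed fin y w pP by auto
  have mP: "m \<in> P Y"
  proof -
    have "m \<in> P ((I2' - {w}) \<union> I1)" unfolding m_def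
      by (rule subst_closed) (use fin fX disj w qP pP in \<open>auto simp: I2'_def\<close>)
    moreover have "(I2' - {w}) \<union> I1 = Y" using w by (auto simp: I2'_def Y_def)
    ultimately show ?thesis by simp
  qed
  obtain v where v: "v \<notin> I1 \<union> I2 \<union> I3 \<union> {w}"
    using fresh_exists[of "I1 \<union> I2 \<union> I3 \<union> {w}"] fin by auto
  have LHS: "phi e (X, s23, I1, p1) = (if e \<in> X then phi0 X s23 I1 p1 e else phi0 I1 p1 X s23 e)"
    by (simp add: phi_def)
  have RHS: "phi e (I3, p3, Y, m) = (if e \<in> I3 then phi0 I3 p3 Y m e else phi0 Y m I3 p3 e)"
    by (simp add: phi_def)
  have dXI1: "X \<inter> I1 = {}" "I3 \<inter> Y = {}" using disj by (auto simp: X_def Y_def)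
  consider (c1) "e \<in> I1" | (c3) "e \<in> I3" | (c2) "e \<in> I2" "e \<noteq> y" using e by auto
  then have "phi e (X, s23, I1, p1) = phi e (I3, p3, Y, m)"
  proof cases
    case c1
    have eX: "e \<notin> X" "e \<notin> I3" using c1 disj by (auto simp: X_def)
    have wX: "w \<notin> X \<union> I1" using w by (auto simp: X_def)
    have L: "phi e (X, s23, I1, p1) = subst ((I1 - {e}) \<union> {w}) (rv I1 e w p1) w X s23"
      by (rule phi_second) (use fX fin dXI1 c1 wX s23P pP in auto)
    have vY: "v \<notin> I3 \<union> Y" using v by (auto simp: Y_def)
    have eY: "e \<in> Y" using c1 by (auto simp: Y_def)
    have R0: "phi e (I3, p3, Y, m) = subst ((Y - {e}) \<union> {v}) (rv Y e v m) v I3 p3"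
      by (rule phi_second) (use fX fin dXI1 eY vY mP pP in auto)
    have r1: "rv Y e v m = subst ((I1 - {e}) \<union> {w}) (rv I1 e w p1) w ((I2' - {w}) \<union> {v}) (rv I2' w v q)"
    proof -
      have "rv ((I2' - {w}) \<union> I1) e v (subst I2' q w I1 p1)
         = subst ((I1 - {e}) \<union> {w}) (rv I1 e w p1) w ((I2' - {w}) \<union> {v}) (rv I2' w v q)"
        by (rule rev_subst2) (use fin fX disj w v c1 qP pP in \<open>auto simp: I2'_def\<close>)
      moreover have "(I2' - {w}) \<union> I1 = Y" using w by (auto simp: I2'_def Y_def)
      ultimately show ?thesis by (simp add: m_def)
    qed
    have r2: "rv I2' w v q = ren (id(y := v)) I2 p2"
      unfolding I2'_def q_def by (rule rv_rv) (use fin y w v pP in auto)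
    define A where "A = (I1 - {e}) \<union> {w}"
    define a where "a = rv I1 e w p1"
    define B where "B = (I2 - {y}) \<union> {v}"
    define b where "b = ren (id(y := v)) I2 p2"
    have aP: "a \<in> P A" unfolding a_def A_def using rev_closed fin c1 w pP by auto
    have bP: "b \<in> P B"
    proof -
      have "b \<in> P (id(y := v) ` I2)" unfolding b_def
        by (rule ren_closed) (use fin v pP in \<open>auto simp: inj_on_def\<close>)
      moreover have "id(y := v) ` I2 = B" using y v by (auto simp: B_def)
      ultimately show ?thesis by simp
    qed
    have "(I2' - {w}) \<union> {v} = B" using w v by (auto simp: I2'_def B_def)
    then have R1: "phi e (I3, p3, Y, m) = subst ((A - {w}) \<union> B) (subst A a w B b) v I3 p3"
    proof -
      assume h: "(I2' - {w}) \<union> {v} = B"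
      have "(Y - {e}) \<union> {v} = (A - {w}) \<union> B" using w v c1 disj by (auto simp: Y_def A_def B_def)
      then show ?thesis using R0 r1 r2 h by (simp add: A_def a_def b_def)
    qed
    have "subst A a w ((B - {v}) \<union> I3) (subst B b v I3 p3) = subst ((A - {w}) \<union> B) (subst A a w B b) v I3 p3"
      by (rule subst_assoc_seq) (use fin disj w v c1 aP bP pP in \<open>auto simp: A_def B_def\<close>)
    moreover have "subst B b v I3 p3 = s23"
      unfolding B_def b_def s23_def
      by (rule subst_rename_label) (use fin disj y v pP in auto)
    moreover have "(B - {v}) \<union> I3 = X" using v by (auto simp: B_def X_def)
    ultimately show ?thesis using L R1 by (simp add: A_def a_def)
  next
    case c3
    have eX: "e \<in> X" "e \<in> I3" using c3 by (auto simp: X_def)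
    have wX: "w \<notin> X \<union> I1" using w by (auto simp: X_def)
    have L0: "phi e (X, s23, I1, p1) = subst ((X - {e}) \<union> {w}) (rv X e w s23) w I1 p1"
      by (rule phi_first) (use fX fin dXI1 eX wX s23P pP in auto)
    define C where "C = (I3 - {e}) \<union> {y}"
    define c where "c = rv I3 e y p3"
    have yI3: "y \<notin> I3" using y disj by auto
    have cP: "c \<in> P C" unfolding c_def C_def using rev_closed[of I3 e y p3] fin c3 yI3 pP by auto
    have r1: "rv X e w s23 = subst C c y I2' q"
    proof -
      have "rv ((I2 - {y}) \<union> I3) e w (subst I2 p2 y I3 p3)
          = subst ((I3 - {e}) \<union> {y}) (rv I3 e y p3) y ((I2 - {y}) \<union> {w}) (rv I2 y w p2)"
        by (rule rev_subst2) (use fin disj y w c3 pP in auto)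
      then show ?thesis by (simp add: X_def s23_def C_def c_def I2'_def q_def)
    qed
    have "subst C c y ((I2' - {w}) \<union> I1) (subst I2' q w I1 p1) = subst ((C - {y}) \<union> I2') (subst C c y I2' q) w I1 p1"
      by (rule subst_assoc_seq) (use fin fX disj y w c3 cP qP pP in \<open>auto simp: C_def I2'_def\<close>)
    moreover have "(I2' - {w}) \<union> I1 = Y" using w by (auto simp: I2'_def Y_def)
    moreover have "(C - {y}) \<union> I2' = (X - {e}) \<union> {w}" using y disj c3 w by (auto simp: C_def I2'_def X_def)
    ultimately have L: "phi e (X, s23, I1, p1) = subst C c y Y m"
      using L0 r1 by (simp add: m_def)
    have "phi e (I3, p3, Y, m) = subst ((I3 - {e}) \<union> {y}) (rv I3 e y p3) y Y m"
    proof -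
      have yY: "y \<notin> I3 \<union> Y" using yI3 disj y by (auto simp: Y_def)
      show ?thesis by (rule phi_first) (use fX fin dXI1 eX yY mP pP in auto)
    qed
    then show ?thesis using L by (simp add: C_def c_def)
  next
    case c2
    have eX: "e \<in> X" "e \<notin> I3" "e \<in> Y" using c2 disj by (auto simp: X_def Y_def)
    have wX: "w \<notin> X \<union> I1" using w by (auto simp: X_def)
    have L0: "phi e (X, s23, I1, p1) = subst ((X - {e}) \<union> {w}) (rv X e w s23) w I1 p1"
      by (rule phi_first) (use fX fin dXI1 eX wX s23P pP in auto)
    define D where "D = (I2 - {e}) \<union> {w}"
    define d where "d = rv I2 e w p2"
    have dP: "d \<in> P D" unfolding d_def D_def using rev_closed fin c2 w pP by auto
    have r1: "rv X e w s23 = subst D d y I3 p3"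
    proof -
      have "rv ((I2 - {y}) \<union> I3) e w (subst I2 p2 y I3 p3)
          = subst ((I2 - {e}) \<union> {w}) (rv I2 e w p2) y I3 p3"
        by (rule rev_subst1) (use fin disj y w c2 pP in auto)
      then show ?thesis by (simp add: X_def s23_def D_def d_def)
    qed
    have "subst ((D - {y}) \<union> I3) (subst D d y I3 p3) w I1 p1 = subst ((D - {w}) \<union> I1) (subst D d w I1 p1) y I3 p3"
      by (rule subst_assoc_par) (use fin disj y w c2 dP pP in \<open>auto simp: D_def\<close>)
    moreover have "(D - {y}) \<union> I3 = (X - {e}) \<union> {w}" using c2 w disj y by (auto simp: D_def X_def)
    ultimately have L: "phi e (X, s23, I1, p1) = subst ((D - {w}) \<union> I1) (subst D d w I1 p1) y I3 p3"
      using L0 r1 by simp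
    have vY: "v \<notin> I3 \<union> Y" using v by (auto simp: Y_def)
    have R0: "phi e (I3, p3, Y, m) = subst ((Y - {e}) \<union> {v}) (rv Y e v m) v I3 p3"
      by (rule phi_second) (use fX fin dXI1 eX vY mP pP in auto)
    have r2: "rv Y e v m = subst ((I2' - {e}) \<union> {v}) (rv I2' e v q) w I1 p1"
    proof -
      have "rv ((I2' - {w}) \<union> I1) e v (subst I2' q w I1 p1)
         = subst ((I2' - {e}) \<union> {v}) (rv I2' e v q) w I1 p1"
        by (rule rev_subst1) (use fin fX disj w v c2 qP pP in \<open>auto simp: I2'_def\<close>)
      moreover have "(I2' - {w}) \<union> I1 = Y" using w by (auto simp: I2'_def Y_def)
      ultimately show ?thesis by (simp add: m_def)
    qed
    define s where "s = id(y := v)"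
    have r3: "rv I2' e v q = ren s D d"
      unfolding I2'_def q_def s_def D_def d_def
      by (rule rv_trans_ren) (use fin c2 y w v pP in auto)
    have r4: "ren s ((D - {w}) \<union> I1) (subst D d w I1 p1) = subst (s ` D) (ren s D d) (s w) (s ` I1) (ren s I1 p1)"
      by (rule subst_ren) (use fin disj w v c2 y dP pP in \<open>auto simp: D_def s_def inj_on_def\<close>)
    have sD: "s ` D = (I2' - {e}) \<union> {v}" using c2 y w v by (auto simp: s_def D_def I2'_def)
    have sI1: "s ` I1 = I1" "s w = w" using disj y w by (auto simp: s_def)
    have rp1: "ren s I1 p1 = p1" by (rule ren_id_on) (use fin disj y pP in \<open>auto simp: s_def\<close>)
    define Z0 where "Z0 = (D - {w}) \<union> I1"
    define t0 where "t0 = subst D d w I1 p1"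
    have t0P: "t0 \<in> P Z0" unfolding t0_def Z0_def
      by (rule subst_closed) (use fin disj w c2 dP pP in \<open>auto simp: D_def\<close>)
    have "rv Y e v m = ren (id(y := v)) Z0 t0"
      using r2 r3 r4 sD sI1 rp1 by (simp add: Z0_def t0_def s_def)
    moreover have "subst ((Z0 - {y}) \<union> {v}) (ren (id(y := v)) Z0 t0) v I3 p3 = subst Z0 t0 y I3 p3"
      by (rule subst_rename_label) (use fin disj y w v c2 t0P pP in \<open>auto simp: Z0_def D_def\<close>)
    moreover have "(Z0 - {y}) \<union> {v} = (Y - {e}) \<union> {v}" using c2 y w disj by (auto simp: Z0_def D_def Y_def)
    ultimately show ?thesis using R0 L by (simp add: Z0_def t0_def)
  qed
  then show ?thesis by (simp add: X_def s23_def Y_def m_def I2'_def q_def)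
qed

end


context reversible_operad
begin

definition vlin :: "('g \<Rightarrow> 'v) \<Rightarrow> 'g vec \<Rightarrow> 'v" where
  "vlin f v = (\<Sum>g\<in>Poly_Mapping.keys v. smul (Poly_Mapping.lookup v g) (f g))"

lemma vlin_superset:
  assumes "finite S" "Poly_Mapping.keys v \<subseteq> S"
  shows "vlin f v = (\<Sum>g\<in>S. smul (Poly_Mapping.lookup v g) (f g))"
  unfolding vlin_def
  by (rule sum.mono_neutral_left) (use assms in \<open>auto simp: in_keys_iff\<close>)

lemma vlin_add: "vlin f (a + b) = vlin f a + vlin f b"
proof -
  let ?S = "Poly_Mapping.keys a \<union> Poly_Mapping.keys b"
  have f: "finite ?S" by simp
  have "vlin f (a + b) = (\<Sum>g\<in>?S. smul (Poly_Mapping.lookup (a + b) g) (f g))"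
    by (rule vlin_superset[OF f]) (meson keys_add)
  also have "\<dots> = (\<Sum>g\<in>?S. smul (Poly_Mapping.lookup a g) (f g)) + (\<Sum>g\<in>?S. smul (Poly_Mapping.lookup b g) (f g))"
    by (simp add: lookup_add scale_left_distrib sum.distrib)
  also have "\<dots> = vlin f a + vlin f b"
    by (simp add: vlin_superset[OF f])
  finally show ?thesis .
qed

lemma vlin_zero [simp]: "vlin f 0 = 0"
  by (simp add: vlin_def)

lemma vlin_vscale: "vlin f (vscale c a) = smul c (vlin f a)"
proof -
  have "vlin f (vscale c a) = (\<Sum>g\<in>Poly_Mapping.keys a. smul (Poly_Mapping.lookup (vscale c a) g) (f g))"
    by (rule vlin_superset) (auto simp: in_keys_iff)
  also have "\<dots> = smul c (vlin f a)"
    by (simp add: vlin_def scale_sum_right)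
  finally show ?thesis .
qed

lemma vlin_uminus: "vlin f (- a) = - vlin f a"
  by (metis vscale_minus_one vlin_vscale scale_minus_left scale_one)

lemma vlin_diff: "vlin f (a - b) = vlin f a - vlin f b"
  by (metis diff_conv_add_uminus vlin_add vlin_uminus)

lemma vlin_gen [simp]: "vlin f (gen g) = f g"
  by (simp add: vlin_def gen_def)

lemma vlin_rspan: "a \<in> rspan R \<Longrightarrow> (\<And>r. r \<in> R \<Longrightarrow> vlin f r = 0) \<Longrightarrow> vlin f a = 0"
  by (induction rule: rspan.induct) (auto simp: vlin_add vlin_vscale)

section \<open>Linearity of phi\<close>

lemma phi_add1:
  assumes ok: "qgen_ok P K (I, p, J, p')" and q: "q \<in> P I" and e: "e \<in> K"
  shows "phi e (I, p + q, J, p') = phi e (I, p, J, p') + phi e (I, q, J, p')"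
proof -
  from ok have a: "finite I" "finite J" "I \<inter> J = {}" "I \<union> J = K" "p \<in> P I" "p' \<in> P J"
    by (auto simp: qgen_ok_def)
  define w where "w = frsh (I \<union> J)"
  have w: "w \<notin> I \<union> J" using frsh_notin a unfolding w_def by auto
  have pq: "p + q \<in> P I" using a q P_add by auto
  show ?thesis
  proof (cases "e \<in> I")
    case True
    have r: "rv I e w (p + q) = rv I e w p + rv I e w q" using rev_add a True w q by auto
    show ?thesis
      unfolding phi_first[OF a(1-3) True w pq(1) a(6)] phi_first[OF a(1-3) True w a(5) a(6)]
        phi_first[OF a(1-3) True w q a(6)] r
      by (rule subst_add1) (use a True w q rev_closed in auto)
  next
    case False
    then have eJ: "e \<in> J" using a e by auto
    show ?thesis
      unfolding phi_second[OF a(1-3) eJ w pq(1) a(6)] phi_second[OF a(1-3) eJ w a(5) a(6)]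
        phi_second[OF a(1-3) eJ w q a(6)]
      by (rule subst_add2) (use a eJ w q rev_closed in auto)
  qed
qed

lemma phi_scale1:
  assumes ok: "qgen_ok P K (I, p, J, p')" and e: "e \<in> K"
  shows "phi e (I, smul c p, J, p') = smul c (phi e (I, p, J, p'))"
proof -
  from ok have a: "finite I" "finite J" "I \<inter> J = {}" "I \<union> J = K" "p \<in> P I" "p' \<in> P J"
    by (auto simp: qgen_ok_def)
  define w where "w = frsh (I \<union> J)"
  have w: "w \<notin> I \<union> J" using frsh_notin a unfolding w_def by auto
  have pq: "smul c p \<in> P I" using a P_scale by auto
  show ?thesis
  proof (cases "e \<in> I")
    case True
    have r: "rv I e w (smul c p) = smul c (rv I e w p)" using rev_scale a True w by auto
    show ?thesis
      unfolding phi_first[OF a(1-3) True w pq a(6)] phi_first[OF a(1-3) True w a(5) a(6)] r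
      by (rule subst_scale1) (use a True w rev_closed in auto)
  next
    case False
    then have eJ: "e \<in> J" using a e by auto
    show ?thesis
      unfolding phi_second[OF a(1-3) eJ w pq a(6)] phi_second[OF a(1-3) eJ w a(5) a(6)]
      by (rule subst_scale2) (use a eJ w rev_closed in auto)
  qed
qed

lemma phi_swap:
  assumes "I \<inter> J = {}" "e \<in> I \<union> J"
  shows "phi e (J, q, I, p) = phi e (I, p, J, q)"
  using assms by (auto simp: phi_def phi0_def Un_commute)

lemma qgen_ok_swap: "qgen_ok P K (I, p, J, q) \<Longrightarrow> qgen_ok P K (J, q, I, p)"
  by (auto simp: qgen_ok_def)

lemma phi_add2:
  assumes ok: "qgen_ok P K (I, p, J, p')" and q: "q' \<in> P J" and e: "e \<in> K"
  shows "phi e (I, p, J, p' + q') = phi e (I, p, J, p') + phi e (I, p, J, q')"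
proof -
  have d: "I \<inter> J = {}" "e \<in> I \<union> J" using ok e by (auto simp: qgen_ok_def)
  have ok': "qgen_ok P K (J, p', I, p)" using qgen_ok_swap[OF ok] .
  show ?thesis using phi_add1[OF ok' q e] phi_swap[OF d] by metis
qed

lemma phi_scale2:
  assumes ok: "qgen_ok P K (I, p, J, p')" and e: "e \<in> K"
  shows "phi e (I, p, J, smul c p') = smul c (phi e (I, p, J, p'))"
proof -
  have d: "I \<inter> J = {}" "e \<in> I \<union> J" using ok e by (auto simp: qgen_ok_def)
  have ok': "qgen_ok P K (J, p', I, p)" using qgen_ok_swap[OF ok] .
  show ?thesis using phi_scale1[OF ok' e] phi_swap[OF d] by metis
qed

lemma phi_Q_rels:
  assumes K: "finite K" "e \<in> K" and r: "r \<in> Q_rels smul P subst rv K"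
  shows "vlin (phi e) r = 0"
  using r unfolding Q_rels_def
proof (elim UnE CollectE exE conjE)
  fix I p q J p' assume h: "r = gen (I, p + q, J, p') - gen (I, p, J, p') - gen (I, q, J, p')"
    "qgen_ok P K (I, p, J, p')" "q \<in> P I"
  show ?thesis using phi_add1[OF h(2,3) K(2)] by (simp add: h(1) vlin_diff)
next
  fix I p J p' c assume h: "r = gen (I, smul c p, J, p') - vscale c (gen (I, p, J, p'))"
    "qgen_ok P K (I, p, J, p')"
  show ?thesis using phi_scale1[OF h(2) K(2)] h(2)
    by (simp add: h(1) vlin_diff vlin_vscale qgen_ok_def)
next
  fix I p J p' q' assume h: "r = gen (I, p, J, p' + q') - gen (I, p, J, p') - gen (I, p, J, q')"
    "qgen_ok P K (I, p, J, p')" "q' \<in> P J"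
  show ?thesis using phi_add2[OF h(2,3) K(2)] by (simp add: h(1) vlin_diff)
next
  fix I p J p' c assume h: "r = gen (I, p, J, smul c p') - vscale c (gen (I, p, J, p'))"
    "qgen_ok P K (I, p, J, p')"
  show ?thesis using phi_scale2[OF h(2) K(2)] h(2)
    by (simp add: h(1) vlin_diff vlin_vscale qgen_ok_def)
next
  fix I p J p' assume h: "r = gen (I, p, J, p') - gen (J, p', I, p)" "qgen_ok P K (I, p, J, p')"
  have "I \<inter> J = {}" "e \<in> I \<union> J" using h(2) K by (auto simp: qgen_ok_def)
  then show ?thesis using phi_swap[of I J e p' p] by (simp add: h(1) vlin_diff)
next
  fix I1 I2 I3 p1 p2 p3 y w
  assume h: "r = gen ((I2 - {y}) \<union> I3, subst I2 p2 y I3 p3, I1, p1)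
        - gen (I3, p3, (I2 - {y}) \<union> I1, subst ((I2 - {y}) \<union> {w}) (rv I2 y w p2) w I1 p1)"
    "finite I1" "finite I2" "finite I3" "I1 \<inter> I2 = {}" "I1 \<inter> I3 = {}" "I2 \<inter> I3 = {}"
    "y \<in> I2" "w \<notin> I1 \<union> I2 \<union> I3" "(I2 - {y}) \<union> I1 \<union> I3 = K"
    "p1 \<in> P I1" "p2 \<in> P I2" "p3 \<in> P I3"
  have e: "e \<in> (I2 - {y}) \<union> I1 \<union> I3" using h(10) K by simp
  show ?thesis using phi_rel6[OF h(2-9) h(11-13) e] by (simp add: h(1) vlin_diff)
qed

lemma phi_Q_rel:
  assumes "finite K" "e \<in> K" "r \<in> Q_rel smul P subst rv K"
  shows "vlin (phi e) r = 0"
  using assms(3) unfolding Q_rel_def by (rule vlin_rspan) (rule phi_Q_rels[OF assms(1,2)])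

end


context reversible_operad
begin

lemma Q_rels5I: "qgen_ok P K (I, p, J, q) \<Longrightarrow> gen (I, p, J, q) - gen (J, q, I, p) \<in> Q_rels smul P subst rv K"
  unfolding Q_rels_def by blast

lemma Q_rels6I:
  assumes "finite I1" "finite I2" "finite I3" "I1 \<inter> I2 = {}" "I1 \<inter> I3 = {}" "I2 \<inter> I3 = {}"
    "y \<in> I2" "w \<notin> I1 \<union> I2 \<union> I3" "(I2 - {y}) \<union> I1 \<union> I3 = K"
    "p1 \<in> P I1" "p2 \<in> P I2" "p3 \<in> P I3"
  shows "gen ((I2 - {y}) \<union> I3, subst I2 p2 y I3 p3, I1, p1)
        - gen (I3, p3, (I2 - {y}) \<union> I1, subst ((I2 - {y}) \<union> {w}) (rv I2 y w p2) w I1 p1)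
     \<in> Q_rels smul P subst rv K"
  unfolding Q_rels_def
  apply (rule UnI2)
  using assms by blast

lemma Q_exists_J:
  assumes ok: "qgen_ok P K (I, p, J, q)" and e: "e \<in> J"
  shows "gen (J, q, I, p) - gen ({e}, u e, K - {e}, phi e (I, p, J, q)) \<in> Q_rels smul P subst rv K"
proof -
  from ok have a: "finite I" "finite J" "I \<inter> J = {}" "I \<union> J = K" "p \<in> P I" "q \<in> P J"
    by (auto simp: qgen_ok_def)
  have fK: "finite K" using a by auto
  obtain y where y: "y \<notin> K" using fresh_exists[OF fK] by auto
  obtain w where w: "w \<notin> K \<union> {y}" using fresh_exists[of "K \<union> {y}"] fK by auto
  define s where "s = id(e := y)"
  define I2 where "I2 = (J - {e}) \<union> {y}"
  define p2 where "p2 = ren s J q"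
  have injs: "inj_on s (J \<union> {w})" using y w a e by (auto simp: s_def inj_on_def)
  have sJ: "s ` J = I2" using e by (auto simp: s_def I2_def)
  have p2P: "p2 \<in> P I2" unfolding p2_def sJ[symmetric]
    by (rule ren_closed) (use a injs in \<open>auto intro: inj_on_subset\<close>)
  have fI2: "finite I2" using a by (simp add: I2_def)
  have yI2: "y \<in> I2" by (simp add: I2_def)
  have eI2: "e \<notin> I2" using y e a by (auto simp: I2_def)
  have rel: "gen ((I2 - {y}) \<union> {e}, subst I2 p2 y {e} (u e), I, p)
        - gen ({e}, u e, (I2 - {y}) \<union> I, subst ((I2 - {y}) \<union> {w}) (rv I2 y w p2) w I p)
     \<in> Q_rels smul P subst rv K"
    by (rule Q_rels6I) (use a e y w fI2 yI2 eI2 p2P u_in in \<open>auto simp: I2_def\<close>)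
  have s1: "(I2 - {y}) \<union> {e} = J" using e y a by (auto simp: I2_def)
  have s2: "(I2 - {y}) \<union> I = K - {e}" using e y a by (auto simp: I2_def)
  have s3: "(I2 - {y}) \<union> {w} = (J - {e}) \<union> {w}" using y a e w by (auto simp: I2_def)
  have t1: "subst I2 p2 y {e} (u e) = q"
  proof -
    have "subst I2 p2 y {e} (u e) = ren (id(y := e)) I2 p2"
      by (rule unit_right) (use fI2 yI2 eI2 p2P in auto)
    also have "\<dots> = ren (id(y := e) \<circ> s) J q"
      unfolding p2_def sJ[symmetric]
      by (rule ren_comp[symmetric]) (use a injs y in \<open>auto simp: inj_on_def s_def\<close>)
    also have "\<dots> = q"
      by (rule ren_id_on) (use a y e in \<open>auto simp: s_def\<close>)
    finally show ?thesis .
  qed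
  have t2: "rv I2 y w p2 = rv J e w q"
  proof -
    have "ren s ((J - {e}) \<union> {w}) (rv J e w q) = rv (s ` J) (s e) (s w) (ren s J q)"
      by (rule rev_ren) (use a e w injs in auto)
    moreover have "ren s ((J - {e}) \<union> {w}) (rv J e w q) = rv J e w q"
      by (rule ren_id_on) (use a e w y rev_closed in \<open>auto simp: s_def\<close>)
    moreover have "s e = y" "s w = w" using w e a by (auto simp: s_def)
    ultimately show ?thesis by (simp add: sJ p2_def)
  qed
  have t3: "subst ((J - {e}) \<union> {w}) (rv J e w q) w I p = phi e (I, p, J, q)"
    by (rule phi_second[symmetric]) (use a e w in auto)
  show ?thesis using rel unfolding s1 s2 s3 t1 t2 t3 .
qed

lemma phi_in': "qgen_ok P K g \<Longrightarrow> e \<in> K \<Longrightarrow> phi e g \<in> P (K - {e})"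
  by (cases g) (auto intro: phi_in)

lemma Q_exists:
  assumes ok: "qgen_ok P K (I, p, J, q)" and e: "e \<in> K"
  shows "gen (I, p, J, q) - gen (K - {e}, phi e (I, p, J, q), {e}, u e) \<in> Q_rel smul P subst rv K"
proof -
  from ok have a: "finite I" "finite J" "I \<inter> J = {}" "I \<union> J = K" "p \<in> P I" "q \<in> P J"
    by (auto simp: qgen_ok_def)
  define ph where "ph = phi e (I, p, J, q)"
  have phP: "ph \<in> P (K - {e})" unfolding ph_def by (rule phi_in[OF ok e])
  have okc: "qgen_ok P K (K - {e}, ph, {e}, u e)"
    using a e phP u_in by (auto simp: qgen_ok_def)
  have c: "gen (K - {e}, ph, {e}, u e) - gen ({e}, u e, K - {e}, ph) \<in> Q_rel smul P subst rv K"
    unfolding Q_rel_def by (rule rspan.base) (rule Q_rels5I[OF okc])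
  show ?thesis
  proof (cases "e \<in> J")
    case True
    have a1: "gen (I, p, J, q) - gen (J, q, I, p) \<in> Q_rel smul P subst rv K"
      unfolding Q_rel_def by (rule rspan.base) (rule Q_rels5I[OF ok])
    have b: "gen (J, q, I, p) - gen ({e}, u e, K - {e}, ph) \<in> Q_rel smul P subst rv K"
      unfolding Q_rel_def ph_def by (rule rspan.base) (rule Q_exists_J[OF ok True])
    have "(gen (I, p, J, q) - gen (J, q, I, p)) + (gen (J, q, I, p) - gen ({e}, u e, K - {e}, ph))
       - (gen (K - {e}, ph, {e}, u e) - gen ({e}, u e, K - {e}, ph)) \<in> Q_rel smul P subst rv K"
      using rspan_diff[OF rspan.add[OF a1[unfolded Q_rel_def] b[unfolded Q_rel_def]] c[unfolded Q_rel_def]]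
      unfolding Q_rel_def .
    then show ?thesis by (simp add: ph_def)
  next
    case False
    then have eI: "e \<in> I" using a e by auto
    have "phi e (J, q, I, p) = ph" unfolding ph_def by (rule phi_swap) (use a eI in auto)
    then have b: "gen (I, p, J, q) - gen ({e}, u e, K - {e}, ph) \<in> Q_rel smul P subst rv K"
      unfolding Q_rel_def using Q_exists_J[OF qgen_ok_swap[OF ok] eI] by (auto intro: rspan.base)
    have "(gen (I, p, J, q) - gen ({e}, u e, K - {e}, ph))
       - (gen (K - {e}, ph, {e}, u e) - gen ({e}, u e, K - {e}, ph)) \<in> Q_rel smul P subst rv K"
      using rspan_diff[OF b[unfolded Q_rel_def] c[unfolded Q_rel_def]] unfolding Q_rel_def .
    then show ?thesis by (simp add: ph_def)
  qed
qed

lemma phi_unit: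
  assumes "finite K'" "e \<notin> K'" "d \<in> P K'"
  shows "phi e (K', d, {e}, u e) = d"
proof -
  obtain w where w: "w \<notin> K' \<union> {e}" using fresh_exists[of "K' \<union> {e}"] assms by auto
  have "phi e (K', d, {e}, u e) = subst (({e} - {e}) \<union> {w}) (rv {e} e w (u e)) w K' d"
    by (rule phi_second) (use assms w u_in in auto)
  also have "\<dots> = subst {w} (u w) w K' d" using rv_unit[of e w] w by simp
  also have "\<dots> = d" by (rule unit_left) (use assms w in auto)
  finally show ?thesis .
qed

lemma Q_deriv_eq:
  assumes ok: "qgen_ok P K g" and e: "e \<in> K"
  shows "Q_deriv smul P subst rv u K e (gen g) = phi e g"
proof -
  obtain I p J q where g: "g = (I, p, J, q)" by (cases g)
  have fK: "finite K" using ok by (auto simp: qgen_ok_def g)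
  show ?thesis
    unfolding Q_deriv_def
  proof (rule the_equality)
    show "phi e g \<in> P (K - {e}) \<and> gen g - gen (K - {e}, phi e g, {e}, u e) \<in> Q_rel smul P subst rv K"
      using phi_in'[OF ok e] Q_exists[OF ok[unfolded g] e] g by simp
  next
    fix d assume h: "d \<in> P (K - {e}) \<and> gen g - gen (K - {e}, d, {e}, u e) \<in> Q_rel smul P subst rv K"
    have "vlin (phi e) (gen g - gen (K - {e}, d, {e}, u e)) = 0"
      by (rule phi_Q_rel[OF fK e]) (use h in auto)
    then have "phi e g = phi e (K - {e}, d, {e}, u e)" by (simp add: vlin_diff)
    also have "\<dots> = d" by (rule phi_unit) (use fK h in auto)
    finally show "d = phi e g" by simp
  qed
qed

end


context reversible_operad
begin

lemma phi_ren_first: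
  assumes ok: "qgen_ok P K (I, p, J, q)" and e: "e \<in> I" and t: "inj_on t K"
  shows "phi (t e) (t ` I, ren t I p, t ` J, ren t J q) = ren t (K - {e}) (phi e (I, p, J, q))"
proof -
  from ok have a: "finite I" "finite J" "I \<inter> J = {}" "I \<union> J = K" "p \<in> P I" "q \<in> P J"
    by (auto simp: qgen_ok_def)
  have fK: "finite K" using a by auto
  obtain w where w: "w \<notin> K" using fresh_exists[OF fK] by auto
  obtain w' where w': "w' \<notin> t ` K" using fresh_exists[of "t ` K"] fK by auto
  define t' where "t' = t(w := w')"
  have injt': "inj_on t' (K \<union> {w})"
    using t w w' unfolding t'_def inj_on_def by (auto simp: image_iff)
  have wIJ: "w \<notin> I \<union> J" using w a by auto
  have ph: "phi e (I, p, J, q) = subst ((I - {e}) \<union> {w}) (rv I e w p) w J q"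
    by (rule phi_first) (use a e wIJ in auto)
  have phP: "phi e (I, p, J, q) \<in> P (K - {e})" using phi_in[OF ok] e a by auto
  have "ren t (K - {e}) (phi e (I, p, J, q)) = ren t' (K - {e}) (phi e (I, p, J, q))"
    by (rule ren_cong) (use fK w phP in \<open>auto simp: t'_def\<close>)
  also have "\<dots> = ren t' ((((I - {e}) \<union> {w}) - {w}) \<union> J) (subst ((I - {e}) \<union> {w}) (rv I e w p) w J q)"
  proof -
    have "(((I - {e}) \<union> {w}) - {w}) \<union> J = K - {e}" using a e w by auto
    then show ?thesis using ph by simp
  qed
  also have "\<dots> = subst (t' ` ((I - {e}) \<union> {w})) (ren t' ((I - {e}) \<union> {w}) (rv I e w p)) (t' w) (t' ` J) (ren t' J q)"
    by (rule subst_ren) (use a e w injt' rev_closed in \<open>auto intro: inj_on_subset\<close>)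
  finally have R0: "ren t (K - {e}) (phi e (I, p, J, q)) = subst (t' ` ((I - {e}) \<union> {w})) (ren t' ((I - {e}) \<union> {w}) (rv I e w p)) (t' w) (t' ` J) (ren t' J q)" .
  have f1: "ren t' ((I - {e}) \<union> {w}) (rv I e w p) = rv (t' ` I) (t' e) (t' w) (ren t' I p)"
    by (rule rev_ren) (use a e wIJ injt' in \<open>auto intro: inj_on_subset\<close>)
  have f2: "t' ` I = t ` I" "t' ` J = t ` J" "t' e = t e" "t' w = w'"
    using a w e by (auto simp: t'_def)
  have f3: "ren t' I p = ren t I p" by (rule ren_cong) (use a w in \<open>auto simp: t'_def\<close>)
  have f4: "ren t' J q = ren t J q" by (rule ren_cong) (use a w in \<open>auto simp: t'_def\<close>)
  have f5: "t' ` ((I - {e}) \<union> {w}) = (t ` I - {t e}) \<union> {w'}"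
  proof -
    have "t' ` ((I - {e}) \<union> {w}) = t ` (I - {e}) \<union> {w'}" using a w by (auto simp: t'_def)
    moreover have "t ` (I - {e}) = t ` I - {t e}"
      using inj_on_image_set_diff[of t K I "{e}"] t a e by auto
    ultimately show ?thesis by simp
  qed
  have R: "ren t (K - {e}) (phi e (I, p, J, q))
      = subst ((t ` I - {t e}) \<union> {w'}) (rv (t ` I) (t e) w' (ren t I p)) w' (t ` J) (ren t J q)"
    using R0 unfolding f1 f2 f3 f4 f5 .
  have dj: "t ` I \<inter> t ` J = {}" using inj_on_image_Int[of t K I J] t a by auto
  have w'IJ: "w' \<notin> t ` I \<union> t ` J" using w' a by auto
  have "phi (t e) (t ` I, ren t I p, t ` J, ren t J q)
      = subst ((t ` I - {t e}) \<union> {w'}) (rv (t ` I) (t e) w' (ren t I p)) w' (t ` J) (ren t J q)"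
  proof (rule phi_first)
    have "inj_on t I" "inj_on t J" using inj_on_subset[OF t] a by auto
    then show "ren t I p \<in> P (t ` I)" "ren t J q \<in> P (t ` J)" using ren_closed a by auto
  qed (use a e dj w'IJ in auto)
  then show ?thesis using R by simp
qed

lemma phi_ren:
  assumes ok: "qgen_ok P K (I, p, J, q)" and e: "e \<in> K" and t: "inj_on t K"
  shows "phi (t e) (t ` I, ren t I p, t ` J, ren t J q) = ren t (K - {e}) (phi e (I, p, J, q))"
proof (cases "e \<in> I")
  case True then show ?thesis using phi_ren_first[OF ok True t] by simp
next
  case False
  from ok have a: "finite I" "finite J" "I \<inter> J = {}" "I \<union> J = K" "p \<in> P I" "q \<in> P J"
    by (auto simp: qgen_ok_def)
  have eJ: "e \<in> J" using False e a by auto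
  have r: "phi (t e) (t ` J, ren t J q, t ` I, ren t I p) = ren t (K - {e}) (phi e (J, q, I, p))"
    using phi_ren_first[OF qgen_ok_swap[OF ok] eJ t] .
  have dj: "t ` I \<inter> t ` J = {}" using inj_on_image_Int[of t K I J] t a by auto
  have "phi e (J, q, I, p) = phi e (I, p, J, q)" by (rule phi_swap) (use a e in auto)
  moreover have "phi (t e) (t ` J, ren t J q, t ` I, ren t I p) = phi (t e) (t ` I, ren t I p, t ` J, ren t J q)"
    by (rule phi_swap) (use dj eJ in auto)
  ultimately show ?thesis using r by simp
qed

lemma phi_change_first:
  assumes ok: "qgen_ok P K (I, p, J, q)" and aI: "a \<in> I" and c: "c \<in> K" and ac: "a \<noteq> c"
  shows "phi c (I, p, J, q) = rv (K - {a}) c a (phi a (I, p, J, q))"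
proof -
  from ok have x: "finite I" "finite J" "I \<inter> J = {}" "I \<union> J = K" "p \<in> P I" "q \<in> P J"
    by (auto simp: qgen_ok_def)
  have fK: "finite K" using x by auto
  obtain w where w: "w \<notin> K" using fresh_exists[OF fK] by auto
  have wIJ: "w \<notin> I \<union> J" using w x by auto
  define I' where "I' = (I - {a}) \<union> {w}"
  define r where "r = rv I a w p"
  have rP: "r \<in> P I'" unfolding r_def I'_def using rev_closed x aI wIJ by auto
  have ph: "phi a (I, p, J, q) = subst I' r w J q"
    unfolding I'_def r_def by (rule phi_first) (use x aI wIJ in auto)
  have KI: "K - {a} = (I' - {w}) \<union> J" using x aI w by (auto simp: I'_def)
  show ?thesis
  proof (cases "c \<in> I")
    case True
    have "rv ((I' - {w}) \<union> J) c a (subst I' r w J q) = subst ((I' - {c}) \<union> {a}) (rv I' c a r) w J q"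
      by (rule rev_subst1) (use x aI w wIJ True ac rP in \<open>auto simp: I'_def\<close>)
    moreover have "rv I' c a r = rv I c w p"
      unfolding I'_def r_def by (rule rev_trans) (use x aI True ac wIJ in auto)
    moreover have "(I' - {c}) \<union> {a} = (I - {c}) \<union> {w}" using aI True ac w x by (auto simp: I'_def)
    moreover have "phi c (I, p, J, q) = subst ((I - {c}) \<union> {w}) (rv I c w p) w J q"
      by (rule phi_first) (use x True wIJ in auto)
    ultimately show ?thesis using ph KI by simp
  next
    case False
    then have cJ: "c \<in> J" using c x by auto
    have "rv ((I' - {w}) \<union> J) c a (subst I' r w J q) = subst ((J - {c}) \<union> {w}) (rv J c w q) w ((I' - {w}) \<union> {a}) (rv I' w a r)"
      by (rule rev_subst2) (use x aI w wIJ cJ ac rP in \<open>auto simp: I'_def\<close>)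
    moreover have "rv I' w a r = p"
      unfolding I'_def r_def by (rule rev_inv) (use x aI wIJ in auto)
    moreover have "(I' - {w}) \<union> {a} = I" using aI w x by (auto simp: I'_def)
    moreover have "phi c (I, p, J, q) = subst ((J - {c}) \<union> {w}) (rv J c w q) w I p"
      by (rule phi_second) (use x cJ wIJ in auto)
    ultimately show ?thesis using ph KI by simp
  qed
qed

lemma phi_change:
  assumes ok: "qgen_ok P K g" and a: "a \<in> K" and c: "c \<in> K" and ac: "a \<noteq> c"
  shows "phi c g = rv (K - {a}) c a (phi a g)"
proof -
  obtain I p J q where g: "g = (I, p, J, q)" by (cases g)
  from ok have x: "I \<inter> J = {}" "I \<union> J = K" by (auto simp: qgen_ok_def g)
  show ?thesis
  proof (cases "a \<in> I")
    case True then show ?thesis using phi_change_first[OF ok[unfolded g] True c ac] g by simp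
  next
    case False
    then have aJ: "a \<in> J" using a x by auto
    have "phi c (J, q, I, p) = rv (K - {a}) c a (phi a (J, q, I, p))"
      using phi_change_first[OF qgen_ok_swap[OF ok[unfolded g]] aJ c ac] .
    moreover have "phi c (J, q, I, p) = phi c (I, p, J, q)" by (rule phi_swap) (use x c in auto)
    moreover have "phi a (J, q, I, p) = phi a (I, p, J, q)" by (rule phi_swap) (use x a in auto)
    ultimately show ?thesis using g by simp
  qed
qed

end


lemma restrict_inv_eq:
  assumes "inj_on s K" "lam' \<in> extensional (s ` K)" "\<And>x. x \<in> K \<Longrightarrow> lam' (s x) = lam x"
  shows "restrict (lam \<circ> the_inv_into K s) (s ` K) = lam'"
proof
  fix z show "restrict (lam \<circ> the_inv_into K s) (s ` K) z = lam' z"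
  proof (cases "z \<in> s ` K")
    case True
    then obtain x where x: "x \<in> K" "z = s x" by auto
    then show ?thesis using assms the_inv_into_f_f[OF assms(1) x(1)] by simp
  next
    case False then show ?thesis using assms(2) by (simp add: extensional_def)
  qed
qed

definition omega :: "nat \<Rightarrow> vb \<Rightarrow> vb \<Rightarrow> rat" where
  "omega n x y = (\<Sum>i\<in>{1..n}. (if x = Pv i \<and> y = Qv i then 1 else 0) - (if x = Qv i \<and> y = Pv i then 1 else 0))"

lemma omega_antisym: "omega n y x = - omega n x y"
  unfolding omega_def sum_negf[symmetric] by (rule sum.cong) auto

definition qK :: "'v qagen \<Rightarrow> nat set" where
  "qK G = (case G of ((I, p, J, q), lam) \<Rightarrow> I \<union> J)"

definition qlam :: "'v qagen \<Rightarrow> nat \<Rightarrow> vb" where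
  "qlam G = snd G"

locale qa_ctx = reversible_operad smul P ren subst rv u
  for smul :: "rat \<Rightarrow> 'v::ab_group_add \<Rightarrow> 'v" and P ren subst rv u +
  fixes n :: nat
begin

abbreviation "RR \<equiv> QA_rel smul P ren subst rv n"
abbreviation "VV \<equiv> QA_space P n"
abbreviation "br \<equiv> bracket smul P ren subst rv u n"

definition Dp :: "'v qagen \<Rightarrow> nat \<Rightarrow> 'v pagen" where
  "Dp G a = (case G of ((I, p, J, q), lam) \<Rightarrow>
     ((I \<union> J) - {a}, phi a (I, p, J, q), restrict lam ((I \<union> J) - {a})))"

definition Tt :: "'v pagen \<Rightarrow> 'v pagen \<Rightarrow> 'v qagen" where
  "Tt x y = (case (x, y) of ((I, p, lam), (J, p', lam')) \<Rightarrow>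
     ((I, p, (\<lambda>z. z + Suc (Max I)) ` J, ren (\<lambda>z. z + Suc (Max I)) J p'),
      restrict (\<lambda>z. if z \<in> I then lam z else lam' (z - Suc (Max I))) (I \<union> (\<lambda>z. z + Suc (Max I)) ` J)))"

lemma Tt_simp: "Tt (I, p, lam) (J, p', lam') =
     ((I, p, (\<lambda>z. z + Suc (Max I)) ` J, ren (\<lambda>z. z + Suc (Max I)) J p'),
      restrict (\<lambda>z. if z \<in> I then lam z else lam' (z - Suc (Max I))) (I \<union> (\<lambda>z. z + Suc (Max I)) ` J))"
  by (simp add: Tt_def)

lemma tens_gen_eq:
  assumes "pagen_ok P n x" "pagen_ok P n y"
  shows "tens_gen P ren n x y = gen (Tt x y)"
  using assms by (cases x; cases y) (simp add: tens_gen_def Tt_def Let_def)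

lemma shift_disj:
  assumes "finite I" shows "I \<inter> (\<lambda>z. z + Suc (Max I)) ` J = {}"
proof (rule equals0I)
  fix x assume "x \<in> I \<inter> (\<lambda>z. z + Suc (Max I)) ` J"
  then obtain z where x: "x \<in> I" "x = z + Suc (Max I)" by auto
  moreover have "x \<le> Max I" using Max_ge[OF assms x(1)] .
  ultimately show False by simp
qed

lemma pagen_okD:
  assumes "pagen_ok P n (I, p, lam)"
  shows "finite I" "I \<noteq> {}" "p \<in> P I" "lam \<in> I \<rightarrow>\<^sub>E Vbasis n"
  using assms by (auto simp: pagen_ok_def)

lemma Tt_ok:
  assumes x: "pagen_ok P n (I, p, lam)" and y: "pagen_ok P n (J, p', lam')"
  shows "qagen_ok P n (Tt (I, p, lam) (J, p', lam'))"
proof -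
  define s where "s = (\<lambda>z::nat. z + Suc (Max I))"
  note xx = pagen_okD[OF x] and yy = pagen_okD[OF y]
  have inj: "inj_on s J" by (simp add: s_def inj_on_def)
  have dj: "I \<inter> s ` J = {}" unfolding s_def by (rule shift_disj[OF xx(1)])
  have rP: "ren s J p' \<in> P (s ` J)" using ren_closed[OF yy(1) inj yy(3)] .
  have c: "2 \<le> card (I \<union> s ` J)"
  proof -
    have "card (I \<union> s ` J) = card I + card (s ` J)" using card_Un_disjoint dj xx(1) yy(1) by auto
    moreover have "card I \<ge> 1" "card (s ` J) \<ge> 1" using xx yy by (auto simp: Suc_le_eq card_gt_0_iff)
    ultimately show ?thesis by simp
  qed
  have l: "restrict (\<lambda>z. if z \<in> I then lam z else lam' (z - Suc (Max I))) (I \<union> s ` J) \<in> (I \<union> s ` J) \<rightarrow>\<^sub>E Vbasis n"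
    using xx(4) yy(4) by (auto simp: s_def PiE_def Pi_def)
  show ?thesis using xx yy dj rP c l
    by (simp add: Tt_simp qagen_ok_def qgen_ok_def s_def)
qed

lemma qagen_okD:
  assumes "qagen_ok P n ((I, p, J, q), lam)"
  shows "finite I" "finite J" "I \<inter> J = {}" "p \<in> P I" "q \<in> P J" "2 \<le> card (I \<union> J)"
    "lam \<in> (I \<union> J) \<rightarrow>\<^sub>E Vbasis n" "qgen_ok P (I \<union> J) (I, p, J, q)"
  using assms by (auto simp: qagen_ok_def qgen_ok_def)

lemma Dp_simp: "Dp ((I, p, J, q), lam) a = ((I \<union> J) - {a}, phi a (I, p, J, q), restrict lam ((I \<union> J) - {a}))"
  by (simp add: Dp_def)

lemma Dp_ok:
  assumes G: "qagen_ok P n G" and a: "a \<in> qK G"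
  shows "pagen_ok P n (Dp G a)"
proof -
  obtain I p J q lam where g: "G = ((I, p, J, q), lam)" by (cases G) auto
  note gg = qagen_okD[OF G[unfolded g]]
  have aK: "a \<in> I \<union> J" using a by (simp add: g qK_def)
  have "card ((I \<union> J) - {a}) \<ge> 1"
    using gg aK by (simp add: card_Diff_singleton)
  moreover have "phi a (I, p, J, q) \<in> P ((I \<union> J) - {a})" by (rule phi_in[OF gg(8) aK])
  moreover have "restrict lam ((I \<union> J) - {a}) \<in> ((I \<union> J) - {a}) \<rightarrow>\<^sub>E Vbasis n"
    using gg(7) by (auto simp: PiE_def Pi_def)
  ultimately show ?thesis using gg by (simp add: g Dp_simp pagen_ok_def)
qed

lemma deriv_gen_eq:
  assumes G: "qagen_ok P n G"
  shows "QA_deriv smul P subst rv u n x (gen G) = (\<Sum>a\<in>qK G. vscale (if qlam G a = x then 1 else 0) (gen (Dp G a)))"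
proof -
  obtain I p J q lam where g: "G = ((I, p, J, q), lam)" by (cases G) auto
  note gg = qagen_okD[OF G[unfolded g]]
  have "QA_deriv smul P subst rv u n x (gen G) = (\<Sum>a\<in>{a \<in> I \<union> J. lam a = x}. gen (Dp G a))"
    unfolding QA_deriv_def lext_gen deriv_gen_def using G
    by (simp add: g Dp_simp Q_deriv_eq[OF gg(8)])
  also have "\<dots> = (\<Sum>a\<in>I \<union> J. if lam a = x then gen (Dp G a) else 0)"
    by (rule sum.inter_filter) (use gg in auto)
  also have "\<dots> = (\<Sum>a\<in>qK G. vscale (if qlam G a = x then 1 else 0) (gen (Dp G a)))"
    unfolding g qK_def qlam_def by (rule sum.cong) auto
  finally show ?thesis .
qed

lemma PA_tens_sums:
  assumes "finite S" "finite S'" "\<And>a. a \<in> S \<Longrightarrow> pagen_ok P n (X a)" "\<And>b. b \<in> S' \<Longrightarrow> pagen_ok P n (Y b)"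
  shows "PA_tens P ren n (\<Sum>a\<in>S. vscale (c a) (gen (X a))) (\<Sum>b\<in>S'. vscale (d b) (gen (Y b)))
       = (\<Sum>a\<in>S. \<Sum>b\<in>S'. vscale (c a * d b) (gen (Tt (X a) (Y b))))"
  unfolding PA_tens_def
  using assms by (simp add: lext_sum lext_vscale vscale_sum_right vscale_vscale tens_gen_eq)

lemma vscale_diff_left: "vscale (c - d) x = vscale c x - vscale d x"
  by (rule vec_eqI) (simp add: lookup_minus algebra_simps)

lemma ind_mult: "(if A then 1 else 0) * (if B then 1 else 0) = (if A \<and> B then 1 else (0::rat))"
  by simp

lemma bracket_gen:
  assumes G: "qagen_ok P n G" and H: "qagen_ok P n H"
  shows "br (gen G) (gen H) = (\<Sum>a\<in>qK G. \<Sum>b\<in>qK H. vscale (omega n (qlam G a) (qlam H b)) (gen (Tt (Dp G a) (Dp H b))))"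
proof -
  have fG: "finite (qK G)" "finite (qK H)"
    using G H by (cases G, cases H, auto simp: qK_def qagen_ok_def qgen_ok_def)+
  have okG: "\<And>a. a \<in> qK G \<Longrightarrow> pagen_ok P n (Dp G a)" using Dp_ok G by auto
  have okH: "\<And>b. b \<in> qK H \<Longrightarrow> pagen_ok P n (Dp H b)" using Dp_ok H by auto
  let ?T = "\<lambda>a b. gen (Tt (Dp G a) (Dp H b))"
  let ?ind = "\<lambda>P. if P then 1 else (0::rat)"
  have "br (gen G) (gen H) = (\<Sum>i\<in>{1..n}.
      (\<Sum>a\<in>qK G. \<Sum>b\<in>qK H. vscale (?ind (qlam G a = Pv i) * ?ind (qlam H b = Qv i)) (?T a b))
    - (\<Sum>a\<in>qK G. \<Sum>b\<in>qK H. vscale (?ind (qlam G a = Qv i) * ?ind (qlam H b = Pv i)) (?T a b)))"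
    unfolding bracket_def deriv_gen_eq[OF G] deriv_gen_eq[OF H]
    by (simp only: PA_tens_sums[OF fG(1) fG(2) okG okH] PA_tens_sums[OF fG(1) fG(2) okG okH])
  also have "\<dots> = (\<Sum>i\<in>{1..n}. \<Sum>a\<in>qK G. \<Sum>b\<in>qK H.
      vscale (?ind (qlam G a = Pv i) * ?ind (qlam H b = Qv i) - ?ind (qlam G a = Qv i) * ?ind (qlam H b = Pv i)) (?T a b))"
    by (simp add: sum_subtractf vscale_diff_left)
  also have "\<dots> = (\<Sum>a\<in>qK G. \<Sum>i\<in>{1..n}. \<Sum>b\<in>qK H.
      vscale (?ind (qlam G a = Pv i) * ?ind (qlam H b = Qv i) - ?ind (qlam G a = Qv i) * ?ind (qlam H b = Pv i)) (?T a b))"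
    by (rule sum.swap)
  also have "\<dots> = (\<Sum>a\<in>qK G. \<Sum>b\<in>qK H. \<Sum>i\<in>{1..n}.
      vscale (?ind (qlam G a = Pv i) * ?ind (qlam H b = Qv i) - ?ind (qlam G a = Qv i) * ?ind (qlam H b = Pv i)) (?T a b))"
    by (rule sum.cong[OF refl]) (rule sum.swap)
  also have "\<dots> = (\<Sum>a\<in>qK G. \<Sum>b\<in>qK H. vscale (omega n (qlam G a) (qlam H b)) (?T a b))"
    by (simp add: omega_def vscale_sum_left[symmetric] ind_mult)
  finally show ?thesis .
qed

end


context qa_ctx
begin

section \<open>Exact bilinearity of the bracket\<close>

lemma QA_deriv_add: "QA_deriv smul P subst rv u n x (F + G) = QA_deriv smul P subst rv u n x F + QA_deriv smul P subst rv u n x G"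
  by (simp add: QA_deriv_def lext_add)
lemma QA_deriv_scale: "QA_deriv smul P subst rv u n x (vscale c F) = vscale c (QA_deriv smul P subst rv u n x F)"
  by (simp add: QA_deriv_def lext_vscale)
lemma PA_tens_add1: "PA_tens P ren n (F + F') G = PA_tens P ren n F G + PA_tens P ren n F' G"
  by (simp add: PA_tens_def lext_add)
lemma PA_tens_scale1: "PA_tens P ren n (vscale c F) G = vscale c (PA_tens P ren n F G)"
  by (simp add: PA_tens_def lext_vscale)
lemma PA_tens_add2: "PA_tens P ren n F (G + G') = PA_tens P ren n F G + PA_tens P ren n F G'"
  by (simp add: PA_tens_def lext_add lext_fun_add)
lemma PA_tens_scale2: "PA_tens P ren n F (vscale c G) = vscale c (PA_tens P ren n F G)"
  by (simp add: PA_tens_def lext_vscale lext_fun_vscale)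

lemma br_add1: "br (F + F') H = br F H + br F' H"
  by (simp add: bracket_def QA_deriv_add PA_tens_add1 sum.distrib[symmetric] algebra_simps)
lemma br_add2: "br H (F + F') = br H F + br H F'"
  by (simp add: bracket_def QA_deriv_add PA_tens_add2 sum.distrib[symmetric] algebra_simps)
lemma br_scale1: "br (vscale c F) H = vscale c (br F H)"
  by (simp add: bracket_def QA_deriv_scale PA_tens_scale1 vscale_sum_right vscale_diff_right)
lemma br_scale2: "br H (vscale c F) = vscale c (br H F)"
  by (simp add: bracket_def QA_deriv_scale PA_tens_scale2 vscale_sum_right vscale_diff_right)
lemma br_zero1 [simp]: "br 0 H = 0"
  using br_scale1[of 0 0 H] by simp
lemma br_zero2 [simp]: "br H 0 = 0"
  using br_scale2[of H 0 0] by simp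
lemma br_uminus1: "br (- F) H = - br F H"
  using br_scale1[of "-1" F H] by (simp add: vscale_minus_one)
lemma br_uminus2: "br H (- F) = - br H F"
  using br_scale2[of H "-1" F] by (simp add: vscale_minus_one)
lemma br_diff1: "br (F - F') H = br F H - br F' H"
  by (metis diff_conv_add_uminus br_add1 br_uminus1)
lemma br_diff2: "br H (F - F') = br H F - br H F'"
  by (metis diff_conv_add_uminus br_add2 br_uminus2)
lemma br_sum1: "br (sum f S) H = (\<Sum>x\<in>S. br (f x) H)"
  by (induction S rule: infinite_finite_induct) (auto simp: br_add1)
lemma br_sum2: "br H (sum f S) = (\<Sum>x\<in>S. br H (f x))"
  by (induction S rule: infinite_finite_induct) (auto simp: br_add2)

section \<open>The relation space\<close>

lemma RR_add: "a \<in> RR \<Longrightarrow> b \<in> RR \<Longrightarrow> a + b \<in> RR"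
  unfolding QA_rel_def by (rule rspan.add)
lemma RR_diff: "a \<in> RR \<Longrightarrow> b \<in> RR \<Longrightarrow> a - b \<in> RR"
  unfolding QA_rel_def by (rule rspan_diff)
lemma RR_scale: "a \<in> RR \<Longrightarrow> vscale c a \<in> RR"
  unfolding QA_rel_def by (rule rspan.scale)
lemma RR_uminus: "a \<in> RR \<Longrightarrow> - a \<in> RR"
  unfolding QA_rel_def by (rule rspan_uminus)
lemma RR_zero: "0 \<in> RR"
  unfolding QA_rel_def by (rule rspan.zero)
lemma RR_sum: "(\<And>x. x \<in> S \<Longrightarrow> f x \<in> RR) \<Longrightarrow> sum f S \<in> RR"
  unfolding QA_rel_def by (rule rspan_sum)
lemma RR_trans: "a - b \<in> RR \<Longrightarrow> b - c \<in> RR \<Longrightarrow> a - c \<in> RR"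
  using RR_add[of "a - b" "b - c"] by simp
lemma RR_sym: "a - b \<in> RR \<Longrightarrow> b - a \<in> RR"
  using RR_uminus[of "a - b"] by simp

lemma QA_relabel:
  assumes ok: "qagen_ok P n ((I, p, J, q), lam)" and t: "inj_on t (I \<union> J)"
    and e: "I' = t ` I" "J' = t ` J" "p' = ren t I p" "q' = ren t J q"
    and l: "lam' \<in> extensional (I' \<union> J')" "\<And>x. x \<in> I \<union> J \<Longrightarrow> lam' (t x) = lam x"
  shows "gen ((I, p, J, q), lam) - gen ((I', p', J', q'), lam') \<in> RR"
proof -
  have "restrict (lam \<circ> the_inv_into (I \<union> J) t) (t ` (I \<union> J)) = lam'"
    by (rule restrict_inv_eq) (use t l e in \<open>auto simp: image_Un\<close>)
  then have "gen ((I, p, J, q), lam) - gen ((I', p', J', q'), lam') \<in> QA_rels smul P ren subst rv n"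
    unfolding QA_rels_def using ok t e by blast
  then show ?thesis unfolding QA_rel_def by (rule rspan.base)
qed

lemma tag_gen: "tag lam (gen g) = gen (g, lam)"
  by (simp add: tag_def)

lemma tag_RR:
  assumes "finite K" "2 \<le> card K" "lam \<in> K \<rightarrow>\<^sub>E Vbasis n" "r \<in> Q_rel smul P subst rv K"
  shows "tag lam r \<in> RR"
proof -
  have "r \<in> rspan (Q_rels smul P subst rv K)" using assms(4) by (simp add: Q_rel_def)
  then show ?thesis unfolding tag_def QA_rel_def
  proof (rule rspan_lext)
    fix x assume "x \<in> Q_rels smul P subst rv K"
    then have "lext (\<lambda>g. gen (g, lam)) x \<in> QA_rels smul P ren subst rv n"
      unfolding QA_rels_def tag_def using assms(1-3) by blast
    then show "lext (\<lambda>g. gen (g, lam)) x \<in> rspan (QA_rels smul P ren subst rv n)" by (rule rspan.base)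
  qed
qed

lemma tag_diff: "tag lam (a - b) = tag lam a - tag lam b"
  by (simp add: tag_def lext_diff)

lemma Q_equiv:
  assumes ok1: "qagen_ok P n ((I, p, J, q), lam)" and ok2: "qagen_ok P n ((I', p', J', q'), lam)"
    and K: "I' \<union> J' = I \<union> J" and e: "e \<in> I \<union> J"
    and ph: "phi e (I, p, J, q) = phi e (I', p', J', q')"
  shows "gen ((I, p, J, q), lam) - gen ((I', p', J', q'), lam) \<in> RR"
proof -
  note g1 = qagen_okD[OF ok1] and g2 = qagen_okD[OF ok2]
  define N where "N = gen ((I \<union> J) - {e}, phi e (I, p, J, q), {e}, u e)"
  have a: "gen (I, p, J, q) - N \<in> Q_rel smul P subst rv (I \<union> J)"
    unfolding N_def by (rule Q_exists[OF g1(8) e])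
  have b: "gen (I', p', J', q') - N \<in> Q_rel smul P subst rv (I \<union> J)"
    unfolding N_def ph using Q_exists[OF g2(8)] e K by simp
  have "(gen (I, p, J, q) - N) - (gen (I', p', J', q') - N) \<in> Q_rel smul P subst rv (I \<union> J)"
    using a b unfolding Q_rel_def by (rule rspan_diff)
  then have "tag lam ((gen (I, p, J, q) - N) - (gen (I', p', J', q') - N)) \<in> RR"
    by (rule tag_RR[rotated 3]) (use g1 in auto)
  then show ?thesis by (simp add: tag_diff tag_gen)
qed

end


context qa_ctx
begin

lemma shift_notin: "finite I \<Longrightarrow> z + Suc (Max I) \<notin> I"
  using shift_disj[of I "{z}"] by auto

lemma T_ren:
  assumes x: "pagen_ok P n (I, p, lam)" and y: "pagen_ok P n (J, q, mu)"
    and s: "inj_on s I" and s': "inj_on s' J"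
    and l1: "lam2 \<in> extensional (s ` I)" "\<And>i. i \<in> I \<Longrightarrow> lam2 (s i) = lam i"
    and l2: "mu2 \<in> extensional (s' ` J)" "\<And>j. j \<in> J \<Longrightarrow> mu2 (s' j) = mu j"
  shows "gen (Tt (I, p, lam) (J, q, mu)) - gen (Tt (s ` I, ren s I p, lam2) (s' ` J, ren s' J q, mu2)) \<in> RR"
proof -
  note xx = pagen_okD[OF x] and yy = pagen_okD[OF y]
  define N where "N = Suc (Max I)"
  define N' where "N' = Suc (Max (s ` I))"
  define sh where "sh = (\<lambda>z::nat. z + N)"
  define sh' where "sh' = (\<lambda>z::nat. z + N')"
  define t where "t = (\<lambda>z. if z \<in> I then s z else s' (z - N) + N')"
  have fsI: "finite (s ` I)" using xx by simp
  have shI: "\<And>z. sh z \<notin> I" unfolding sh_def N_def using shift_notin[OF xx(1)] by blast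
  have sh'I: "\<And>z. sh' z \<notin> s ` I" unfolding sh'_def N'_def using shift_notin[OF fsI] by blast
  have tI: "\<And>z. z \<in> I \<Longrightarrow> t z = s z" by (simp add: t_def)
  have tJ: "\<And>j. t (sh j) = sh' (s' j)" using shI by (simp add: t_def sh_def sh'_def)
  have inj: "inj_on t (I \<union> sh ` J)"
  proof (rule inj_onI)
    fix a b assume a: "a \<in> I \<union> sh ` J" and b: "b \<in> I \<union> sh ` J" and e: "t a = t b"
    show "a = b"
    proof (cases "a \<in> I")
      case aI: True
      show ?thesis
      proof (cases "b \<in> I")
        case True then show ?thesis using aI e s by (simp add: tI inj_on_def)
      next
        case False
        then obtain j where "b = sh j" using b by auto
        then have "t b = sh' (s' j)" using tJ by simp
        moreover have "t a \<in> s ` I" using aI tI by simp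
        ultimately show ?thesis using e sh'I by metis
      qed
    next
      case aJ: False
      then obtain j where j: "a = sh j" "j \<in> J" using a by auto
      show ?thesis
      proof (cases "b \<in> I")
        case True
        then have "t b \<in> s ` I" using tI by simp
        then show ?thesis using e j tJ sh'I by metis
      next
        case False
        then obtain k where k: "b = sh k" "k \<in> J" using b by auto
        have "s' j = s' k" using e j k tJ by (simp add: sh'_def)
        then show ?thesis using s' j k by (auto simp: inj_on_def)
      qed
    qed
  qed
  have tsJ: "t ` sh ` J = sh' ` s' ` J" using tJ by (auto simp: image_iff)
  have r1: "ren t I p = ren s I p" by (rule ren_cong) (use xx tI in auto)
  have injsh: "inj_on sh J" "inj_on sh' (s' ` J)" by (auto simp: sh_def sh'_def inj_on_def)
  have r2: "ren t (sh ` J) (ren sh J q) = ren sh' (s' ` J) (ren s' J q)"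
  proof -
    have "ren t (sh ` J) (ren sh J q) = ren (t \<circ> sh) J q"
      by (rule ren_comp[symmetric]) (use yy injsh inj in \<open>auto intro: inj_on_subset\<close>)
    also have "\<dots> = ren (sh' \<circ> s') J q" by (rule ren_cong) (use yy tJ in auto)
    also have "\<dots> = ren sh' (s' ` J) (ren s' J q)"
      by (rule ren_comp) (use yy injsh s' in auto)
    finally show ?thesis .
  qed
  define lamT where "lamT = restrict (\<lambda>z. if z \<in> s ` I then lam2 z else mu2 (z - N')) (s ` I \<union> sh' ` s' ` J)"
  have T1: "Tt (I, p, lam) (J, q, mu) = ((I, p, sh ` J, ren sh J q),
      restrict (\<lambda>z. if z \<in> I then lam z else mu (z - N)) (I \<union> sh ` J))"
    unfolding sh_def N_def by (simp only: Tt_simp)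
  have T2: "Tt (s ` I, ren s I p, lam2) (s' ` J, ren s' J q, mu2) = ((s ` I, ren s I p, sh' ` s' ` J, ren sh' (s' ` J) (ren s' J q)), lamT)"
    unfolding sh'_def N'_def lamT_def by (simp only: Tt_simp)
  have ok: "qagen_ok P n ((I, p, sh ` J, ren sh J q), restrict (\<lambda>z. if z \<in> I then lam z else mu (z - N)) (I \<union> sh ` J))"
    using Tt_ok[OF x y] T1 by simp
  have "gen ((I, p, sh ` J, ren sh J q), restrict (\<lambda>z. if z \<in> I then lam z else mu (z - N)) (I \<union> sh ` J))
      - gen ((s ` I, ren s I p, sh' ` s' ` J, ren sh' (s' ` J) (ren s' J q)), lamT) \<in> RR"
  proof (rule QA_relabel[OF ok inj])
    show "s ` I = t ` I" using tI by (auto simp: image_iff)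
    show "sh' ` s' ` J = t ` sh ` J" using tsJ by simp
    show "ren s I p = ren t I p" using r1 by simp
    show "ren sh' (s' ` J) (ren s' J q) = ren t (sh ` J) (ren sh J q)" using r2 by simp
    show "lamT \<in> extensional (s ` I \<union> sh' ` s' ` J)" by (simp add: lamT_def)
    fix z assume z: "z \<in> I \<union> sh ` J"
    show "lamT (t z) = restrict (\<lambda>z. if z \<in> I then lam z else mu (z - N)) (I \<union> sh ` J) z"
    proof (cases "z \<in> I")
      case True then show ?thesis using l1 by (simp add: lamT_def tI)
    next
      case False
      then obtain j where j: "z = sh j" "j \<in> J" using z by auto
      have "sh' (s' j) \<notin> s ` I" using sh'I by simp
      then show ?thesis using j l2 False tJ by (simp add: lamT_def sh_def sh'_def)
    qed
  qed
  then show ?thesis using T1 T2 by simp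
qed

end


context qa_ctx
begin

lemma T_swap:
  assumes x: "pagen_ok P n (I, p, lam)" and y: "pagen_ok P n (J, q, mu)"
  shows "gen (Tt (I, p, lam) (J, q, mu)) - gen (Tt (J, q, mu) (I, p, lam)) \<in> RR"
proof -
  note xx = pagen_okD[OF x] and yy = pagen_okD[OF y]
  define N where "N = Suc (Max I)"
  define M where "M = Suc (Max J)"
  define sh where "sh = (\<lambda>z::nat. z + N)"
  define sh' where "sh' = (\<lambda>z::nat. z + M)"
  define nu where "nu = restrict (\<lambda>z. if z \<in> I then lam z else mu (z - N)) (I \<union> sh ` J)"
  define nu' where "nu' = restrict (\<lambda>z. if z \<in> J then mu z else lam (z - M)) (J \<union> sh' ` I)"
  have T1: "Tt (I, p, lam) (J, q, mu) = ((I, p, sh ` J, ren sh J q), nu)"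
    unfolding sh_def N_def nu_def by (simp only: Tt_simp)
  have T2: "Tt (J, q, mu) (I, p, lam) = ((J, q, sh' ` I, ren sh' I p), nu')"
    unfolding sh'_def M_def nu'_def by (simp only: Tt_simp)
  have ok: "qagen_ok P n ((I, p, sh ` J, ren sh J q), nu)" using Tt_ok[OF x y] T1 by simp
  note okk = qagen_okD[OF ok]
  have okr: "qagen_ok P n ((sh ` J, ren sh J q, I, p), nu)"
    using ok by (auto simp: qagen_ok_def qgen_ok_def Un_commute)
  have step1: "gen ((I, p, sh ` J, ren sh J q), nu) - gen ((sh ` J, ren sh J q, I, p), nu) \<in> RR"
  proof -
    have "gen (I, p, sh ` J, ren sh J q) - gen (sh ` J, ren sh J q, I, p) \<in> Q_rel smul P subst rv (I \<union> sh ` J)"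
      unfolding Q_rel_def by (rule rspan.base) (rule Q_rels5I[OF okk(8)])
    then have "tag nu (gen (I, p, sh ` J, ren sh J q) - gen (sh ` J, ren sh J q, I, p)) \<in> RR"
      by (rule tag_RR[rotated 3]) (use okk in auto)
    then show ?thesis by (simp add: tag_diff tag_gen)
  qed
  have shI: "\<And>z. sh z \<notin> I" unfolding sh_def N_def using shift_notin[OF xx(1)] by blast
  have sh'J: "\<And>z. sh' z \<notin> J" unfolding sh'_def M_def using shift_notin[OF yy(1)] by blast
  define t where "t = (\<lambda>z. if z \<in> I then sh' z else z - N)"
  have tI: "\<And>z. z \<in> I \<Longrightarrow> t z = sh' z" by (simp add: t_def)
  have tJ: "\<And>j. t (sh j) = j" using shI by (simp add: t_def sh_def)
  have inj: "inj_on t (sh ` J \<union> I)"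
  proof (rule inj_onI)
    fix a b assume a: "a \<in> sh ` J \<union> I" and b: "b \<in> sh ` J \<union> I" and e: "t a = t b"
    show "a = b"
    proof (cases "a \<in> I")
      case aI: True
      show ?thesis
      proof (cases "b \<in> I")
        case True then show ?thesis using aI e by (simp add: tI sh'_def)
      next
        case False
        then obtain j where j: "b = sh j" "j \<in> J" using b by auto
        have "t a = sh' a" using aI tI by simp
        moreover have "t b = j" using j tJ by simp
        ultimately show ?thesis using e sh'J j by metis
      qed
    next
      case aJ: False
      then obtain j where j: "a = sh j" "j \<in> J" using a by auto
      show ?thesis
      proof (cases "b \<in> I")
        case True
        have "t b = sh' b" using True tI by simp
        moreover have "t a = j" using j tJ by simp
        ultimately show ?thesis using e sh'J j by metis
      next
        case False
        then obtain k where k: "b = sh k" "k \<in> J" using b by auto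
        then show ?thesis using e j tJ by simp
      qed
    qed
  qed
  have "gen ((sh ` J, ren sh J q, I, p), nu) - gen ((J, q, sh' ` I, ren sh' I p), nu') \<in> RR"
  proof (rule QA_relabel[OF okr inj])
    show "J = t ` sh ` J" using tJ by (auto simp: image_iff)
    show "sh' ` I = t ` I" using tI by (auto simp: image_iff)
    have injsh: "inj_on sh J" by (auto simp: sh_def inj_on_def)
    have "ren t (sh ` J) (ren sh J q) = ren (t \<circ> sh) J q"
      by (rule ren_comp[symmetric]) (use yy injsh inj in \<open>auto intro: inj_on_subset\<close>)
    also have "\<dots> = q" by (rule ren_id_on) (use yy tJ in auto)
    finally show "q = ren t (sh ` J) (ren sh J q)" by simp
    show "ren sh' I p = ren t I p" by (rule ren_cong) (use xx tI in auto)
    show "nu' \<in> extensional (J \<union> sh' ` I)" by (simp add: nu'_def)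
    fix z assume z: "z \<in> sh ` J \<union> I"
    show "nu' (t z) = nu z"
    proof (cases "z \<in> I")
      case True then show ?thesis using sh'J by (simp add: nu'_def nu_def tI sh'_def)
    next
      case False
      then obtain j where j: "z = sh j" "j \<in> J" using z by auto
      then show ?thesis using False tJ by (simp add: nu'_def nu_def sh_def)
    qed
  qed
  then show ?thesis using step1 T1 T2 RR_trans by simp
qed

lemma Q_rels1I: "qgen_ok P K (I, p, J, p') \<Longrightarrow> q \<in> P I \<Longrightarrow>
    gen (I, p + q, J, p') - gen (I, p, J, p') - gen (I, q, J, p') \<in> Q_rels smul P subst rv K"
  unfolding Q_rels_def by (intro UnI1 CollectI exI conjI refl) auto

lemma Q_rels2I: "qgen_ok P K (I, p, J, p') \<Longrightarrow>
    gen (I, smul c p, J, p') - vscale c (gen (I, p, J, p')) \<in> Q_rels smul P subst rv K"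
  unfolding Q_rels_def
  apply (rule UnI1, rule UnI1, rule UnI1, rule UnI1, rule UnI2)
  by (intro CollectI exI conjI refl) auto

lemma Q_lin1:
  assumes a: "finite I" "finite J" "I \<inter> J = {}" "I \<union> J = K" "q \<in> P J"
    and S: "finite S" "\<And>g. g \<in> S \<Longrightarrow> f g \<in> P I"
  shows "(\<Sum>g\<in>S. vscale (c g) (gen (I, f g, J, q))) - gen (I, \<Sum>g\<in>S. smul (c g) (f g), J, q)
     \<in> Q_rel smul P subst rv K"
  using S
proof (induction S rule: finite_induct)
  case empty
  have ok0: "qgen_ok P K (I, 0, J, q)" using a P_zero by (auto simp: qgen_ok_def)
  have "gen (I, 0 + 0, J, q) - gen (I, 0, J, q) - gen (I, 0, J, q) \<in> Q_rels smul P subst rv K"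
    by (rule Q_rels1I[OF ok0]) (use P_zero a in auto)
  then show ?case unfolding Q_rel_def by (auto intro: rspan.base)
next
  case (insert x F)
  define A where "A = smul (c x) (f x)"
  define B where "B = (\<Sum>g\<in>F. smul (c g) (f g))"
  have fx: "f x \<in> P I" using insert by auto
  have AP: "A \<in> P I" unfolding A_def using P_scale a fx by auto
  have "\<And>g. g \<in> F \<Longrightarrow> smul (c g) (f g) \<in> P I" using insert.prems P_scale a(1) by auto
  then have BP: "B \<in> P I" unfolding B_def by (rule P_sum[OF a(1)])
  have okA: "qgen_ok P K (I, A, J, q)" and okx: "qgen_ok P K (I, f x, J, q)"
    using a AP fx by (auto simp: qgen_ok_def)
  have r1: "gen (I, A + B, J, q) - gen (I, A, J, q) - gen (I, B, J, q) \<in> Q_rel smul P subst rv K"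
    unfolding Q_rel_def by (rule rspan.base) (rule Q_rels1I[OF okA BP])
  have r2: "gen (I, A, J, q) - vscale (c x) (gen (I, f x, J, q)) \<in> Q_rel smul P subst rv K"
    unfolding Q_rel_def A_def by (rule rspan.base) (rule Q_rels2I[OF okx])
  have IH: "(\<Sum>g\<in>F. vscale (c g) (gen (I, f g, J, q))) - gen (I, B, J, q) \<in> Q_rel smul P subst rv K"
    using insert unfolding B_def by auto
  have "((\<Sum>g\<in>F. vscale (c g) (gen (I, f g, J, q))) - gen (I, B, J, q))
      - (gen (I, A + B, J, q) - gen (I, A, J, q) - gen (I, B, J, q))
      - (gen (I, A, J, q) - vscale (c x) (gen (I, f x, J, q))) \<in> Q_rel smul P subst rv K"
    using rspan_diff[OF rspan_diff[OF IH[unfolded Q_rel_def] r1[unfolded Q_rel_def]] r2[unfolded Q_rel_def]]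
    unfolding Q_rel_def .
  moreover have "((\<Sum>g\<in>F. vscale (c g) (gen (I, f g, J, q))) - gen (I, B, J, q))
      - (gen (I, A + B, J, q) - gen (I, A, J, q) - gen (I, B, J, q))
      - (gen (I, A, J, q) - vscale (c x) (gen (I, f x, J, q)))
      = (\<Sum>g\<in>insert x F. vscale (c g) (gen (I, f g, J, q))) - gen (I, \<Sum>g\<in>insert x F. smul (c g) (f g), J, q)"
    using insert by (simp add: A_def B_def algebra_simps)
  ultimately show ?case by simp
qed

lemma tag_sum: "tag lam (\<Sum>g\<in>S. vscale (c g) (gen (h g))) = (\<Sum>g\<in>S. vscale (c g) (gen (h g, lam)))"
  by (simp add: tag_def lext_sum lext_vscale)

lemma T_lin:
  assumes y: "pagen_ok P n (J, q, mu)" and I: "finite I" "I \<noteq> {}" "lam \<in> I \<rightarrow>\<^sub>E Vbasis n"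
    and S: "finite S" "\<And>g. g \<in> S \<Longrightarrow> f g \<in> P I"
  shows "(\<Sum>g\<in>S. vscale (c g) (gen (Tt (I, f g, lam) (J, q, mu)))) - gen (Tt (I, \<Sum>g\<in>S. smul (c g) (f g), lam) (J, q, mu)) \<in> RR"
proof -
  note yy = pagen_okD[OF y]
  define N where "N = Suc (Max I)"
  define sh where "sh = (\<lambda>z::nat. z + N)"
  define nu where "nu = restrict (\<lambda>z. if z \<in> I then lam z else mu (z - N)) (I \<union> sh ` J)"
  have T: "\<And>p. Tt (I, p, lam) (J, q, mu) = ((I, p, sh ` J, ren sh J q), nu)"
    unfolding sh_def N_def nu_def by (simp only: Tt_simp)
  have x0: "pagen_ok P n (I, 0, lam)" using I P_zero by (auto simp: pagen_ok_def Suc_le_eq card_gt_0_iff)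
  have ok0: "qagen_ok P n ((I, 0, sh ` J, ren sh J q), nu)" using Tt_ok[OF x0 y] T by simp
  note okk = qagen_okD[OF ok0]
  have "(\<Sum>g\<in>S. vscale (c g) (gen (I, f g, sh ` J, ren sh J q))) - gen (I, \<Sum>g\<in>S. smul (c g) (f g), sh ` J, ren sh J q)
     \<in> Q_rel smul P subst rv (I \<union> sh ` J)"
    by (rule Q_lin1) (use okk S in auto)
  then have "tag nu ((\<Sum>g\<in>S. vscale (c g) (gen (I, f g, sh ` J, ren sh J q))) - gen (I, \<Sum>g\<in>S. smul (c g) (f g), sh ` J, ren sh J q)) \<in> RR"
    by (rule tag_RR[rotated 3]) (use okk in auto)
  then show ?thesis by (simp add: tag_diff tag_gen tag_sum T)
qed

lemma T_lin_zero:
  assumes y: "pagen_ok P n (J, q, mu)" and I: "finite I" "I \<noteq> {}" "lam \<in> I \<rightarrow>\<^sub>E Vbasis n"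
    and S: "finite S" "\<And>g. g \<in> S \<Longrightarrow> f g \<in> P I"
    and z: "(\<Sum>g\<in>S. smul (c g) (f g)) = 0"
  shows "(\<Sum>g\<in>S. vscale (c g) (gen (Tt (I, f g, lam) (J, q, mu)))) \<in> RR"
proof -
  have a: "(\<Sum>g\<in>S. vscale (c g) (gen (Tt (I, f g, lam) (J, q, mu)))) - gen (Tt (I, 0, lam) (J, q, mu)) \<in> RR"
    using T_lin[where c = c and f = f, OF y I(1) I(2) I(3) S(1) S(2)] z by simp
  have b: "0 - gen (Tt (I, 0, lam) (J, q, mu)) \<in> RR"
    using T_lin[OF y I, of "{}"] by simp
  show ?thesis using RR_diff[OF a b] by simp
qed

lemma vscale_minus_left: "vscale (- c) x = - vscale c x"
  by (rule vec_eqI) simp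

lemma antisym_gen:
  assumes G: "qagen_ok P n G" and H: "qagen_ok P n H"
  shows "br (gen G) (gen H) + br (gen H) (gen G) \<in> RR"
proof -
  have okG: "\<And>a. a \<in> qK G \<Longrightarrow> pagen_ok P n (Dp G a)" using Dp_ok G by auto
  have okH: "\<And>b. b \<in> qK H \<Longrightarrow> pagen_ok P n (Dp H b)" using Dp_ok H by auto
  have "br (gen H) (gen G) = (\<Sum>a\<in>qK G. \<Sum>b\<in>qK H. vscale (omega n (qlam H b) (qlam G a)) (gen (Tt (Dp H b) (Dp G a))))"
    unfolding bracket_gen[OF H G] by (rule sum.swap)
  then have "br (gen G) (gen H) + br (gen H) (gen G) = (\<Sum>a\<in>qK G. \<Sum>b\<in>qK H.
      vscale (omega n (qlam G a) (qlam H b)) (gen (Tt (Dp G a) (Dp H b)) - gen (Tt (Dp H b) (Dp G a))))"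
    unfolding bracket_gen[OF G H]
    by (simp add: omega_antisym[of n "qlam H _"] vscale_diff_right sum_subtractf[symmetric]
          vscale_minus_left sum.distrib[symmetric] algebra_simps)
  also have "\<dots> \<in> RR"
  proof (intro RR_sum RR_scale)
    fix a b assume a: "a \<in> qK G" and b: "b \<in> qK H"
    obtain I p lam where x: "Dp G a = (I, p, lam)" by (cases "Dp G a") auto
    obtain J q mu where y: "Dp H b = (J, q, mu)" by (cases "Dp H b") auto
    show "gen (Tt (Dp G a) (Dp H b)) - gen (Tt (Dp H b) (Dp G a)) \<in> RR"
      unfolding x y by (rule T_swap) (use okG[OF a] okH[OF b] x y in auto)
  qed
  finally show ?thesis .
qed

end


lemma keys_gen: "Poly_Mapping.keys (gen g) = {g}"
  by (simp add: gen_def)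

lemma keys_diff_sub: "Poly_Mapping.keys (a - b) \<subseteq> Poly_Mapping.keys a \<union> Poly_Mapping.keys b"
  by (auto simp: in_keys_iff lookup_minus)

lemma keys_vscale_sub: "Poly_Mapping.keys (vscale c a) \<subseteq> Poly_Mapping.keys a"
  by (auto simp: in_keys_iff)

context qa_ctx
begin

lemma keys_Q_rels:
  assumes r: "r \<in> Q_rels smul P subst rv K" and g: "g \<in> Poly_Mapping.keys r"
  shows "qgen_ok P K g"
  using r unfolding Q_rels_def
proof (elim UnE CollectE exE conjE)
  fix I p q J p' assume h: "r = gen (I, p + q, J, p') - gen (I, p, J, p') - gen (I, q, J, p')"
    "qgen_ok P K (I, p, J, p')" "q \<in> P I"
  have "g \<in> {(I, p + q, J, p'), (I, p, J, p'), (I, q, J, p')}"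
    using g keys_diff_sub[of "gen (I, p + q, J, p') - gen (I, p, J, p')" "gen (I, q, J, p')"]
      keys_diff_sub[of "gen (I, p + q, J, p')" "gen (I, p, J, p')"] by (auto simp: h(1) keys_gen)
  then show ?thesis using h P_add by (auto simp: qgen_ok_def)
next
  fix I p J p' c assume h: "r = gen (I, smul c p, J, p') - vscale c (gen (I, p, J, p'))"
    "qgen_ok P K (I, p, J, p')"
  have "g \<in> {(I, smul c p, J, p'), (I, p, J, p')}"
    using g keys_diff_sub[of "gen (I, smul c p, J, p')" "vscale c (gen (I, p, J, p'))"]
      keys_vscale_sub[of c "gen (I, p, J, p')"] by (auto simp: h(1) keys_gen)
  then show ?thesis using h P_scale by (auto simp: qgen_ok_def)
next
  fix I p J p' q' assume h: "r = gen (I, p, J, p' + q') - gen (I, p, J, p') - gen (I, p, J, q')"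
    "qgen_ok P K (I, p, J, p')" "q' \<in> P J"
  have "g \<in> {(I, p, J, p' + q'), (I, p, J, p'), (I, p, J, q')}"
    using g keys_diff_sub[of "gen (I, p, J, p' + q') - gen (I, p, J, p')" "gen (I, p, J, q')"]
      keys_diff_sub[of "gen (I, p, J, p' + q')" "gen (I, p, J, p')"] by (auto simp: h(1) keys_gen)
  then show ?thesis using h P_add by (auto simp: qgen_ok_def)
next
  fix I p J p' c assume h: "r = gen (I, p, J, smul c p') - vscale c (gen (I, p, J, p'))"
    "qgen_ok P K (I, p, J, p')"
  have "g \<in> {(I, p, J, smul c p'), (I, p, J, p')}"
    using g keys_diff_sub[of "gen (I, p, J, smul c p')" "vscale c (gen (I, p, J, p'))"]
      keys_vscale_sub[of c "gen (I, p, J, p')"] by (auto simp: h(1) keys_gen)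
  then show ?thesis using h P_scale by (auto simp: qgen_ok_def)
next
  fix I p J p' assume h: "r = gen (I, p, J, p') - gen (J, p', I, p)" "qgen_ok P K (I, p, J, p')"
  have "g \<in> {(I, p, J, p'), (J, p', I, p)}"
    using g keys_diff_sub[of "gen (I, p, J, p')" "gen (J, p', I, p)"] by (auto simp: h(1) keys_gen)
  then show ?thesis using h by (auto simp: qgen_ok_def)
next
  fix I1 I2 I3 p1 p2 p3 y w
  assume h: "r = gen ((I2 - {y}) \<union> I3, subst I2 p2 y I3 p3, I1, p1)
        - gen (I3, p3, (I2 - {y}) \<union> I1, subst ((I2 - {y}) \<union> {w}) (rv I2 y w p2) w I1 p1)"
    "finite I1" "finite I2" "finite I3" "I1 \<inter> I2 = {}" "I1 \<inter> I3 = {}" "I2 \<inter> I3 = {}"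
    "y \<in> I2" "w \<notin> I1 \<union> I2 \<union> I3" "(I2 - {y}) \<union> I1 \<union> I3 = K"
    "p1 \<in> P I1" "p2 \<in> P I2" "p3 \<in> P I3"
  have s1: "subst I2 p2 y I3 p3 \<in> P ((I2 - {y}) \<union> I3)" by (rule subst_closed) (use h in auto)
  have rP: "rv I2 y w p2 \<in> P ((I2 - {y}) \<union> {w})" by (rule rev_closed) (use h in auto)
  have s2: "subst ((I2 - {y}) \<union> {w}) (rv I2 y w p2) w I1 p1 \<in> P ((((I2 - {y}) \<union> {w}) - {w}) \<union> I1)"
    by (rule subst_closed) (use h rP in auto)
  have e2: "(((I2 - {y}) \<union> {w}) - {w}) \<union> I1 = (I2 - {y}) \<union> I1" using h by auto
  have "g \<in> {((I2 - {y}) \<union> I3, subst I2 p2 y I3 p3, I1, p1),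
             (I3, p3, (I2 - {y}) \<union> I1, subst ((I2 - {y}) \<union> {w}) (rv I2 y w p2) w I1 p1)}"
    using g keys_diff_sub[of "gen ((I2 - {y}) \<union> I3, subst I2 p2 y I3 p3, I1, p1)"
        "gen (I3, p3, (I2 - {y}) \<union> I1, subst ((I2 - {y}) \<union> {w}) (rv I2 y w p2) w I1 p1)"]
    by (auto simp: h(1) keys_gen)
  then show ?thesis using h s1 s2 e2 by (auto simp: qgen_ok_def)
qed

lemma qagen_ok_of_qgen:
  assumes "qgen_ok P K g" "2 \<le> card K" "lam \<in> K \<rightarrow>\<^sub>E Vbasis n"
  shows "qagen_ok P n (g, lam)"
  using assms by (cases g) (auto simp: qagen_ok_def qgen_ok_def)

lemma tag_as_sum: "tag lam r = (\<Sum>g\<in>Poly_Mapping.keys r. vscale (Poly_Mapping.lookup r g) (gen (g, lam)))"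
  by (simp add: tag_def lext_def)

lemma br_tag:
  assumes K: "finite K" "2 \<le> card K" "lam \<in> K \<rightarrow>\<^sub>E Vbasis n"
    and r: "r \<in> Q_rels smul P subst rv K" and H: "qagen_ok P n H"
  shows "br (tag lam r) (gen H) \<in> RR"
proof -
  let ?c = "Poly_Mapping.lookup r"
  let ?S = "Poly_Mapping.keys r"
  let ?X = "\<lambda>g a b. gen (Tt (K - {a}, phi a g, restrict lam (K - {a})) (Dp H b))"
  let ?w = "\<lambda>a b. omega n (lam a) (qlam H b)"
  have okg: "\<And>g. g \<in> ?S \<Longrightarrow> qgen_ok P K g" using keys_Q_rels[OF r] by blast
  have "br (tag lam r) (gen H) = (\<Sum>g\<in>?S. vscale (?c g) (br (gen (g, lam)) (gen H)))"
    by (simp add: tag_as_sum br_sum1 br_scale1)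
  also have "\<dots> = (\<Sum>g\<in>?S. vscale (?c g) (\<Sum>a\<in>K. \<Sum>b\<in>qK H. vscale (?w a b) (?X g a b)))"
  proof (rule sum.cong[OF refl])
    fix g assume g: "g \<in> ?S"
    obtain I p J q where gg: "g = (I, p, J, q)" by (cases g)
    have IJ: "I \<union> J = K" using okg[OF g] by (simp add: gg qgen_ok_def)
    have okG: "qagen_ok P n (g, lam)" using qagen_ok_of_qgen[OF okg[OF g] K(2,3)] .
    show "vscale (?c g) (br (gen (g, lam)) (gen H)) = vscale (?c g) (\<Sum>a\<in>K. \<Sum>b\<in>qK H. vscale (?w a b) (?X g a b))"
      unfolding bracket_gen[OF okG H] by (simp add: gg IJ qK_def qlam_def Dp_simp)
  qed
  also have "\<dots> = (\<Sum>g\<in>?S. \<Sum>a\<in>K. \<Sum>b\<in>qK H. vscale (?w a b) (vscale (?c g) (?X g a b)))"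
    by (simp add: vscale_sum_right vscale_vscale mult.commute)
  also have "\<dots> = (\<Sum>a\<in>K. \<Sum>g\<in>?S. \<Sum>b\<in>qK H. vscale (?w a b) (vscale (?c g) (?X g a b)))"
    by (rule sum.swap)
  also have "\<dots> = (\<Sum>a\<in>K. \<Sum>b\<in>qK H. \<Sum>g\<in>?S. vscale (?w a b) (vscale (?c g) (?X g a b)))"
    by (rule sum.cong[OF refl]) (rule sum.swap)
  also have "\<dots> = (\<Sum>a\<in>K. \<Sum>b\<in>qK H. vscale (?w a b) (\<Sum>g\<in>?S. vscale (?c g) (?X g a b)))"
    by (simp add: vscale_sum_right)
  also have "\<dots> \<in> RR"
  proof (rule RR_sum, rule RR_sum, rule RR_scale)
    fix a b assume a: "a \<in> K" and b: "b \<in> qK H"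
    obtain J q mu where y: "Dp H b = (J, q, mu)" by (cases "Dp H b") auto
    have yok: "pagen_ok P n (J, q, mu)" using Dp_ok[OF H b] y by simp
    have z: "(\<Sum>g\<in>?S. smul (?c g) (phi a g)) = 0"
      using phi_Q_rels[OF K(1) a r] by (simp add: vlin_def)
    have c1: "card (K - {a}) \<ge> 1" using K a by (simp add: card_Diff_singleton)
    have fK: "finite (K - {a})" "K - {a} \<noteq> {}"
    proof -
      show "finite (K - {a})" using K(1) by simp
      show "K - {a} \<noteq> {}"
      proof
        assume "K - {a} = {}"
        then have "card (K - {a}) = 0" by (simp only: card.empty)
        with c1 show False by simp
      qed
    qed
    have l: "restrict lam (K - {a}) \<in> (K - {a}) \<rightarrow>\<^sub>E Vbasis n" using K(3) by (auto simp: PiE_def Pi_def)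
    show "(\<Sum>g\<in>?S. vscale (?c g) (?X g a b)) \<in> RR"
      unfolding y
      by (rule T_lin_zero[where f = "\<lambda>g. phi a g" and c = ?c, OF yok fK l finite_keys]) (use phi_in' okg a z in auto)
  qed
  finally show ?thesis .
qed

end


context qa_ctx
begin

lemma T_ren1:
  assumes x: "pagen_ok P n (I, p, lam)" and y: "pagen_ok P n (J, q, mu)"
    and s: "inj_on s I"
    and l1: "lam2 \<in> extensional (s ` I)" "\<And>i. i \<in> I \<Longrightarrow> lam2 (s i) = lam i"
  shows "gen (Tt (I, p, lam) (J, q, mu)) - gen (Tt (s ` I, ren s I p, lam2) (J, q, mu)) \<in> RR"
proof -
  note yy = pagen_okD[OF y]
  have "gen (Tt (I, p, lam) (J, q, mu)) - gen (Tt (s ` I, ren s I p, lam2) (id ` J, ren id J q, mu)) \<in> RR"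
    by (rule T_ren[OF x y s _ l1]) (use yy in \<open>auto simp: PiE_def\<close>)
  then show ?thesis using ren_id[OF yy(1) yy(3)] by simp
qed

lemma qagen_ok_relabel:
  assumes ok: "qagen_ok P n ((I, p, J, q), lam)" and s: "inj_on s (I \<union> J)"
  shows "qagen_ok P n ((s ` I, ren s I p, s ` J, ren s J q), restrict (lam \<circ> the_inv_into (I \<union> J) s) (s ` (I \<union> J)))"
proof -
  note gg = qagen_okD[OF ok]
  have sI: "inj_on s I" "inj_on s J" using s by (auto intro: inj_on_subset)
  have dj: "s ` I \<inter> s ` J = {}" using inj_on_image_Int[OF s, of I J] gg by auto
  have c: "card (s ` I \<union> s ` J) = card (I \<union> J)" using card_image[OF s] by (simp add: image_Un)
  have l: "restrict (lam \<circ> the_inv_into (I \<union> J) s) (s ` (I \<union> J)) \<in> (s ` I \<union> s ` J) \<rightarrow>\<^sub>E Vbasis n"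
  proof -
    have "lam (the_inv_into (I \<union> J) s z) \<in> Vbasis n" if z: "z \<in> s ` (I \<union> J)" for z
    proof -
      obtain x where x: "x \<in> I \<union> J" "z = s x" using z by auto
      then show ?thesis using the_inv_into_f_f[OF s x(1)] gg(7) by (auto simp: PiE_def Pi_def)
    qed
    then show ?thesis by (auto simp: PiE_def Pi_def image_Un)
  qed
  show ?thesis using gg dj c l ren_closed sI by (auto simp: qagen_ok_def qgen_ok_def)
qed

lemma br_relabel:
  assumes ok: "qagen_ok P n ((I, p, J, q), lam)" and s: "inj_on s (I \<union> J)" and H: "qagen_ok P n H"
  shows "br (gen ((I, p, J, q), lam)) (gen H)
     - br (gen ((s ` I, ren s I p, s ` J, ren s J q), restrict (lam \<circ> the_inv_into (I \<union> J) s) (s ` (I \<union> J)))) (gen H) \<in> RR"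
proof -
  define K where "K = I \<union> J"
  define lam' where "lam' = restrict (lam \<circ> the_inv_into (I \<union> J) s) (s ` (I \<union> J))"
  define G where "G = ((I, p, J, q), lam)"
  define G' where "G' = ((s ` I, ren s I p, s ` J, ren s J q), lam')"
  note gg = qagen_okD[OF ok]
  have ok': "qagen_ok P n G'" unfolding G'_def lam'_def by (rule qagen_ok_relabel[OF ok s])
  have sK: "inj_on s K" using s by (simp add: K_def)
  have l'a: "\<And>a. a \<in> K \<Longrightarrow> lam' (s a) = lam a"
    using the_inv_into_f_f[OF s] by (simp add: lam'_def K_def)
  have qKG': "qK G' = s ` K" by (simp add: G'_def qK_def K_def image_Un)
  let ?w = "\<lambda>a b. omega n (lam a) (qlam H b)"
  have e1: "br (gen G) (gen H) = (\<Sum>a\<in>K. \<Sum>b\<in>qK H. vscale (?w a b) (gen (Tt (Dp G a) (Dp H b))))"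
    unfolding bracket_gen[OF ok[folded G_def] H] by (simp add: G_def qK_def qlam_def K_def)
  have e2: "br (gen G') (gen H) = (\<Sum>a\<in>K. \<Sum>b\<in>qK H. vscale (?w a b) (gen (Tt (Dp G' (s a)) (Dp H b))))"
    unfolding bracket_gen[OF ok' H] qKG' sum.reindex[OF sK]
    by (rule sum.cong[OF refl]) (simp add: qlam_def G'_def l'a)
  have "br (gen G) (gen H) - br (gen G') (gen H)
      = (\<Sum>a\<in>K. \<Sum>b\<in>qK H. vscale (?w a b) (gen (Tt (Dp G a) (Dp H b)) - gen (Tt (Dp G' (s a)) (Dp H b))))"
    unfolding e1 e2 by (simp add: vscale_diff_right sum_subtractf)
  also have "\<dots> \<in> RR"
  proof (rule RR_sum, rule RR_sum, rule RR_scale)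
    fix a b assume a: "a \<in> K" and b: "b \<in> qK H"
    obtain J' q' mu where y: "Dp H b = (J', q', mu)" by (cases "Dp H b") auto
    have yok: "pagen_ok P n (J', q', mu)" using Dp_ok[OF H b] y by simp
    have xok: "pagen_ok P n (Dp G a)" by (rule Dp_ok) (use ok a in \<open>auto simp: G_def qK_def K_def\<close>)
    have DG: "Dp G a = (K - {a}, phi a (I, p, J, q), restrict lam (K - {a}))"
      by (simp add: G_def Dp_simp K_def)
    have sKa: "s ` I \<union> s ` J - {s a} = s ` (K - {a})"
      using inj_on_image_set_diff[OF sK, of K "{a}"] a by (auto simp: K_def image_Un)
    have DG': "Dp G' (s a) = (s ` (K - {a}), ren s (K - {a}) (phi a (I, p, J, q)), restrict lam' (s ` (K - {a})))"
      using phi_ren[OF gg(8) a[unfolded K_def] s] sKa by (simp add: G'_def Dp_simp K_def)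
    show "gen (Tt (Dp G a) (Dp H b)) - gen (Tt (Dp G' (s a)) (Dp H b)) \<in> RR"
      unfolding DG DG' y
    proof (rule T_ren1)
      show "pagen_ok P n (K - {a}, phi a (I, p, J, q), restrict lam (K - {a}))" using xok DG by simp
      show "pagen_ok P n (J', q', mu)" by (rule yok)
      show "inj_on s (K - {a})" using sK by (auto intro: inj_on_subset)
      show "restrict lam' (s ` (K - {a})) \<in> extensional (s ` (K - {a}))" by simp
      fix i assume "i \<in> K - {a}"
      then show "restrict lam' (s ` (K - {a})) (s i) = restrict lam (K - {a}) i" using l'a by auto
    qed
  qed
  finally show ?thesis by (simp add: G_def G'_def lam'_def)
qed

lemma QA_rels_VV:
  assumes "r \<in> QA_rels smul P ren subst rv n" shows "r \<in> VV"
  using assms unfolding QA_rels_def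
proof (elim UnE CollectE exE conjE)
  fix K lam rq assume h: "r = tag lam rq" "finite K" "2 \<le> card K" "lam \<in> K \<rightarrow>\<^sub>E Vbasis n"
    "rq \<in> Q_rels smul P subst rv K"
  show ?thesis unfolding h(1) tag_as_sum QA_space_def
  proof (rule rspan_sum, rule rspan.scale, rule rspan.base)
    fix g assume "g \<in> Poly_Mapping.keys rq"
    then have "qagen_ok P n (g, lam)" using qagen_ok_of_qgen keys_Q_rels h by blast
    then show "gen (g, lam) \<in> {gen g |g. qagen_ok P n g}" by blast
  qed
next
  fix I p J p' lam s
  assume h: "r = gen ((I, p, J, p'), lam) - gen ((s ` I, ren s I p, s ` J, ren s J p'),
               restrict (lam \<circ> the_inv_into (I \<union> J) s) (s ` (I \<union> J)))"
    "qagen_ok P n ((I, p, J, p'), lam)" "inj_on s (I \<union> J)"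
  have ok': "qagen_ok P n ((s ` I, ren s I p, s ` J, ren s J p'), restrict (lam \<circ> the_inv_into (I \<union> J) s) (s ` (I \<union> J)))"
    by (rule qagen_ok_relabel[OF h(2,3)])
  show ?thesis unfolding h(1) QA_space_def
    by (rule rspan_diff; rule rspan.base) (use h(2) ok' in blast)+
qed

lemma RR_VV:
  assumes "r \<in> RR" shows "r \<in> VV"
proof -
  have "QA_rels smul P ren subst rv n \<subseteq> rspan {gen g |g. qagen_ok P n g}"
    using QA_rels_VV unfolding QA_space_def by blast
  then show ?thesis using rspan_mono[of r "QA_rels smul P ren subst rv n" "{gen g |g. qagen_ok P n g}"] assms
    unfolding QA_rel_def QA_space_def by blast
qed

lemma br_QA_rels:
  assumes r: "r \<in> QA_rels smul P ren subst rv n" and H: "qagen_ok P n H"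
  shows "br r (gen H) \<in> RR"
  using r unfolding QA_rels_def
proof (elim UnE CollectE exE conjE)
  fix K lam rq assume h: "r = tag lam rq" "finite K" "2 \<le> card K" "lam \<in> K \<rightarrow>\<^sub>E Vbasis n"
    "rq \<in> Q_rels smul P subst rv K"
  show ?thesis unfolding h(1) by (rule br_tag[OF h(2-5) H])
next
  fix I p J p' lam s
  assume h: "r = gen ((I, p, J, p'), lam) - gen ((s ` I, ren s I p, s ` J, ren s J p'),
               restrict (lam \<circ> the_inv_into (I \<union> J) s) (s ` (I \<union> J)))"
    "qagen_ok P n ((I, p, J, p'), lam)" "inj_on s (I \<union> J)"
  show ?thesis unfolding h(1) br_diff1 by (rule br_relabel[OF h(2,3) H])
qed

lemma VV_induct [consumes 1, case_names zero gen add scale]: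
  assumes "F \<in> VV" "Q 0" "\<And>g. qagen_ok P n g \<Longrightarrow> Q (gen g)"
    "\<And>a b. a \<in> VV \<Longrightarrow> b \<in> VV \<Longrightarrow> Q a \<Longrightarrow> Q b \<Longrightarrow> Q (a + b)"
    "\<And>a c. a \<in> VV \<Longrightarrow> Q a \<Longrightarrow> Q (vscale c a)"
  shows "Q F"
  using assms(1) unfolding QA_space_def
  by (induction rule: rspan.induct) (use assms(2-5) in \<open>auto simp: QA_space_def\<close>)

lemma RR_induct [consumes 1, case_names zero base add scale]:
  assumes "F \<in> RR" "Q 0" "\<And>r. r \<in> QA_rels smul P ren subst rv n \<Longrightarrow> Q r"
    "\<And>a b. a \<in> RR \<Longrightarrow> b \<in> RR \<Longrightarrow> Q a \<Longrightarrow> Q b \<Longrightarrow> Q (a + b)"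
    "\<And>a c. a \<in> RR \<Longrightarrow> Q a \<Longrightarrow> Q (vscale c a)"
  shows "Q F"
  using assms(1) unfolding QA_rel_def
  by (induction rule: rspan.induct) (use assms(2-5) in \<open>auto simp: QA_rel_def\<close>)

lemma br_RR1:
  assumes "F \<in> RR" "H \<in> VV" shows "br F H \<in> RR"
  using assms(1)
proof (induction rule: RR_induct)
  case zero then show ?case by (simp add: RR_zero)
next
  case (base r)
  show ?case using assms(2)
  proof (induction rule: VV_induct)
    case zero then show ?case by (simp add: RR_zero)
  next
    case (gen g) then show ?case using br_QA_rels[OF base] by simp
  next
    case (add a b) then show ?case by (simp add: br_add2 RR_add)
  next
    case (scale a c) then show ?case by (simp add: br_scale2 RR_scale)
  qed
next
  case (add a b) then show ?case by (simp add: br_add1 RR_add)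
next
  case (scale a c) then show ?case by (simp add: br_scale1 RR_scale)
qed

lemma br_antisym:
  assumes "F \<in> VV" "H \<in> VV" shows "br F H + br H F \<in> RR"
  using assms(1)
proof (induction rule: VV_induct)
  case zero then show ?case by (simp add: RR_zero)
next
  case (gen g)
  show ?case using assms(2)
  proof (induction rule: VV_induct)
    case zero then show ?case by (simp add: RR_zero)
  next
    case (gen h) then show ?case using antisym_gen[OF \<open>qagen_ok P n g\<close>] by simp
  next
    case (add a b)
    have "br (gen g) (a + b) + br (a + b) (gen g) = (br (gen g) a + br a (gen g)) + (br (gen g) b + br b (gen g))"
      by (simp add: br_add1 br_add2 algebra_simps)
    then show ?case using add RR_add by simp
  next
    case (scale a c)
    have "br (gen g) (vscale c a) + br (vscale c a) (gen g) = vscale c (br (gen g) a + br a (gen g))"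
      by (simp add: br_scale1 br_scale2 vscale_add_right)
    then show ?case using scale RR_scale by simp
  qed
next
  case (add a b)
  have "br (a + b) H + br H (a + b) = (br a H + br H a) + (br b H + br H b)"
    by (simp add: br_add1 br_add2 algebra_simps)
  then show ?case using add RR_add by simp
next
  case (scale a c)
  have "br (vscale c a) H + br H (vscale c a) = vscale c (br a H + br H a)"
    by (simp add: br_scale1 br_scale2 vscale_add_right)
  then show ?case using scale RR_scale by simp
qed

lemma br_RR2:
  assumes "F \<in> RR" "H \<in> VV" shows "br H F \<in> RR"
proof -
  have "br F H + br H F \<in> RR" by (rule br_antisym[OF RR_VV[OF assms(1)] assms(2)])
  then have "(br F H + br H F) - br F H \<in> RR" using br_RR1[OF assms] RR_diff by blast
  then show ?thesis by simp
qed

lemma VV_sum: "(\<And>x. x \<in> S \<Longrightarrow> f x \<in> VV) \<Longrightarrow> sum f S \<in> VV"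
  unfolding QA_space_def by (rule rspan_sum)

lemma VV_scale: "a \<in> VV \<Longrightarrow> vscale c a \<in> VV"
  unfolding QA_space_def by (rule rspan.scale)

lemma VV_gen: "qagen_ok P n g \<Longrightarrow> gen g \<in> VV"
  unfolding QA_space_def by (rule rspan.base) blast

lemma br_gen_VV:
  assumes G: "qagen_ok P n G" and H: "qagen_ok P n H"
  shows "br (gen G) (gen H) \<in> VV"
  unfolding bracket_gen[OF G H]
proof (rule VV_sum, rule VV_sum, rule VV_scale, rule VV_gen)
  fix a b assume a: "a \<in> qK G" and b: "b \<in> qK H"
  obtain I p lam where x: "Dp G a = (I, p, lam)" by (cases "Dp G a") auto
  obtain J q mu where y: "Dp H b = (J, q, mu)" by (cases "Dp H b") auto
  show "qagen_ok P n (Tt (Dp G a) (Dp H b))"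
    unfolding x y by (rule Tt_ok) (use Dp_ok[OF G a] Dp_ok[OF H b] x y in auto)
qed

lemma br_closed:
  assumes "F \<in> VV" "H \<in> VV" shows "br F H \<in> VV"
  using assms(1)
proof (induction rule: VV_induct)
  case zero then show ?case by (simp add: QA_space_def rspan.zero)
next
  case (gen g)
  show ?case using assms(2)
  proof (induction rule: VV_induct)
    case zero then show ?case by (simp add: QA_space_def rspan.zero)
  next
    case (gen h) then show ?case using br_gen_VV[OF \<open>qagen_ok P n g\<close>] by simp
  next
    case (add a b) then show ?case by (simp add: br_add2 QA_space_def rspan.add)
  next
    case (scale a c) then show ?case by (simp add: br_scale2 VV_scale)
  qed
next
  case (add a b) then show ?case by (simp add: br_add1 QA_space_def rspan.add)
next
  case (scale a c) then show ?case by (simp add: br_scale1 VV_scale)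
qed

end


context reversible_operad
begin

lemma jac_op:
  assumes fin: "finite IA" "finite B0" "finite IC"
    and dj: "IA \<inter> B0 = {}" "IA \<inter> IC = {}" "B0 \<inter> IC = {}"
    and c: "c \<notin> IA \<union> B0 \<union> IC" and a: "a \<notin> B0" "a \<noteq> c" and e: "e \<in> IA"
    and w: "w \<notin> IA \<union> B0 \<union> IC \<union> {a, c}" and v: "v \<notin> IA \<union> B0 \<union> IC \<union> {a, c, w}"
    and v': "v' \<notin> IA \<union> B0 \<union> IC \<union> {c}"
    and fP: "fA \<in> P IA" "fB \<in> P (B0 \<union> {c})" "fC \<in> P IC"
  shows "subst ((IA - {e}) \<union> {w}) (rv IA e w fA) w (B0 \<union> IC)
           (subst (B0 \<union> {v'}) (rv (B0 \<union> {c}) c v' fB) v' IC fC)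
       = subst (((IA \<union> B0) - {e}) \<union> {w})
           (rv (IA \<union> B0) e w (subst (B0 \<union> {v}) (rv (B0 \<union> {a}) a v (rv (B0 \<union> {c}) c a fB)) v IA fA))
           w IC fC"
proof -
  define g where "g = ren (id(c := v)) (B0 \<union> {c}) fB"
  have fB0c: "finite (B0 \<union> {c})" using fin by simp
  have g1: "rv (B0 \<union> {a}) a v (rv (B0 \<union> {c}) c a fB) = g"
  proof -
    have "rv (((B0 \<union> {c}) - {c}) \<union> {a}) a v (rv (B0 \<union> {c}) c a fB) = ren (id(c := v)) (B0 \<union> {c}) fB"
      by (rule rv_rv) (use fin c a v fP in auto)
    moreover have "((B0 \<union> {c}) - {c}) \<union> {a} = B0 \<union> {a}" using c by auto
    ultimately show ?thesis by (simp add: g_def)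
  qed
  have gP: "g \<in> P (B0 \<union> {v})"
  proof -
    have "g \<in> P (id(c := v) ` (B0 \<union> {c}))" unfolding g_def
      by (rule ren_closed) (use fin c v fP in \<open>auto simp: inj_on_def\<close>)
    moreover have "id(c := v) ` (B0 \<union> {c}) = B0 \<union> {v}" using c by auto
    ultimately show ?thesis by simp
  qed
  define hB where "hB = rv (B0 \<union> {c}) c w fB"
  have hBP: "hB \<in> P (B0 \<union> {w})"
  proof -
    have "hB \<in> P (((B0 \<union> {c}) - {c}) \<union> {w})" unfolding hB_def
      by (rule rev_closed) (use fin w fP in auto)
    moreover have "((B0 \<union> {c}) - {c}) \<union> {w} = B0 \<union> {w}" using c by auto
    ultimately show ?thesis by simp
  qed
  have g2: "rv (B0 \<union> {v}) v w g = hB"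
  proof -
    define s where "s = id(c := v)"
    have "ren s (((B0 \<union> {c}) - {c}) \<union> {w}) (rv (B0 \<union> {c}) c w fB) = rv (s ` (B0 \<union> {c})) (s c) (s w) (ren s (B0 \<union> {c}) fB)"
      by (rule rev_ren) (use fin c w v fP in \<open>auto simp: s_def inj_on_def\<close>)
    moreover have "((B0 \<union> {c}) - {c}) \<union> {w} = B0 \<union> {w}" using c by auto
    moreover have "ren s (B0 \<union> {w}) (rv (B0 \<union> {c}) c w fB) = rv (B0 \<union> {c}) c w fB"
      by (rule ren_id_on) (use fin c w hBP in \<open>auto simp: s_def hB_def\<close>)
    moreover have "s ` (B0 \<union> {c}) = B0 \<union> {v}" "s c = v" "s w = w" using c w by (auto simp: s_def)
    ultimately show ?thesis by (simp add: g_def s_def hB_def)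
  qed
  define AA where "AA = rv IA e v fA"
  have AAP: "AA \<in> P ((IA - {e}) \<union> {v})" unfolding AA_def by (rule rev_closed) (use fin e v fP in auto)
  have r2: "rv (IA \<union> B0) e w (subst (B0 \<union> {v}) g v IA fA)
      = subst ((IA - {e}) \<union> {v}) AA v (((B0 \<union> {v}) - {v}) \<union> {w}) (rv (B0 \<union> {v}) v w g)"
  proof -
    have "rv (((B0 \<union> {v}) - {v}) \<union> IA) e w (subst (B0 \<union> {v}) g v IA fA)
      = subst ((IA - {e}) \<union> {v}) (rv IA e v fA) v (((B0 \<union> {v}) - {v}) \<union> {w}) (rv (B0 \<union> {v}) v w g)"
      by (rule rev_subst2) (use fin dj e w v gP fP in auto)
    moreover have "((B0 \<union> {v}) - {v}) \<union> IA = IA \<union> B0" using v by auto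
    ultimately show ?thesis by (simp add: AA_def)
  qed
  have B0w: "((B0 \<union> {v}) - {v}) \<union> {w} = B0 \<union> {w}" using v by auto
  define X where "X = subst (B0 \<union> {w}) hB w IC fC"
  have "subst (((IA - {e}) \<union> {v} - {v}) \<union> (B0 \<union> {w})) (subst ((IA - {e}) \<union> {v}) AA v (B0 \<union> {w}) hB) w IC fC
      = subst ((IA - {e}) \<union> {v}) AA v (((B0 \<union> {w}) - {w}) \<union> IC) X"
    unfolding X_def
    by (rule subst_assoc_seq[symmetric]) (use fin dj e w v AAP hBP fP in auto)
  moreover have "((IA - {e}) \<union> {v} - {v}) \<union> (B0 \<union> {w}) = ((IA \<union> B0) - {e}) \<union> {w}" using v e dj w by auto
  moreover have "((B0 \<union> {w}) - {w}) \<union> IC = B0 \<union> IC" using w by auto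
  ultimately have RHS: "subst (((IA \<union> B0) - {e}) \<union> {w})
           (rv (IA \<union> B0) e w (subst (B0 \<union> {v}) (rv (B0 \<union> {a}) a v (rv (B0 \<union> {c}) c a fB)) v IA fA))
           w IC fC = subst ((IA - {e}) \<union> {v}) AA v (B0 \<union> IC) X"
    using g1 r2 g2 B0w by simp
  have inner: "subst (B0 \<union> {v'}) (rv (B0 \<union> {c}) c v' fB) v' IC fC = X"
  proof -
    have "subst (((B0 \<union> {c}) - {c}) \<union> {v'}) (rv (B0 \<union> {c}) c v' fB) v' IC fC
        = subst (((B0 \<union> {c}) - {c}) \<union> {w}) (rv (B0 \<union> {c}) c w fB) w IC fC"
      by (rule subst_w_indep) (use fin dj c v' w fP in auto)
    moreover have "((B0 \<union> {c}) - {c}) \<union> {v'} = B0 \<union> {v'}" "((B0 \<union> {c}) - {c}) \<union> {w} = B0 \<union> {w}"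
      using c by auto
    ultimately show ?thesis by (simp add: X_def hB_def)
  qed
  have XP: "X \<in> P (B0 \<union> IC)"
  proof -
    have "X \<in> P (((B0 \<union> {w}) - {w}) \<union> IC)" unfolding X_def
      by (rule subst_closed) (use fin dj w hBP fP in auto)
    moreover have "((B0 \<union> {w}) - {w}) \<union> IC = B0 \<union> IC" using w by auto
    ultimately show ?thesis by simp
  qed
  have "subst ((IA - {e}) \<union> {w}) (rv IA e w fA) w (B0 \<union> IC) X
      = subst ((IA - {e}) \<union> {v}) (rv IA e v fA) v (B0 \<union> IC) X"
    by (rule subst_w_indep) (use fin dj e w v fP XP in auto)
  then show ?thesis using RHS inner by (simp add: AA_def)
qed

end


lemma lt_SucMax: "finite S \<Longrightarrow> x \<in> S \<Longrightarrow> x < Suc (Max S)"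
  by (simp add: le_imp_less_Suc)

context qa_ctx
begin

lemma X_core:
  assumes xA: "pagen_ok P n (IA, fA, lA)" and xC: "pagen_ok P n (IC0, fC, lC)"
    and KB: "finite KB" "a \<in> KB" "c \<in> KB" "a \<noteq> c" and fBa: "fBa \<in> P (KB - {a})"
    and lB: "lB \<in> KB \<rightarrow>\<^sub>E Vbasis n"
    and fBc: "fBc = rv (KB - {a}) c a fBa"
  shows "gen (Tt (IA, fA, lA) (Dp (Tt (KB - {a}, fBa, restrict lB (KB - {a})) (IC0, fC, lC)) c))
       - gen (Tt (IC0, fC, lC) (Dp (Tt (IA, fA, lA) (KB - {c}, fBc, restrict lB (KB - {c}))) (a + Suc (Max IA))))
       \<in> RR"
proof -
  note xa = pagen_okD[OF xA] and xc = pagen_okD[OF xC]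
  define IBa where "IBa = KB - {a}"
  define IBc where "IBc = KB - {c}"
  define B0 where "B0 = KB - {a, c}"
  define lBa where "lBa = restrict lB IBa"
  define lBc where "lBc = restrict lB IBc"
  define N1 where "N1 = Suc (Max IBa)"
  define N2 where "N2 = Suc (Max IA)"
  define N3 where "N3 = Suc (Max IC0)"
  define sh1 where "sh1 = (\<lambda>z::nat. z + N1)"
  define sh2 where "sh2 = (\<lambda>z::nat. z + N2)"
  define sh3 where "sh3 = (\<lambda>z::nat. z + N3)"
  have fin: "finite IBa" "finite IBc" "finite B0" using KB by (auto simp: IBa_def IBc_def B0_def)
  have ltA: "\<And>x. x \<in> IA \<Longrightarrow> x < N2" unfolding N2_def using lt_SucMax xa(1) by blast
  have ltBa: "\<And>x. x \<in> IBa \<Longrightarrow> x < N1" unfolding N1_def using lt_SucMax fin(1) by blast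
  have ltC: "\<And>x. x \<in> IC0 \<Longrightarrow> x < N3" unfolding N3_def using lt_SucMax xc(1) by blast
  have injs: "inj sh1" "inj sh2" "inj sh3" by (auto simp: sh1_def sh2_def sh3_def inj_on_def)
  have cBa: "c \<in> IBa" and aBc: "a \<in> IBc" using KB by (auto simp: IBa_def IBc_def)
  have IBa_eq: "IBa = B0 \<union> {c}" and IBc_eq: "IBc = B0 \<union> {a}" and aB0: "a \<notin> B0" "c \<notin> B0"
    using KB by (auto simp: IBa_def IBc_def B0_def)
  have fBaP: "fBa \<in> P IBa" using fBa by (simp add: IBa_def)
  have fBcP: "fBc \<in> P IBc"
  proof -
    have "rv IBa c a fBa \<in> P ((IBa - {c}) \<union> {a})" by (rule rev_closed) (use fin cBa fBaP in \<open>auto simp: IBa_def\<close>)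
    moreover have "(IBa - {c}) \<union> {a} = IBc" using KB by (auto simp: IBa_def IBc_def)
    ultimately show ?thesis by (simp add: fBc IBa_def)
  qed
  have okBa: "pagen_ok P n (IBa, fBa, lBa)"
    using fin fBaP lB cBa by (auto simp: pagen_ok_def lBa_def PiE_def Pi_def Suc_le_eq card_gt_0_iff IBa_def)
  have okBc: "pagen_ok P n (IBc, fBc, lBc)"
    using fin fBcP lB aBc by (auto simp: pagen_ok_def lBc_def PiE_def Pi_def Suc_le_eq card_gt_0_iff IBc_def)
  define fC1 where "fC1 = ren sh1 IC0 fC"
  define L1 where "L1 = IBa \<union> sh1 ` IC0"
  define nu1 where "nu1 = restrict (\<lambda>z. if z \<in> IBa then lBa z else lC (z - N1)) L1"
  have In1: "Tt (KB - {a}, fBa, restrict lB (KB - {a})) (IC0, fC, lC) = ((IBa, fBa, sh1 ` IC0, fC1), nu1)"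
    unfolding IBa_def[symmetric] lBa_def[symmetric] fC1_def sh1_def nu1_def L1_def N1_def by (simp only: Tt_simp)
  define phi1 where "phi1 = phi c (IBa, fBa, sh1 ` IC0, fC1)"
  have D1: "Dp ((IBa, fBa, sh1 ` IC0, fC1), nu1) c = (L1 - {c}, phi1, restrict nu1 (L1 - {c}))"
    by (simp add: Dp_simp L1_def phi1_def)
  define nu2 where "nu2 = restrict (\<lambda>z. if z \<in> IA then lA z else restrict nu1 (L1 - {c}) (z - N2)) (IA \<union> sh2 ` (L1 - {c}))"
  define X1 where "X1 = ((IA, fA, sh2 ` (L1 - {c}), ren sh2 (L1 - {c}) phi1), nu2)"
  have X1_eq: "Tt (IA, fA, lA) (Dp (Tt (KB - {a}, fBa, restrict lB (KB - {a})) (IC0, fC, lC)) c) = X1"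
    unfolding In1 D1 X1_def nu2_def sh2_def N2_def by (simp only: Tt_simp)
  define nu3 where "nu3 = restrict (\<lambda>z. if z \<in> IA then lA z else lBc (z - N2)) (IA \<union> sh2 ` IBc)"
  have In2: "Tt (IA, fA, lA) (KB - {c}, fBc, restrict lB (KB - {c})) = ((IA, fA, sh2 ` IBc, ren sh2 IBc fBc), nu3)"
    unfolding IBc_def[symmetric] lBc_def[symmetric] sh2_def nu3_def N2_def by (simp only: Tt_simp)
  define L2 where "L2 = IA \<union> sh2 ` IBc"
  define phi2 where "phi2 = phi (sh2 a) (IA, fA, sh2 ` IBc, ren sh2 IBc fBc)"
  have D2: "Dp ((IA, fA, sh2 ` IBc, ren sh2 IBc fBc), nu3) (a + Suc (Max IA)) = (L2 - {sh2 a}, phi2, restrict nu3 (L2 - {sh2 a}))"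
    by (simp add: Dp_simp L2_def phi2_def sh2_def N2_def)
  define M where "M = L2 - {sh2 a}"
  define nu4 where "nu4 = restrict (\<lambda>z. if z \<in> IC0 then lC z else restrict nu3 M (z - N3)) (IC0 \<union> sh3 ` M)"
  define X2 where "X2 = ((IC0, fC, sh3 ` M, ren sh3 M phi2), nu4)"
  have X2_eq: "Tt (IC0, fC, lC) (Dp (Tt (IA, fA, lA) (KB - {c}, fBc, restrict lB (KB - {c}))) (a + Suc (Max IA))) = X2"
    unfolding In2 D2 M_def[symmetric] X2_def nu4_def sh3_def N3_def by (simp only: Tt_simp)
  define B0s where "B0s = sh2 ` B0"
  define ICs where "ICs = sh2 ` sh1 ` IC0"
  define as where "as = sh2 a"
  define cs where "cs = sh2 c"
  have B0Ba: "\<And>x. x \<in> B0 \<Longrightarrow> x \<in> IBa" "\<And>x. x \<in> B0 \<Longrightarrow> x \<in> IBc" by (auto simp: B0_def IBa_def IBc_def)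
  have c_lt: "c < N1" using ltBa cBa by blast
  have S1: "L1 - {c} = B0 \<union> sh1 ` IC0"
    using c_lt IBa_eq aB0 by (auto simp: L1_def sh1_def)
  have S2: "M = IA \<union> B0s"
  proof -
    have "sh2 a \<notin> IA" using ltA by (auto simp: sh2_def)
    moreover have "sh2 ` IBc - {sh2 a} = sh2 ` B0" using IBc_eq aB0 injs(2) by (auto simp: inj_eq)
    ultimately show ?thesis by (auto simp: M_def L2_def B0s_def)
  qed
  have S3: "sh2 ` (L1 - {c}) = B0s \<union> ICs" unfolding S1 by (auto simp: B0s_def ICs_def)
  have Lam: "IA \<union> sh2 ` (L1 - {c}) = ICs \<union> M" using S2 S3 by auto
  have sh2_ge: "\<And>x. sh2 x \<notin> IA" using ltA by (auto simp: sh2_def)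
  have djAB: "IA \<inter> B0s = {}" "IA \<inter> ICs = {}" using sh2_ge by (auto simp: B0s_def ICs_def)
  have djBC: "B0s \<inter> ICs = {}"
  proof -
    have "B0 \<inter> sh1 ` IC0 = {}" using ltBa B0Ba(1) by (auto simp: sh1_def)
    then show ?thesis using injs(2) by (auto simp: B0s_def ICs_def inj_eq)
  qed
  have cs_notin: "cs \<notin> IA \<union> B0s \<union> ICs"
  proof -
    have "c \<notin> sh1 ` IC0" using c_lt by (auto simp: sh1_def)
    then show ?thesis using sh2_ge aB0 injs(2) by (auto simp: cs_def B0s_def ICs_def inj_eq)
  qed
  have as_notin: "as \<notin> B0s" "as \<noteq> cs" using aB0 KB injs(2) by (auto simp: as_def cs_def B0s_def inj_eq)
  have finS: "finite B0s" "finite ICs" "finite M" using fin xc xa S2 by (auto simp: B0s_def ICs_def)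
  have okIn1: "qagen_ok P n ((IBa, fBa, sh1 ` IC0, fC1), nu1)" using Tt_ok[OF okBa xC] In1 by (simp add: IBa_def lBa_def)
  have okD1: "pagen_ok P n (L1 - {c}, phi1, restrict nu1 (L1 - {c}))"
    using Dp_ok[OF okIn1, of c] D1 cBa by (simp add: qK_def)
  have okX1: "qagen_ok P n X1" using Tt_ok[OF xA okD1] X1_eq In1 D1 by simp
  have okIn2: "qagen_ok P n ((IA, fA, sh2 ` IBc, ren sh2 IBc fBc), nu3)" using Tt_ok[OF xA okBc] In2 by (simp add: IBc_def lBc_def)
  have okD2: "pagen_ok P n (M, phi2, restrict nu3 M)"
    using Dp_ok[OF okIn2, of "a + Suc (Max IA)"] D2 aBc by (simp add: qK_def M_def sh2_def N2_def)
  have okX2: "qagen_ok P n X2" using Tt_ok[OF xC okD2] X2_eq In2 D2 by (simp add: M_def)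
  have phi2P: "phi2 \<in> P M" using okD2 by (simp add: pagen_ok_def)
  define fCs where "fCs = ren (\<lambda>z. z + N1 + N2) IC0 fC"
  have fCsP: "fCs \<in> P ICs"
  proof -
    have "fCs \<in> P ((\<lambda>z. z + N1 + N2) ` IC0)" unfolding fCs_def
      by (rule ren_closed) (use xc in \<open>auto simp: inj_on_def\<close>)
    moreover have "(\<lambda>z. z + N1 + N2) ` IC0 = ICs" by (auto simp: ICs_def sh1_def sh2_def image_image)
    ultimately show ?thesis by simp
  qed
  define t where "t = (\<lambda>z. if z \<in> IC0 then z + N1 + N2 else z - N3)"
  have t1: "\<And>z. z \<in> IC0 \<Longrightarrow> t z = sh2 (sh1 z)" by (simp add: t_def sh1_def sh2_def)
  have sh3_ge: "\<And>y. sh3 y \<notin> IC0" using ltC by (auto simp: sh3_def)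
  have t2: "\<And>y. t (sh3 y) = y" using sh3_ge by (simp add: t_def sh3_def)
  have injt: "inj_on t (IC0 \<union> sh3 ` M)"
  proof (rule inj_onI)
    fix x y assume x: "x \<in> IC0 \<union> sh3 ` M" and y: "y \<in> IC0 \<union> sh3 ` M" and e: "t x = t y"
    have A: "\<And>p q. p \<in> IC0 \<Longrightarrow> q \<in> M \<Longrightarrow> t p \<noteq> t (sh3 q)"
    proof -
      fix p q assume p: "p \<in> IC0" and q: "q \<in> M"
      have "t p \<in> ICs" using p t1 by (auto simp: ICs_def)
      moreover have "t (sh3 q) \<in> IA \<union> B0s" using q S2 t2 by simp
      ultimately show "t p \<noteq> t (sh3 q)" using djAB djBC by auto
    qed
    show "x = y"
    proof (cases "x \<in> IC0")
      case True
      show ?thesis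
      proof (cases "y \<in> IC0")
        case True then show ?thesis using \<open>x \<in> IC0\<close> e t1 injs by (auto simp: inj_eq)
      next
        case False then obtain q where "y = sh3 q" "q \<in> M" using y by auto
        then show ?thesis using A[OF \<open>x \<in> IC0\<close>] e by auto
      qed
    next
      case False then obtain p where p: "x = sh3 p" "p \<in> M" using x by auto
      show ?thesis
      proof (cases "y \<in> IC0")
        case True then show ?thesis using A[OF True p(2)] e p by auto
      next
        case False then obtain q where "y = sh3 q" "q \<in> M" using y by auto
        then show ?thesis using p e t2 by simp
      qed
    qed
  qed
  have rel2: "gen X2 - gen ((ICs, fCs, M, phi2), nu2) \<in> RR"
    unfolding X2_def
  proof (rule QA_relabel[OF okX2[unfolded X2_def] injt])
    show "ICs = t ` IC0" using t1 by (auto simp: ICs_def image_image)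
    show "M = t ` sh3 ` M" using t2 by (auto simp: image_image)
    show "fCs = ren t IC0 fC" unfolding fCs_def by (rule ren_cong) (use xc in \<open>auto simp: t_def\<close>)
    have "ren t (sh3 ` M) (ren sh3 M phi2) = ren (t \<circ> sh3) M phi2"
      by (rule ren_comp[symmetric]) (use finS phi2P injs injt in \<open>auto intro: inj_on_subset\<close>)
    also have "\<dots> = phi2" by (rule ren_id_on) (use finS phi2P t2 in auto)
    finally show "phi2 = ren t (sh3 ` M) (ren sh3 M phi2)" by simp
    show "nu2 \<in> extensional (ICs \<union> M)" unfolding nu2_def Lam[symmetric] by simp
    fix z assume z: "z \<in> IC0 \<union> sh3 ` M"
    show "nu2 (t z) = nu4 z"
    proof (cases "z \<in> IC0")
      case True
      have m1: "sh1 z \<in> L1 - {c}" using True S1 by auto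
      have m2: "sh1 z \<notin> IBa" using True ltBa by (auto simp: sh1_def)
      have m3: "sh2 (sh1 z) \<notin> IA" by (rule sh2_ge)
      have m4: "sh2 (sh1 z) \<in> IA \<union> sh2 ` (L1 - {c})" using m1 by auto
      have "nu2 (t z) = lC z"
        using t1[OF True] m1 m2 m3 m4 by (simp add: nu2_def nu1_def sh1_def sh2_def)
      moreover have "nu4 z = lC z" using True by (simp add: nu4_def)
      ultimately show ?thesis by simp
    next
      case False
      then obtain y where y: "z = sh3 y" "y \<in> M" using z by auto
      have tz: "t z = y" using y t2 by simp
      have yL: "y \<in> IA \<union> sh2 ` (L1 - {c})" using y(2) Lam by auto
      have n4: "nu4 z = nu3 y" using y False by (simp add: nu4_def sh3_def)
      show ?thesis
      proof (cases "y \<in> IA")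
        case True then show ?thesis using tz n4 yL by (simp add: nu2_def nu3_def L2_def)
      next
        case yA: False
        then obtain x where x: "y = sh2 x" "x \<in> B0" using y(2) S2 by (auto simp: B0s_def)
        have xm: "x \<in> L1 - {c}" "x \<in> IBa" "x \<in> IBc" using x(2) S1 B0Ba by auto
        have "nu2 y = lB x" using yA yL xm x by (simp add: nu2_def nu1_def lBa_def sh2_def)
        moreover have "nu3 y = lB x" using yA x xm by (simp add: nu3_def lBc_def sh2_def L2_def)
        ultimately show ?thesis using tz n4 by simp
      qed
    qed
  qed
  have Lam': "ICs \<union> M = IA \<union> sh2 ` (L1 - {c})" using Lam by simp
  have finL1c: "finite (sh2 ` (L1 - {c}))" using S3 finS by simp
  have djA_L1c: "IA \<inter> sh2 ` (L1 - {c}) = {}" using S3 djAB by auto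
  have djCM: "ICs \<inter> M = {}" using S2 djAB djBC by auto
  have phi1P: "phi1 \<in> P (L1 - {c})" using okD1 by (simp add: pagen_ok_def)
  have rphi1P: "ren sh2 (L1 - {c}) phi1 \<in> P (sh2 ` (L1 - {c}))"
    by (rule ren_closed) (use fin xc phi1P injs in \<open>auto simp: L1_def intro: inj_on_subset\<close>)
  have okX2': "qagen_ok P n ((ICs, fCs, M, phi2), nu2)"
  proof -
    note k = qagen_okD[OF okX1[unfolded X1_def]]
    show ?thesis using k finS djCM fCsP phi2P Lam' by (simp add: qagen_ok_def qgen_ok_def)
  qed
  obtain e where e: "e \<in> IA" using xa(2) by auto
  obtain w where w: "w \<notin> IA \<union> B0s \<union> ICs \<union> {as, cs}"
    using fresh_exists[of "IA \<union> B0s \<union> ICs \<union> {as, cs}"] xa finS by auto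
  obtain v1 where v1: "v1 \<notin> L1" using fresh_exists[of L1] fin xc by (auto simp: L1_def)
  obtain v2 where v2: "v2 \<notin> IA \<union> B0s \<union> ICs \<union> {as, cs, w}"
    using fresh_exists[of "IA \<union> B0s \<union> ICs \<union> {as, cs, w}"] xa finS by auto
  define fBs where "fBs = ren sh2 IBa fBa"
  have shBa: "sh2 ` IBa = B0s \<union> {cs}" and shBc: "sh2 ` IBc = B0s \<union> {as}"
    using IBa_eq IBc_eq by (auto simp: B0s_def cs_def as_def)
  have fBsP: "fBs \<in> P (B0s \<union> {cs})"
    unfolding fBs_def shBa[symmetric] by (rule ren_closed) (use fin fBaP injs in \<open>auto intro: inj_on_subset\<close>)
  have L: "phi e (IA, fA, sh2 ` (L1 - {c}), ren sh2 (L1 - {c}) phi1)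
      = subst ((IA - {e}) \<union> {w}) (rv IA e w fA) w (sh2 ` (L1 - {c})) (ren sh2 (L1 - {c}) phi1)"
    by (rule phi_first) (use xa finL1c djA_L1c e w S3 rphi1P in auto)
  have fC1P: "fC1 \<in> P (sh1 ` IC0)" unfolding fC1_def
    by (rule ren_closed) (use xc injs in \<open>auto intro: inj_on_subset\<close>)
  have djBa1: "IBa \<inter> sh1 ` IC0 = {}" using ltBa by (auto simp: sh1_def)
  have phi1_eq: "phi1 = subst ((IBa - {c}) \<union> {v1}) (rv IBa c v1 fBa) v1 (sh1 ` IC0) fC1"
    unfolding phi1_def by (rule phi_first) (use fin xc djBa1 cBa v1 fBaP fC1P in \<open>auto simp: L1_def\<close>)
  have rphi1: "ren sh2 (L1 - {c}) phi1
      = subst (B0s \<union> {sh2 v1}) (rv (B0s \<union> {cs}) cs (sh2 v1) fBs) (sh2 v1) ICs fCs"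
  proof -
    have "ren sh2 ((((IBa - {c}) \<union> {v1}) - {v1}) \<union> sh1 ` IC0) (subst ((IBa - {c}) \<union> {v1}) (rv IBa c v1 fBa) v1 (sh1 ` IC0) fC1)
      = subst (sh2 ` ((IBa - {c}) \<union> {v1})) (ren sh2 ((IBa - {c}) \<union> {v1}) (rv IBa c v1 fBa)) (sh2 v1) (sh2 ` sh1 ` IC0) (ren sh2 (sh1 ` IC0) fC1)"
      by (rule subst_ren) (use fin xc djBa1 cBa v1 fBaP fC1P injs rev_closed in \<open>auto simp: L1_def inj_eq intro: inj_on_subset\<close>)
    moreover have "(((IBa - {c}) \<union> {v1}) - {v1}) \<union> sh1 ` IC0 = L1 - {c}"
      using v1 S1 IBa_eq aB0 by (auto simp: L1_def)
    moreover have "sh2 ` ((IBa - {c}) \<union> {v1}) = B0s \<union> {sh2 v1}" using IBa_eq aB0 by (auto simp: B0s_def)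
    moreover have "ren sh2 ((IBa - {c}) \<union> {v1}) (rv IBa c v1 fBa) = rv (sh2 ` IBa) (sh2 c) (sh2 v1) (ren sh2 IBa fBa)"
      by (rule rev_ren) (use fin cBa v1 fBaP injs in \<open>auto simp: L1_def inj_eq intro: inj_on_subset\<close>)
    moreover have "ren sh2 (sh1 ` IC0) fC1 = fCs"
    proof -
      have "ren sh2 (sh1 ` IC0) (ren sh1 IC0 fC) = ren (sh2 \<circ> sh1) IC0 fC"
        by (rule ren_comp[symmetric]) (use xc injs in \<open>auto intro: inj_on_subset\<close>)
      also have "\<dots> = fCs" unfolding fCs_def by (rule ren_cong) (use xc in \<open>auto simp: sh1_def sh2_def\<close>)
      finally show ?thesis by (simp add: fC1_def)
    qed
    ultimately show ?thesis using phi1_eq shBa by (simp add: fBs_def cs_def ICs_def)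
  qed
  have R: "phi e (ICs, fCs, M, phi2) = subst ((M - {e}) \<union> {w}) (rv M e w phi2) w ICs fCs"
    by (rule phi_second) (use finS djCM e w S2 fCsP phi2P in auto)
  have rBc: "ren sh2 IBc fBc = rv (B0s \<union> {cs}) cs as fBs"
  proof -
    have "ren sh2 ((IBa - {c}) \<union> {a}) (rv IBa c a fBa) = rv (sh2 ` IBa) (sh2 c) (sh2 a) (ren sh2 IBa fBa)"
      by (rule rev_ren) (use fin cBa fBaP injs KB in \<open>auto simp: IBa_def inj_eq intro: inj_on_subset\<close>)
    moreover have "(IBa - {c}) \<union> {a} = IBc" using KB by (auto simp: IBa_def IBc_def)
    ultimately show ?thesis using shBa by (simp add: fBc IBa_def fBs_def cs_def as_def)
  qed
  have rBcP: "ren sh2 IBc fBc \<in> P (sh2 ` IBc)"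
    by (rule ren_closed) (use fin fBcP injs in \<open>auto intro: inj_on_subset\<close>)
  have djAs: "IA \<inter> sh2 ` IBc = {}" using sh2_ge by auto
  have phi2_eq: "phi2 = subst (B0s \<union> {v2}) (rv (B0s \<union> {as}) as v2 (rv (B0s \<union> {cs}) cs as fBs)) v2 IA fA"
  proof -
    have "phi2 = subst ((sh2 ` IBc - {as}) \<union> {v2}) (rv (sh2 ` IBc) as v2 (ren sh2 IBc fBc)) v2 IA fA"
      unfolding phi2_def as_def
      by (rule phi_second) (use xa fin finS djAs aBc v2 shBc rBcP in \<open>auto simp: as_def\<close>)
    moreover have "sh2 ` IBc - {as} = B0s" using shBc as_notin by auto
    ultimately show ?thesis using shBc rBc by simp
  qed
  have v1s: "sh2 v1 \<notin> IA \<union> B0s \<union> ICs \<union> {cs}"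
  proof -
    have "v1 \<notin> IBa" "v1 \<notin> sh1 ` IC0" using v1 by (auto simp: L1_def)
    then have "sh2 v1 \<notin> sh2 ` IBa" "sh2 v1 \<notin> ICs" using injs(2) by (auto simp: ICs_def inj_eq)
    then show ?thesis using sh2_ge shBa by auto
  qed
  have J: "subst ((IA - {e}) \<union> {w}) (rv IA e w fA) w (B0s \<union> ICs)
           (subst (B0s \<union> {sh2 v1}) (rv (B0s \<union> {cs}) cs (sh2 v1) fBs) (sh2 v1) ICs fCs)
       = subst (((IA \<union> B0s) - {e}) \<union> {w})
           (rv (IA \<union> B0s) e w (subst (B0s \<union> {v2}) (rv (B0s \<union> {as}) as v2 (rv (B0s \<union> {cs}) cs as fBs)) v2 IA fA))
           w ICs fCs"
    by (rule jac_op) (use xa finS djAB djBC cs_notin as_notin e w v2 v1s fBsP fCsP in auto)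
  have phiEq: "phi e (IA, fA, sh2 ` (L1 - {c}), ren sh2 (L1 - {c}) phi1) = phi e (ICs, fCs, M, phi2)"
  proof -
    have "phi e (IA, fA, sh2 ` (L1 - {c}), ren sh2 (L1 - {c}) phi1)
      = subst ((IA - {e}) \<union> {w}) (rv IA e w fA) w (B0s \<union> ICs)
           (subst (B0s \<union> {sh2 v1}) (rv (B0s \<union> {cs}) cs (sh2 v1) fBs) (sh2 v1) ICs fCs)"
      using L rphi1 S3 by simp
    also have "\<dots> = subst (((IA \<union> B0s) - {e}) \<union> {w})
           (rv (IA \<union> B0s) e w (subst (B0s \<union> {v2}) (rv (B0s \<union> {as}) as v2 (rv (B0s \<union> {cs}) cs as fBs)) v2 IA fA))
           w ICs fCs" by (rule J)
    also have "\<dots> = phi e (ICs, fCs, M, phi2)" using R phi2_eq S2 by simp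
    finally show ?thesis .
  qed
  have rel1: "gen X1 - gen ((ICs, fCs, M, phi2), nu2) \<in> RR"
    unfolding X1_def by (rule Q_equiv[OF okX1[unfolded X1_def] okX2' Lam']) (use e phiEq in auto)
  have "gen X1 - gen X2 \<in> RR"
    using RR_diff[OF rel1 rel2] by simp
  then show ?thesis using X1_eq X2_eq by simp
qed

end


context qa_ctx
begin

lemma br_gen_T:
  assumes G1: "qagen_ok P n G1" and x: "pagen_ok P n (I, p, lam)" and y: "pagen_ok P n (J, q, mu)"
  shows "br (gen G1) (gen (Tt (I, p, lam) (J, q, mu))) = (\<Sum>d\<in>qK G1.
      (\<Sum>c\<in>I. vscale (omega n (qlam G1 d) (lam c)) (gen (Tt (Dp G1 d) (Dp (Tt (I, p, lam) (J, q, mu)) c))))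
    + (\<Sum>c\<in>J. vscale (omega n (qlam G1 d) (mu c)) (gen (Tt (Dp G1 d) (Dp (Tt (I, p, lam) (J, q, mu)) (c + Suc (Max I)))))))"
proof -
  note xx = pagen_okD[OF x] and yy = pagen_okD[OF y]
  define N where "N = Suc (Max I)"
  define sh where "sh = (\<lambda>z::nat. z + N)"
  define T where "T = Tt (I, p, lam) (J, q, mu)"
  have okT: "qagen_ok P n T" unfolding T_def by (rule Tt_ok[OF x y])
  have qKT: "qK T = I \<union> sh ` J" by (simp add: T_def Tt_simp qK_def sh_def N_def)
  have qlT1: "\<And>c. c \<in> I \<Longrightarrow> qlam T c = lam c" by (simp add: T_def Tt_simp qlam_def)
  have shI: "\<And>z. sh z \<notin> I" unfolding sh_def N_def using shift_notin[OF xx(1)] by blast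
  have qlT2: "\<And>c. c \<in> J \<Longrightarrow> qlam T (sh c) = mu c"
    using shI by (simp add: T_def Tt_simp qlam_def sh_def N_def)
  have dj: "I \<inter> sh ` J = {}" using shI by auto
  have injsh: "inj_on sh J" by (simp add: sh_def inj_on_def)
  show ?thesis
    unfolding bracket_gen[OF G1 okT] T_def[symmetric] qKT
  proof (rule sum.cong[OF refl])
    fix d assume d: "d \<in> qK G1"
    have "(\<Sum>c\<in>I \<union> sh ` J. vscale (omega n (qlam G1 d) (qlam T c)) (gen (Tt (Dp G1 d) (Dp T c))))
      = (\<Sum>c\<in>I. vscale (omega n (qlam G1 d) (qlam T c)) (gen (Tt (Dp G1 d) (Dp T c))))
      + (\<Sum>c\<in>sh ` J. vscale (omega n (qlam G1 d) (qlam T c)) (gen (Tt (Dp G1 d) (Dp T c))))"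
      by (rule sum.union_disjoint) (use xx yy dj in auto)
    also have "(\<Sum>c\<in>sh ` J. vscale (omega n (qlam G1 d) (qlam T c)) (gen (Tt (Dp G1 d) (Dp T c))))
      = (\<Sum>c\<in>J. vscale (omega n (qlam G1 d) (mu c)) (gen (Tt (Dp G1 d) (Dp T (c + N)))))"
    proof -
      have q2: "\<And>c. c \<in> J \<Longrightarrow> qlam T (c + N) = mu c" using qlT2 by (simp add: sh_def)
      show ?thesis unfolding sum.reindex[OF injsh] o_def
        by (rule sum.cong[OF refl]) (simp add: q2 sh_def)
    qed
    also have "(\<Sum>c\<in>I. vscale (omega n (qlam G1 d) (qlam T c)) (gen (Tt (Dp G1 d) (Dp T c))))
      = (\<Sum>c\<in>I. vscale (omega n (qlam G1 d) (lam c)) (gen (Tt (Dp G1 d) (Dp T c))))"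
      by (rule sum.cong[OF refl]) (simp add: qlT1)
    finally show "(\<Sum>c\<in>I \<union> sh ` J. vscale (omega n (qlam G1 d) (qlam T c)) (gen (Tt (Dp G1 d) (Dp T c))))
      = (\<Sum>c\<in>I. vscale (omega n (qlam G1 d) (lam c)) (gen (Tt (Dp G1 d) (Dp T c))))
      + (\<Sum>c\<in>J. vscale (omega n (qlam G1 d) (mu c)) (gen (Tt (Dp G1 d) (Dp T (c + Suc (Max I))))))"
      by (simp add: N_def)
  qed
qed

definition F1 where
  "F1 G1 G2 G3 = (\<Sum>a\<in>qK G2. \<Sum>b\<in>qK G3. \<Sum>d\<in>qK G1. \<Sum>c\<in>qK G2 - {a}.
     vscale (omega n (qlam G2 a) (qlam G3 b) * omega n (qlam G1 d) (qlam G2 c))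
       (gen (Tt (Dp G1 d) (Dp (Tt (Dp G2 a) (Dp G3 b)) c))))"

definition F2 where
  "F2 G1 G2 G3 = (\<Sum>a\<in>qK G2. \<Sum>b\<in>qK G3. \<Sum>d\<in>qK G1. \<Sum>c\<in>qK G3 - {b}.
     vscale (omega n (qlam G2 a) (qlam G3 b) * omega n (qlam G1 d) (qlam G3 c))
       (gen (Tt (Dp G1 d) (Dp (Tt (Dp G2 a) (Dp G3 b)) (c + Suc (Max (qK G2 - {a})))))))"

lemma Dp_fst: "Dp G a = (qK G - {a}, phi a (fst G), restrict (qlam G) (qK G - {a}))"
  by (cases G) (auto simp: Dp_simp qK_def qlam_def)

lemma br_br:
  assumes G1: "qagen_ok P n G1" and G2: "qagen_ok P n G2" and G3: "qagen_ok P n G3"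
  shows "br (gen G1) (br (gen G2) (gen G3)) = F1 G1 G2 G3 + F2 G1 G2 G3"
proof -
  have "br (gen G1) (br (gen G2) (gen G3)) = (\<Sum>a\<in>qK G2. \<Sum>b\<in>qK G3.
      vscale (omega n (qlam G2 a) (qlam G3 b)) (br (gen G1) (gen (Tt (Dp G2 a) (Dp G3 b)))))"
    unfolding bracket_gen[OF G2 G3] by (simp add: br_sum2 br_scale2)
  also have "\<dots> = (\<Sum>a\<in>qK G2. \<Sum>b\<in>qK G3.
      vscale (omega n (qlam G2 a) (qlam G3 b)) (\<Sum>d\<in>qK G1.
      (\<Sum>c\<in>qK G2 - {a}. vscale (omega n (qlam G1 d) (qlam G2 c)) (gen (Tt (Dp G1 d) (Dp (Tt (Dp G2 a) (Dp G3 b)) c))))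
    + (\<Sum>c\<in>qK G3 - {b}. vscale (omega n (qlam G1 d) (qlam G3 c)) (gen (Tt (Dp G1 d) (Dp (Tt (Dp G2 a) (Dp G3 b)) (c + Suc (Max (qK G2 - {a})))))))))"
  proof (rule sum.cong[OF refl], rule sum.cong[OF refl])
    fix a b assume a: "a \<in> qK G2" and b: "b \<in> qK G3"
    have x: "pagen_ok P n (qK G2 - {a}, phi a (fst G2), restrict (qlam G2) (qK G2 - {a}))"
      using Dp_ok[OF G2 a] Dp_fst by metis
    have y: "pagen_ok P n (qK G3 - {b}, phi b (fst G3), restrict (qlam G3) (qK G3 - {b}))"
      using Dp_ok[OF G3 b] Dp_fst by metis
    show "vscale (omega n (qlam G2 a) (qlam G3 b)) (br (gen G1) (gen (Tt (Dp G2 a) (Dp G3 b)))) =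
      vscale (omega n (qlam G2 a) (qlam G3 b)) (\<Sum>d\<in>qK G1.
      (\<Sum>c\<in>qK G2 - {a}. vscale (omega n (qlam G1 d) (qlam G2 c)) (gen (Tt (Dp G1 d) (Dp (Tt (Dp G2 a) (Dp G3 b)) c))))
    + (\<Sum>c\<in>qK G3 - {b}. vscale (omega n (qlam G1 d) (qlam G3 c)) (gen (Tt (Dp G1 d) (Dp (Tt (Dp G2 a) (Dp G3 b)) (c + Suc (Max (qK G2 - {a}))))))))"
      unfolding Dp_fst[of G2 a] Dp_fst[of G3 b] br_gen_T[OF G1 x y]
      by (simp add: Dp_fst[symmetric])
  qed
  also have "\<dots> = F1 G1 G2 G3 + F2 G1 G2 G3"
    by (simp add: F1_def F2_def vscale_sum_right vscale_add_right vscale_vscale sum.distrib)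
  finally show ?thesis .
qed

end


lemma sum_remove_if:
  assumes "finite S" shows "(\<Sum>x\<in>S - {y}. f x) = (\<Sum>x\<in>S. if x = y then 0 else f x)"
proof -
  have "(\<Sum>x\<in>S. if x = y then 0 else f x) = (\<Sum>x\<in>S - {y}. if x = y then 0 else f x)"
    by (rule sum.mono_neutral_right) (use assms in auto)
  also have "\<dots> = (\<Sum>x\<in>S - {y}. f x)" by (rule sum.cong) auto
  finally show ?thesis by simp
qed

lemma sum4_swap:
  assumes "finite A" "finite B" "finite C"
  shows "(\<Sum>d\<in>A. \<Sum>c\<in>B. \<Sum>b\<in>C. \<Sum>a\<in>B - {c}. h a b c d) = (\<Sum>a\<in>B. \<Sum>b\<in>C. \<Sum>d\<in>A. \<Sum>c\<in>B - {a}. h a b c d)"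
proof -
  let ?g = "\<lambda>a b c d. if a = c then 0 else h a b c d"
  have L: "(\<Sum>d\<in>A. \<Sum>c\<in>B. \<Sum>b\<in>C. \<Sum>a\<in>B - {c}. h a b c d) = (\<Sum>d\<in>A. \<Sum>c\<in>B. \<Sum>b\<in>C. \<Sum>a\<in>B. ?g a b c d)"
    using assms by (simp add: sum_remove_if)
  have R: "(\<Sum>a\<in>B. \<Sum>b\<in>C. \<Sum>d\<in>A. \<Sum>c\<in>B - {a}. h a b c d) = (\<Sum>a\<in>B. \<Sum>b\<in>C. \<Sum>d\<in>A. \<Sum>c\<in>B. ?g a b c d)"
    using assms by (simp add: sum_remove_if eq_commute)
  have "(\<Sum>d\<in>A. \<Sum>c\<in>B. \<Sum>b\<in>C. \<Sum>a\<in>B. ?g a b c d) = (\<Sum>c\<in>B. \<Sum>d\<in>A. \<Sum>b\<in>C. \<Sum>a\<in>B. ?g a b c d)"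
    by (rule sum.swap)
  also have "\<dots> = (\<Sum>c\<in>B. \<Sum>b\<in>C. \<Sum>d\<in>A. \<Sum>a\<in>B. ?g a b c d)"
    by (rule sum.cong[OF refl]) (rule sum.swap)
  also have "\<dots> = (\<Sum>c\<in>B. \<Sum>b\<in>C. \<Sum>a\<in>B. \<Sum>d\<in>A. ?g a b c d)"
    by (rule sum.cong[OF refl], rule sum.cong[OF refl]) (rule sum.swap)
  also have "\<dots> = (\<Sum>c\<in>B. \<Sum>a\<in>B. \<Sum>b\<in>C. \<Sum>d\<in>A. ?g a b c d)"
    by (rule sum.cong[OF refl]) (rule sum.swap)
  also have "\<dots> = (\<Sum>a\<in>B. \<Sum>c\<in>B. \<Sum>b\<in>C. \<Sum>d\<in>A. ?g a b c d)"
    by (rule sum.swap)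
  also have "\<dots> = (\<Sum>a\<in>B. \<Sum>b\<in>C. \<Sum>c\<in>B. \<Sum>d\<in>A. ?g a b c d)"
    by (rule sum.cong[OF refl]) (rule sum.swap)
  also have "\<dots> = (\<Sum>a\<in>B. \<Sum>b\<in>C. \<Sum>d\<in>A. \<Sum>c\<in>B. ?g a b c d)"
    by (rule sum.cong[OF refl], rule sum.cong[OF refl]) (rule sum.swap)
  finally show ?thesis using L R by simp
qed

context qa_ctx
begin

lemma qK_finite: "qagen_ok P n G \<Longrightarrow> finite (qK G)"
  by (cases G) (auto simp: qK_def qagen_ok_def qgen_ok_def)

lemma qgen_ok_fst: "qagen_ok P n G \<Longrightarrow> qgen_ok P (qK G) (fst G)"
  by (cases G) (auto simp: qK_def qagen_ok_def)

lemma qlam_PiE: "qagen_ok P n G \<Longrightarrow> qlam G \<in> qK G \<rightarrow>\<^sub>E Vbasis n"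
  by (cases G) (auto simp: qK_def qlam_def qagen_ok_def)

lemma pair_RR:
  assumes A: "qagen_ok P n A" and B: "qagen_ok P n B" and C: "qagen_ok P n C"
  shows "F1 A B C + F2 C A B \<in> RR"
proof -
  let ?X1 = "\<lambda>a b c d. gen (Tt (Dp A d) (Dp (Tt (Dp B a) (Dp C b)) c))"
  let ?X2 = "\<lambda>a b c d. gen (Tt (Dp C b) (Dp (Tt (Dp A d) (Dp B c)) (a + Suc (Max (qK A - {d})))))"
  let ?w = "\<lambda>a b c d. omega n (qlam B a) (qlam C b) * omega n (qlam A d) (qlam B c)"
  have fin: "finite (qK A)" "finite (qK B)" "finite (qK C)" using qK_finite A B C by auto
  have "F2 C A B = (\<Sum>d\<in>qK A. \<Sum>c\<in>qK B. \<Sum>b\<in>qK C. \<Sum>a\<in>qK B - {c}. vscale (- ?w a b c d) (?X2 a b c d))"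
    unfolding F2_def
    by (intro sum.cong refl) (simp add: omega_antisym[of n "qlam C _"] mult.commute)
  also have "\<dots> = (\<Sum>a\<in>qK B. \<Sum>b\<in>qK C. \<Sum>d\<in>qK A. \<Sum>c\<in>qK B - {a}. vscale (- ?w a b c d) (?X2 a b c d))"
    by (rule sum4_swap[OF fin(1,2,3)])
  finally have e2: "F2 C A B = \<dots>" .
  have "F1 A B C + F2 C A B = (\<Sum>a\<in>qK B. \<Sum>b\<in>qK C. \<Sum>d\<in>qK A. \<Sum>c\<in>qK B - {a}. vscale (?w a b c d) (?X1 a b c d - ?X2 a b c d))"
    unfolding e2 F1_def by (simp add: vscale_diff_right vscale_minus_left sum.distrib[symmetric] sum_subtractf)
  also have "\<dots> \<in> RR"
  proof (rule RR_sum, rule RR_sum, rule RR_sum, rule RR_sum, rule RR_scale)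
    fix a b d c assume a: "a \<in> qK B" and b: "b \<in> qK C" and d: "d \<in> qK A" and c: "c \<in> qK B - {a}"
    have xA: "pagen_ok P n (qK A - {d}, phi d (fst A), restrict (qlam A) (qK A - {d}))"
      using Dp_ok[OF A d] Dp_fst by metis
    have xC: "pagen_ok P n (qK C - {b}, phi b (fst C), restrict (qlam C) (qK C - {b}))"
      using Dp_ok[OF C b] Dp_fst by metis
    have cB: "c \<in> qK B" "a \<noteq> c" using c by auto
    have fBa: "phi a (fst B) \<in> P (qK B - {a})" by (rule phi_in'[OF qgen_ok_fst[OF B] a])
    have fBc: "phi c (fst B) = rv (qK B - {a}) c a (phi a (fst B))"
      by (rule phi_change[OF qgen_ok_fst[OF B] a cB(1) cB(2)])
    show "?X1 a b c d - ?X2 a b c d \<in> RR"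
      unfolding Dp_fst[of A d] Dp_fst[of B a] Dp_fst[of B c] Dp_fst[of C b]
      by (rule X_core[OF xA xC fin(2) a cB(1) cB(2) fBa qlam_PiE[OF B] fBc])
  qed
  finally show ?thesis .
qed

lemma jacobi_gen:
  assumes A: "qagen_ok P n A" and B: "qagen_ok P n B" and C: "qagen_ok P n C"
  shows "br (gen A) (br (gen B) (gen C)) + br (gen B) (br (gen C) (gen A)) + br (gen C) (br (gen A) (gen B)) \<in> RR"
proof -
  have "br (gen A) (br (gen B) (gen C)) + br (gen B) (br (gen C) (gen A)) + br (gen C) (br (gen A) (gen B))
     = (F1 A B C + F2 C A B) + (F1 B C A + F2 A B C) + (F1 C A B + F2 B C A)"
    unfolding br_br[OF A B C] br_br[OF B C A] br_br[OF C A B] by (simp add: algebra_simps)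
  also have "\<dots> \<in> RR"
    by (intro RR_add pair_RR A B C)
  finally show ?thesis .
qed

definition jac where "jac F G H = br F (br G H) + br G (br H F) + br H (br F G)"

lemma jac_add1: "jac (F + F') G H = jac F G H + jac F' G H"
  by (simp add: jac_def br_add1 br_add2 algebra_simps)
lemma jac_add2: "jac F (G + G') H = jac F G H + jac F G' H"
  by (simp add: jac_def br_add1 br_add2 algebra_simps)
lemma jac_add3: "jac F G (H + H') = jac F G H + jac F G H'"
  by (simp add: jac_def br_add1 br_add2 algebra_simps)
lemma jac_scale1: "jac (vscale c F) G H = vscale c (jac F G H)"
  by (simp add: jac_def br_scale1 br_scale2 vscale_add_right)
lemma jac_scale2: "jac F (vscale c G) H = vscale c (jac F G H)"
  by (simp add: jac_def br_scale1 br_scale2 vscale_add_right)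
lemma jac_scale3: "jac F G (vscale c H) = vscale c (jac F G H)"
  by (simp add: jac_def br_scale1 br_scale2 vscale_add_right)
lemma jac_zero1: "jac 0 G H = 0" by (simp add: jac_def)
lemma jac_zero2: "jac F 0 H = 0" by (simp add: jac_def)
lemma jac_zero3: "jac F G 0 = 0" by (simp add: jac_def)

lemma jacobi:
  assumes "F \<in> VV" "G \<in> VV" "H \<in> VV" shows "jac F G H \<in> RR"
  using assms(1)
proof (induction rule: VV_induct)
  case zero then show ?case by (simp add: jac_zero1 RR_zero)
next
  case (gen f)
  show ?case using assms(2)
  proof (induction rule: VV_induct)
    case zero then show ?case by (simp add: jac_zero2 RR_zero)
  next
    case (gen g)
    show ?case using assms(3)
    proof (induction rule: VV_induct)
      case zero then show ?case by (simp add: jac_zero3 RR_zero)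
    next
      case (gen h) then show ?case using jacobi_gen[OF \<open>qagen_ok P n f\<close> \<open>qagen_ok P n g\<close>] by (simp add: jac_def)
    next
      case (add a b) then show ?case by (simp add: jac_add3 RR_add)
    next
      case (scale a c) then show ?case by (simp add: jac_scale3 RR_scale)
    qed
  next
    case (add a b) then show ?case by (simp add: jac_add2 RR_add)
  next
    case (scale a c) then show ?case by (simp add: jac_scale2 RR_scale)
  qed
next
  case (add a b) then show ?case by (simp add: jac_add1 RR_add)
next
  case (scale a c) then show ?case by (simp add: jac_scale1 RR_scale)
qed

lemma main: "lie_algebra_quot VV RR br"
  unfolding lie_algebra_quot_def
proof (intro conjI ballI allI impI)
  fix F H assume "F \<in> VV" "H \<in> VV" then show "br F H \<in> VV" by (rule br_closed)
next
  fix F F' H assume F: "F \<in> VV" "F' \<in> VV" "H \<in> VV" "F - F' \<in> RR"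
  show "br F H - br F' H \<in> RR" using br_RR1[OF F(4) F(3)] by (simp add: br_diff1)
  show "br H F - br H F' \<in> RR" using br_RR2[OF F(4) F(3)] by (simp add: br_diff2)
next
  fix F F' H c assume "F \<in> VV" "F' \<in> VV" "H \<in> VV"
  show "br (F + F') H - (br F H + br F' H) \<in> RR" by (simp add: br_add1 RR_zero)
  show "br H (F + F') - (br H F + br H F') \<in> RR" by (simp add: br_add2 RR_zero)
  show "br (vscale c F) H - vscale c (br F H) \<in> RR" by (simp add: br_scale1 RR_zero)
  show "br H (vscale c F) - vscale c (br H F) \<in> RR" by (simp add: br_scale2 RR_zero)
next
  fix F assume F: "F \<in> VV"
  have "br F F + br F F \<in> RR" by (rule br_antisym[OF F F])
  then have "vscale (1/2) (br F F + br F F) \<in> RR" by (rule RR_scale)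
  moreover have "vscale (1/2) (br F F + br F F) = br F F"
    by (rule vec_eqI) (simp add: lookup_add)
  ultimately show "br F F \<in> RR" by simp
next
  fix F G H assume "F \<in> VV" "G \<in> VV" "H \<in> VV"
  then show "br F (br G H) + br G (br H F) + br H (br F G) \<in> RR"
    using jacobi unfolding jac_def by blast
qed

end

theorem proposition5p1:
  fixes smul :: "rat \<Rightarrow> 'v::ab_group_add \<Rightarrow> 'v"
    and P :: "nat set \<Rightarrow> 'v set"
    and ren :: "(nat \<Rightarrow> nat) \<Rightarrow> nat set \<Rightarrow> 'v \<Rightarrow> 'v"
    and subst :: "nat set \<Rightarrow> 'v \<Rightarrow> nat \<Rightarrow> nat set \<Rightarrow> 'v \<Rightarrow> 'v"
    and rv :: "nat set \<Rightarrow> nat \<Rightarrow> nat \<Rightarrow> 'v \<Rightarrow> 'v"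
    and u :: "nat \<Rightarrow> 'v"
    and n :: nat
  assumes "reversible_operad smul P ren subst rv u"
    and "1 \<le> n"
  shows "lie_algebra_quot (QA_space P n) (QA_rel smul P ren subst rv n)
           (bracket smul P ren subst rv u n)"
proof -
  interpret qa_ctx smul P ren subst rv u n
    using assms(1) by (simp add: qa_ctx_def)
  show ?thesis by (rule main)
qed


end
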